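(* Let $\{Y_k\}$ be a mean-zero sequence with $n^{-1/2}\sum_{1\le j\le nt}Y_j\xrightarrow{d}\sigma W(t)$ in $D[0,1]$ for some $\sigma>0$ ($W$ a standard Wiener process). For each $n$ let $X_i=\mu+Y_i$ for $1\le i\le k^*$ and $X_i=\mu+\Delta+Y_i$ for $k^*<i\le n$, where $k^*=[n\theta]$ with $0<\theta<1$ and $\Delta=\Delta(n)$, and suppose $|\hat k/n-\theta|=o_P(1)$. Then the random vectors $$\Big(\hat k^{-1/2}\max_{1\le k\le\hat k}\Big|\sum_{1\le i\le k}Y_i-\frac k{\hat k}\sum_{1\le i\le\hat k}Y_i\Big|,\ (n-\hat k)^{-1/2}\max_{\hat k<k\le n}\Big|\sum_{\hat k<i\le k}Y_i-\frac{k-\hat k}{n-\hat k}\sum_{\hat k<i\le n}Y_i\Big|\Big)$$ converge in distribution to $\big(\sigma\sup_{0\le t\le1}|B^{(1)}(t)|,\ \sigma\sup_{0\le t\le1}|B^{(2)}(t)|\big)$, where $B^{(1)},B^{(2)}$ are independent Brownian bridges.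
   Context: $\hat k=\min\{k:\max_{1\le i\le n}|\sum_{j\le i}X_j-\frac in\sum_{j\le n}X_j|=|\sum_{j\le k}X_j-\frac kn\sum_{j\le n}X_j|\}$. *)

theory Defs
  imports "HOL-Probability.Probability"
begin

text \<open>Paths are functions real => real; only their values on [0,1] matter.\<close>

definition cadlag01 :: "(real \<Rightarrow> real) set" where
  "cadlag01 = {x. (\<forall>t\<in>{0..<1}. (x \<longlongrightarrow> x t) (at_right t)) \<and>
                  (\<forall>t\<in>{0<..1}. \<exists>l. (x \<longlongrightarrow> l) (at_left t))}"

definition time_changes01 :: "(real \<Rightarrow> real) set" where
  "time_changes01 = {l. strict_mono_on {0..1} l \<and> continuous_on {0..1} l \<and>
                        l ` {0..1} = {0..1}}"

definition skorokhod_dist :: "(real \<Rightarrow> real) \<Rightarrow> (real \<Rightarrow> real) \<Rightarrow> real" where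
  "skorokhod_dist x y = Inf {e. e \<ge> 0 \<and> (\<exists>l\<in>time_changes01.
        (\<forall>t\<in>{0..1}. \<bar>l t - t\<bar> \<le> e) \<and> (\<forall>t\<in>{0..1}. \<bar>x t - y (l t)\<bar> \<le> e))}"

definition bounded_continuous_wrt ::
  "('m \<Rightarrow> 'm \<Rightarrow> real) \<Rightarrow> 'm set \<Rightarrow> ('m \<Rightarrow> real) \<Rightarrow> bool" where
  "bounded_continuous_wrt d S f \<longleftrightarrow>
     (\<exists>B. \<forall>x\<in>S. \<bar>f x\<bar> \<le> B) \<and>
     (\<forall>x\<in>S. \<forall>e>0. \<exists>\<delta>>0. \<forall>y\<in>S. d x y < \<delta> \<longrightarrow> \<bar>f x - f y\<bar> < e)"

text \<open>Convergence in distribution of random elements of the metric space (S,d):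
  E f(X_n) -> E f(X) for every bounded d-continuous f (for which the compositions are
  random variables -- automatic for Borel random elements of D[0,1]).\<close>
definition conv_distr_wrt ::
  "('m \<Rightarrow> 'm \<Rightarrow> real) \<Rightarrow> 'm set \<Rightarrow> 'a measure \<Rightarrow> (nat \<Rightarrow> 'a \<Rightarrow> 'm) \<Rightarrow>
   'b measure \<Rightarrow> ('b \<Rightarrow> 'm) \<Rightarrow> bool" where
  "conv_distr_wrt d S M Xs N X \<longleftrightarrow>
     (\<forall>f. bounded_continuous_wrt d S f \<longrightarrow>
          (\<forall>n. (\<lambda>\<omega>. f (Xs n \<omega>)) \<in> borel_measurable M) \<longrightarrow>
          (\<lambda>\<omega>. f (X \<omega>)) \<in> borel_measurable N \<longrightarrow>
          (\<lambda>n. \<integral>\<omega>. f (Xs n \<omega>) \<partial>M) \<longlonglongrightarrow> (\<integral>\<omega>. f (X \<omega>) \<partial>N))"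

definition conv_distr_R2 ::
  "'a measure \<Rightarrow> (nat \<Rightarrow> 'a \<Rightarrow> real \<times> real) \<Rightarrow> 'b measure \<Rightarrow> ('b \<Rightarrow> real \<times> real) \<Rightarrow> bool" where
  "conv_distr_R2 M Zs N Z \<longleftrightarrow>
     (\<forall>f :: real \<times> real \<Rightarrow> real. continuous_on UNIV f \<longrightarrow> bounded (range f) \<longrightarrow>
          (\<lambda>n. \<integral>\<omega>. f (Zs n \<omega>) \<partial>M) \<longlonglongrightarrow> (\<integral>\<omega>. f (Z \<omega>) \<partial>N))"

definition wiener_process :: "'b measure \<Rightarrow> (real \<Rightarrow> 'b \<Rightarrow> real) \<Rightarrow> bool" where
  "wiener_process N W \<longleftrightarrow> prob_space N \<and>
     (\<forall>t\<in>{0..1}. W t \<in> borel_measurable N) \<and>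
     (\<forall>\<omega>\<in>space N. W 0 \<omega> = 0 \<and> continuous_on {0..1} (\<lambda>t. W t \<omega>)) \<and>
     (\<forall>s t. 0 \<le> s \<longrightarrow> s < t \<longrightarrow> t \<le> 1 \<longrightarrow>
        distributed N lborel (\<lambda>\<omega>. W t \<omega> - W s \<omega>)
          (\<lambda>x. ennreal (normal_density 0 (sqrt (t - s)) x))) \<and>
     (\<forall>(ts :: nat \<Rightarrow> real) m. 0 \<le> ts 0 \<longrightarrow> ts m \<le> 1 \<longrightarrow> (\<forall>i<m. ts i \<le> ts (Suc i)) \<longrightarrow>
        prob_space.indep_vars N (\<lambda>_. borel) (\<lambda>i \<omega>. W (ts (Suc i)) \<omega> - W (ts i) \<omega>) {..<m})"

definition bbridge :: "(real \<Rightarrow> 'b \<Rightarrow> real) \<Rightarrow> real \<Rightarrow> 'b \<Rightarrow> real" where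
  "bbridge W t \<omega> = W t \<omega> - t * W 1 \<omega>"

definition cusum :: "nat \<Rightarrow> (nat \<Rightarrow> real) \<Rightarrow> nat \<Rightarrow> real" where
  "cusum n x k = \<bar>(\<Sum>j=1..k. x j) - real k / real n * (\<Sum>j=1..n. x j)\<bar>"

definition khat :: "nat \<Rightarrow> (nat \<Rightarrow> real) \<Rightarrow> nat" where
  "khat n x = (LEAST k. 1 \<le> k \<and> k \<le> n \<and>
                 cusum n x k = Max ((cusum n x) ` {1..n}))"

end

theory Submission
  imports Defs
begin

lemma cadlag_bounded:
  assumes x: "x \<in> cadlag01"
  shows "\<exists>B. \<forall>t\<in>{0..1}. \<bar>x t\<bar> \<le> B"
proof -
  have loc: "\<exists>r>0. \<exists>B. \<forall>s\<in>{0..1}. dist t s < r \<longrightarrow> \<bar>x s\<bar> \<le> B" if t: "t \<in> {0..1}" for t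
  proof -
    have R: "\<exists>r>0. \<forall>s. t < s \<and> s < t + r \<and> s \<le> 1 \<longrightarrow> \<bar>x s\<bar> \<le> \<bar>x t\<bar> + 1"
    proof (cases "t < 1")
      case True
      then have "(x \<longlongrightarrow> x t) (at_right t)" using x t unfolding cadlag01_def by auto
      then have "eventually (\<lambda>s. dist (x s) (x t) < 1) (at_right t)"
        by (rule tendstoD) simp
      then obtain b where b: "b > t" "\<And>y. y > t \<Longrightarrow> y < b \<Longrightarrow> dist (x y) (x t) < 1"
        unfolding eventually_at_right_field by blast
      show ?thesis
        apply (rule exI[of _ "b - t"]) using b by (force simp: dist_real_def)
    next
      case False
      then show ?thesis by (intro exI[of _ 1]) auto
    qed
    have L: "\<exists>r>0. \<exists>B. \<forall>s. t - r < s \<and> s < t \<and> 0 \<le> s \<longrightarrow> \<bar>x s\<bar> \<le> B"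
    proof (cases "t > 0")
      case True
      from x t True have "\<exists>l. (x \<longlongrightarrow> l) (at_left t)" unfolding cadlag01_def by auto
      then obtain l where "(x \<longlongrightarrow> l) (at_left t)" by blast
      then have "eventually (\<lambda>s. dist (x s) l < 1) (at_left t)"
        by (rule tendstoD) simp
      then obtain b where b: "b < t" "\<And>y. y > b \<Longrightarrow> y < t \<Longrightarrow> dist (x y) l < 1"
        unfolding eventually_at_left_field by blast
      show ?thesis
        apply (rule exI[of _ "t - b"], rule conjI, use b in simp)
        apply (rule exI[of _ "\<bar>l\<bar> + 1"]) using b by (force simp: dist_real_def)
    next
      case False
      then show ?thesis using t by (intro exI[of _ 1]) auto
    qed
    from R obtain r1 where r1: "r1 > 0" "\<forall>s. t < s \<and> s < t + r1 \<and> s \<le> 1 \<longrightarrow> \<bar>x s\<bar> \<le> \<bar>x t\<bar> + 1" by blast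
    from L obtain r2 B2 where r2: "r2 > 0" "\<forall>s. t - r2 < s \<and> s < t \<and> 0 \<le> s \<longrightarrow> \<bar>x s\<bar> \<le> B2" by blast
    show ?thesis
    proof (rule exI[of _ "min r1 r2"], intro conjI exI[of _ "max (\<bar>x t\<bar> + 1) B2"] ballI impI)
      show "0 < min r1 r2" using r1 r2 by simp
      fix s assume s: "s \<in> {0..1}" "dist t s < min r1 r2"
      consider "s = t" | "t < s" | "s < t" by linarith
      then show "\<bar>x s\<bar> \<le> max (\<bar>x t\<bar> + 1) B2"
      proof cases
        case 2 then show ?thesis using r1(2)[rule_format, of s] s by (auto simp: dist_real_def)
      next
        case 3 then show ?thesis using r2(2)[rule_format, of s] s by (auto simp: dist_real_def)
      next
        case 1 then show ?thesis by simp
      qed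
    qed
  qed
  then obtain r B where rB: "\<And>t. t \<in> {0..1} \<Longrightarrow> r t > 0 \<and> (\<forall>s\<in>{0..1}. dist t s < r t \<longrightarrow> \<bar>x s\<bar> \<le> B t)"
    by metis
  have "compact {0..1::real}" by simp
  then obtain D where D: "D \<subseteq> {0..1}" "finite D" "{0..1} \<subseteq> \<Union> ((\<lambda>t. ball t (r t)) ` D)"
    apply (rule compactE_image[where C="{0..1}" and f="\<lambda>t. ball t (r t)"])
    using rB by auto
  show ?thesis
  proof (intro exI[of _ "\<Sum>t\<in>D. \<bar>B t\<bar>"] ballI)
    fix s :: real assume s: "s \<in> {0..1}"
    then obtain t where t: "t \<in> D" "dist t s < r t" using D(3) by auto
    then have "\<bar>x s\<bar> \<le> B t" using rB[of t] D(1) s by auto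
    also have "\<dots> \<le> \<bar>B t\<bar>" by simp
    also have "\<dots> \<le> (\<Sum>t\<in>D. \<bar>B t\<bar>)" using t D(2) by (intro member_le_sum) auto
    finally show "\<bar>x s\<bar> \<le> (\<Sum>t\<in>D. \<bar>B t\<bar>)" .
  qed
qed

definition supF :: "(real \<times> real \<times> real \<times> real \<times> real \<Rightarrow> real) \<Rightarrow> (real \<Rightarrow> real) \<Rightarrow> real" where
  "supF \<Phi> x = (SUP p\<in>{0..1}\<times>{0..1}. \<Phi> (fst p, snd p, x (fst p), x (snd p), x 1))"

lemma dist_Pair_le: "dist (a,b) (c,d) \<le> dist a c + dist b d"
  unfolding dist_Pair_Pair by (rule sqrt_sum_squares_le_sum) auto

definition Kset :: "real \<Rightarrow> (real \<times> real \<times> real \<times> real \<times> real) set" where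
  "Kset B = {0..1} \<times> {0..1} \<times> {-B..B} \<times> {-B..B} \<times> {-B..B}"

lemma compact_Kset: "compact (Kset B)"
  unfolding Kset_def by (intro compact_Times compact_Icc)

lemma supF_bdd:
  fixes B :: real and \<Phi> :: "real \<times> real \<times> real \<times> real \<times> real \<Rightarrow> real"
  assumes "continuous_on UNIV \<Phi>" "\<forall>t\<in>{0..1}. \<bar>x t\<bar> \<le> B"
  shows "bdd_above ((\<lambda>p. \<Phi> (fst p, snd p, x (fst p), x (snd p), x 1)) ` ({0..1}\<times>{0..1}))"
proof -
  have "compact (\<Phi> ` Kset B)"
    using assms(1) by (intro compact_continuous_image compact_Kset) (auto intro: continuous_on_subset)
  then have "bounded (\<Phi> ` Kset B)" by (rule compact_imp_bounded)
  then have "bdd_above (\<Phi> ` Kset B)" by (rule bounded_imp_bdd_above)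
  moreover have "(\<lambda>p. \<Phi> (fst p, snd p, x (fst p), x (snd p), x 1)) ` ({0..1}\<times>{0..1}) \<subseteq> \<Phi> ` Kset B"
    using assms(2) by (force simp: Kset_def abs_le_iff)
  ultimately show ?thesis by (rule bdd_above_mono)
qed

lemma supF_upper:
  fixes B :: real and \<Phi> :: "real \<times> real \<times> real \<times> real \<times> real \<Rightarrow> real"
  assumes "continuous_on UNIV \<Phi>" "\<forall>t\<in>{0..1}. \<bar>x t\<bar> \<le> B" "u \<in> {0..1}" "v \<in> {0..1}"
  shows "\<Phi> (u, v, x u, x v, x 1) \<le> supF \<Phi> x"
  unfolding supF_def
  using cSUP_upper[OF _ supF_bdd[OF assms(1,2)], of "(u,v)"] assms(3,4) by auto

lemma supF_least:
  assumes "\<And>u v. u \<in> {0..1} \<Longrightarrow> v \<in> {0..1} \<Longrightarrow> \<Phi> (u, v, x u, x v, x 1) \<le> c"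
  shows "supF \<Phi> x \<le> c"
  unfolding supF_def using assms by (intro cSUP_least) auto

lemma time_change_1:
  assumes "l \<in> time_changes01" shows "l 1 = 1"
proof -
  have sm: "strict_mono_on {0..1} l" and im: "l ` {0..1} = {0..1}" using assms unfolding time_changes01_def by auto
  have "l 1 \<in> {0..1}" using im by auto
  moreover have "\<not> l 1 < 1"
  proof
    assume "l 1 < 1"
    have "(1::real) \<in> l ` {0..1}" using im by auto
    then obtain s where s: "s \<in> {0..1}" "l s = 1" by auto
    then have "s < 1" using \<open>l 1 < 1\<close> by (cases "s = 1") auto
    then have "l s < l 1" using s by (intro strict_mono_onD[OF sm]) auto
    then show False using s \<open>l 1 < 1\<close> by simp
  qed
  ultimately show ?thesis by simp
qed

lemma id_time_change: "(\<lambda>t. t) \<in> time_changes01"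
  unfolding time_changes01_def by (auto simp: strict_mono_on_def)

lemma skorokhod_small:
  assumes x: "\<forall>t\<in>{0..1}. \<bar>x t\<bar> \<le> Bx" and y: "\<forall>t\<in>{0..1}. \<bar>y t\<bar> \<le> By"
    and d: "skorokhod_dist x y < d"
  shows "\<exists>l\<in>time_changes01. \<exists>e<d. (\<forall>t\<in>{0..1}. \<bar>l t - t\<bar> \<le> e) \<and> (\<forall>t\<in>{0..1}. \<bar>x t - y (l t)\<bar> \<le> e)"
proof -
  let ?E = "{e. e \<ge> 0 \<and> (\<exists>l\<in>time_changes01.
        (\<forall>t\<in>{0..1}. \<bar>l t - t\<bar> \<le> e) \<and> (\<forall>t\<in>{0..1}. \<bar>x t - y (l t)\<bar> \<le> e))}"
  have Bx: "Bx \<ge> 0" using x[rule_format, of 0] by simp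
  have By: "By \<ge> 0" using y[rule_format, of 0] by simp
  have "Bx + By \<in> ?E"
  proof -
    have "\<forall>t\<in>{0..1}. \<bar>x t - y t\<bar> \<le> Bx + By"
      using x y by (auto intro: order.trans[OF abs_triangle_ineq4] add_mono)
    then show ?thesis using Bx By id_time_change
      by (auto intro!: bexI[of _ "\<lambda>t. t"])
  qed
  then have "?E \<noteq> {}" by blast
  from cInf_lessD[OF this] d obtain e where "e \<in> ?E" "e < d"
    unfolding skorokhod_dist_def by blast
  then show ?thesis by blast
qed

lemma supF_cont:
  assumes \<Phi>: "continuous_on UNIV \<Phi>" and x: "x \<in> cadlag01" and e: "e > 0"
  shows "\<exists>d>0. \<forall>y\<in>cadlag01. skorokhod_dist x y < d \<longrightarrow> \<bar>supF \<Phi> x - supF \<Phi> y\<bar> < e"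
proof -
  obtain Bx where Bx: "\<forall>t\<in>{0..1}. \<bar>x t\<bar> \<le> Bx" using cadlag_bounded[OF x] by blast
  let ?K = "Kset (Bx + 1)"
  have "uniformly_continuous_on ?K \<Phi>"
    using \<Phi> by (intro compact_uniformly_continuous compact_Kset) (auto intro: continuous_on_subset)
  then obtain d where d: "d > 0" "\<And>p q. p \<in> ?K \<Longrightarrow> q \<in> ?K \<Longrightarrow> dist q p < d \<Longrightarrow> dist (\<Phi> q) (\<Phi> p) < e/2"
    unfolding uniformly_continuous_on_def using e by (metis half_gt_zero)
  have close: "\<bar>\<Phi> q - \<Phi> p\<bar> < e/2" if "p \<in> ?K" "q \<in> ?K"
    "\<bar>fst q - fst p\<bar> \<le> c" "\<bar>fst (snd q) - fst (snd p)\<bar> \<le> c"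
    "\<bar>fst (snd (snd q)) - fst (snd (snd p))\<bar> \<le> c"
    "\<bar>fst (snd (snd (snd q))) - fst (snd (snd (snd p)))\<bar> \<le> c"
    "\<bar>snd (snd (snd (snd q))) - snd (snd (snd (snd p)))\<bar> \<le> c" "c < d/5" for p q c
  proof -
    obtain a1 a2 a3 a4 a5 where p: "p = (a1,a2,a3,a4,a5)" by (cases p) auto
    obtain b1 b2 b3 b4 b5 where q: "q = (b1,b2,b3,b4,b5)" by (cases q) auto
    have "dist q p \<le> \<bar>b1 - a1\<bar> + (\<bar>b2 - a2\<bar> + (\<bar>b3 - a3\<bar> + (\<bar>b4 - a4\<bar> + \<bar>b5 - a5\<bar>)))"
      unfolding p q
      by (rule order.trans[OF dist_Pair_le] add_mono order.refl
          | simp add: dist_real_def)+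
    also have "\<dots> < d" using that unfolding p q by simp
    finally show ?thesis using d(2)[OF that(1,2)] by (simp add: dist_real_def)
  qed
  show ?thesis
  proof (intro exI[of _ "min 1 (d/6)"] conjI ballI impI)
    show "0 < min 1 (d/6)" using d by simp
    fix y assume y: "y \<in> cadlag01" and dxy: "skorokhod_dist x y < min 1 (d/6)"
    obtain By where By: "\<forall>t\<in>{0..1}. \<bar>y t\<bar> \<le> By" using cadlag_bounded[OF y] by blast
    obtain l c where l: "l \<in> time_changes01" "c < min 1 (d/6)" "\<forall>t\<in>{0..1}. \<bar>l t - t\<bar> \<le> c"
      "\<forall>t\<in>{0..1}. \<bar>x t - y (l t)\<bar> \<le> c"
      using skorokhod_small[OF Bx By dxy] by blast
    have l1: "l 1 = 1" by (rule time_change_1[OF l(1)])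
    have lim: "l ` {0..1} = {0..1}" using l(1) unfolding time_changes01_def by auto
    have lin: "l t \<in> {0..1}" if "t \<in> {0..1}" for t using lim that by auto
    have key: "\<bar>\<Phi> (l u, l v, y (l u), y (l v), y 1) - \<Phi> (u, v, x u, x v, x 1)\<bar> < e/2"
      if uv: "u \<in> {0..1}" "v \<in> {0..1}" for u v
    proof (rule close[where c=c])
      have "\<bar>x t\<bar> \<le> Bx + 1" if "t \<in> {0..1}" for t using Bx[rule_format, OF that] by simp
      from this[of u] this[of v] this[of 1] uv
      have "\<bar>x u\<bar> \<le> Bx + 1" "\<bar>x v\<bar> \<le> Bx + 1" "\<bar>x 1\<bar> \<le> Bx + 1" by auto
      then show "(u, v, x u, x v, x 1) \<in> ?K" using uv unfolding Kset_def by (auto simp: abs_le_iff)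
      have "\<bar>y (l t)\<bar> \<le> Bx + 1" if "t \<in> {0..1}" for t
        using Bx[rule_format, OF that] l(4)[rule_format, OF that] l(2) by auto
      from this[of u] this[of v] this[of 1] l1 uv
      have "\<bar>y (l u)\<bar> \<le> Bx + 1" "\<bar>y (l v)\<bar> \<le> Bx + 1" "\<bar>y 1\<bar> \<le> Bx + 1" by auto
      then show "(l u, l v, y (l u), y (l v), y 1) \<in> ?K" using uv lin[OF uv(1)] lin[OF uv(2)]
        unfolding Kset_def by (auto simp: abs_le_iff)
      show "\<bar>fst (l u, l v, y (l u), y (l v), y 1) - fst (u, v, x u, x v, x 1)\<bar> \<le> c" using l(3) uv by auto
      show "\<bar>fst (snd (l u, l v, y (l u), y (l v), y 1)) - fst (snd (u, v, x u, x v, x 1))\<bar> \<le> c" using l(3) uv by auto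
      show "\<bar>fst (snd (snd (l u, l v, y (l u), y (l v), y 1))) - fst (snd (snd (u, v, x u, x v, x 1)))\<bar> \<le> c"
        using l(4) uv by (auto simp: abs_minus_commute)
      show "\<bar>fst (snd (snd (snd (l u, l v, y (l u), y (l v), y 1)))) - fst (snd (snd (snd (u, v, x u, x v, x 1))))\<bar> \<le> c"
        using l(4) uv by (auto simp: abs_minus_commute)
      show "\<bar>snd (snd (snd (snd (l u, l v, y (l u), y (l v), y 1)))) - snd (snd (snd (snd (u, v, x u, x v, x 1))))\<bar> \<le> c"
        using l(4)[rule_format, of 1] l1 by (auto simp: abs_minus_commute)
      show "c < d/5" using l(2) d by simp
    qed
    have 1: "supF \<Phi> x \<le> supF \<Phi> y + e/2"
    proof (rule supF_least)
      fix u v :: real assume uv: "u \<in> {0..1}" "v \<in> {0..1}"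
      have "\<Phi> (l u, l v, y (l u), y (l v), y 1) \<le> supF \<Phi> y"
        using supF_upper[OF \<Phi> By lin[OF uv(1)] lin[OF uv(2)]] l1 by simp
      then show "\<Phi> (u, v, x u, x v, x 1) \<le> supF \<Phi> y + e/2" using key[OF uv] unfolding abs_less_iff by linarith
    qed
    have 2: "supF \<Phi> y \<le> supF \<Phi> x + e/2"
    proof (rule supF_least)
      fix u' v' :: real assume uv: "u' \<in> {0..1}" "v' \<in> {0..1}"
      obtain u where u: "u \<in> {0..1}" "u' = l u" using uv lim by (metis imageE)
      obtain v where v: "v \<in> {0..1}" "v' = l v" using uv lim by (metis imageE)
      have "\<Phi> (u, v, x u, x v, x 1) \<le> supF \<Phi> x"
        using supF_upper[OF \<Phi> Bx u(1) v(1)] by simp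
      then show "\<Phi> (u', v', y u', y v', y 1) \<le> supF \<Phi> x + e/2"
        using key[OF u(1) v(1)] u v l1 unfolding abs_less_iff by auto
    qed
    from 1 2 show "\<bar>supF \<Phi> x - supF \<Phi> y\<bar> < e" using e by simp
  qed
qed


definition Dset :: "real set" where "Dset = \<rat> \<inter> {0..1}"

lemma countable_Dset: "countable Dset"
  unfolding Dset_def by (intro countable_Int1 countable_rat)

lemma one_in_Dset: "1 \<in> Dset" unfolding Dset_def by auto

lemma Dset_sub: "Dset \<subseteq> {0..1}" unfolding Dset_def by auto

lemma cadlag_approx:
  assumes x: "x \<in> cadlag01" and u: "u \<in> {0..1}"
  shows "\<exists>a. (\<forall>k. a k \<in> Dset) \<and> a \<longlonglongrightarrow> u \<and> (\<lambda>k. x (a k)) \<longlonglongrightarrow> x u"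
proof (cases "u = 1")
  case True
  then show ?thesis by (intro exI[of _ "\<lambda>_. 1"]) (auto simp: one_in_Dset)
next
  case False
  then have u1: "u < 1" using u by auto
  have "\<exists>r\<in>\<rat>. u < r \<and> r < min (u + 1 / (real k + 1)) 1" for k
    using u1 by (intro Rats_dense_in_real) (auto simp: add_pos_pos)
  then obtain a where a: "\<And>k. a k \<in> \<rat> \<and> u < a k \<and> a k < min (u + 1 / (real k + 1)) 1" by metis
  have aD: "a k \<in> Dset" for k using a[of k] u by (auto simp: Dset_def)
  have lim: "a \<longlonglongrightarrow> u"
  proof (rule tendsto_sandwich[where f="\<lambda>_. u" and h="\<lambda>k. u + 1 / (real k + 1)"])
    show "\<forall>\<^sub>F n in sequentially. u \<le> a n" by (rule always_eventually) (use a in \<open>auto intro: less_imp_le\<close>)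
    show "\<forall>\<^sub>F n in sequentially. a n \<le> u + 1 / (real n + 1)" by (rule always_eventually) (use a in \<open>auto intro: less_imp_le\<close>)
    have "(\<lambda>k. 1 / (real k + 1)) \<longlonglongrightarrow> 0" by (metis (lifting) ext LIMSEQ_inverse_real_of_nat add.commute inverse_eq_divide of_nat_Suc)
    then show "(\<lambda>k. u + 1 / (real k + 1)) \<longlonglongrightarrow> u" using tendsto_add[of "\<lambda>_. u" u sequentially] by fastforce
  qed simp
  have "filterlim a (at_right u) sequentially"
    using lim a by (intro tendsto_imp_filterlim_at_right) auto
  moreover have "(x \<longlongrightarrow> x u) (at_right u)" using x u u1 unfolding cadlag01_def by auto
  ultimately have "(\<lambda>k. x (a k)) \<longlonglongrightarrow> x u" by (rule filterlim_compose[rotated])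
  then show ?thesis using aD lim by blast
qed

lemma supF_countable:
  assumes \<Phi>: "continuous_on UNIV \<Phi>" and x: "x \<in> cadlag01"
  shows "supF \<Phi> x = (SUP p\<in>Dset\<times>Dset. \<Phi> (fst p, snd p, x (fst p), x (snd p), x 1))"
proof -
  obtain B where B: "\<forall>t\<in>{0..1}. \<bar>x t\<bar> \<le> B" using cadlag_bounded[OF x] by blast
  have bdd: "bdd_above ((\<lambda>p. \<Phi> (fst p, snd p, x (fst p), x (snd p), x 1)) ` (Dset\<times>Dset))"
    by (rule bdd_above_mono[OF supF_bdd[OF \<Phi> B]]) (use Dset_sub in auto)
  have ne: "Dset \<times> Dset \<noteq> {}" using one_in_Dset by auto
  show ?thesis
  proof (rule antisym)
    show "supF \<Phi> x \<le> (SUP p\<in>Dset\<times>Dset. \<Phi> (fst p, snd p, x (fst p), x (snd p), x 1))"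
    proof (rule supF_least)
      fix u v :: real assume uv: "u \<in> {0..1}" "v \<in> {0..1}"
      obtain a where a: "\<forall>k. a k \<in> Dset" "a \<longlonglongrightarrow> u" "(\<lambda>k. x (a k)) \<longlonglongrightarrow> x u"
        using cadlag_approx[OF x uv(1)] by blast
      obtain b where b: "\<forall>k. b k \<in> Dset" "b \<longlonglongrightarrow> v" "(\<lambda>k. x (b k)) \<longlonglongrightarrow> x v"
        using cadlag_approx[OF x uv(2)] by blast
      have "(\<lambda>k. (a k, b k, x (a k), x (b k), x 1)) \<longlonglongrightarrow> (u, v, x u, x v, x 1)"
        using a b by (intro tendsto_Pair) auto
      moreover have "isCont \<Phi> (u, v, x u, x v, x 1)" using \<Phi> by (simp add: continuous_on_eq_continuous_at)
      ultimately have "(\<lambda>k. \<Phi> (a k, b k, x (a k), x (b k), x 1)) \<longlonglongrightarrow> \<Phi> (u, v, x u, x v, x 1)"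
        by (rule isCont_tendsto_compose[rotated])
      then show "\<Phi> (u, v, x u, x v, x 1) \<le> (SUP p\<in>Dset\<times>Dset. \<Phi> (fst p, snd p, x (fst p), x (snd p), x 1))"
      proof (rule LIMSEQ_le_const2, intro exI allI impI)
        fix k
        show "\<Phi> (a k, b k, x (a k), x (b k), x 1) \<le> (SUP p\<in>Dset\<times>Dset. \<Phi> (fst p, snd p, x (fst p), x (snd p), x 1))"
          using cSUP_upper[OF _ bdd, of "(a k, b k)"] a(1) b(1) by auto
      qed
    qed
    show "(SUP p\<in>Dset\<times>Dset. \<Phi> (fst p, snd p, x (fst p), x (snd p), x 1)) \<le> supF \<Phi> x"
      using ne Dset_sub by (intro cSUP_least) (auto intro!: supF_upper[OF \<Phi> B])
  qed
qed

lemma supF_measurable: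
  assumes \<Phi>: "continuous_on UNIV \<Phi>"
    and cad: "\<And>\<omega>. \<omega> \<in> space M \<Longrightarrow> X \<omega> \<in> cadlag01"
    and meas: "\<And>t. t \<in> {0..1} \<Longrightarrow> (\<lambda>\<omega>. X \<omega> t) \<in> borel_measurable M"
  shows "(\<lambda>\<omega>. supF \<Phi> (X \<omega>)) \<in> borel_measurable M"
proof -
  have eq: "supF \<Phi> (X \<omega>) = (SUP p\<in>Dset\<times>Dset. \<Phi> (fst p, snd p, X \<omega> (fst p), X \<omega> (snd p), X \<omega> 1))"
    if "\<omega> \<in> space M" for \<omega> using supF_countable[OF \<Phi> cad[OF that]] .
  have Pm: "\<Phi> \<in> borel_measurable borel" using \<Phi> by (rule borel_measurable_continuous_onI)
  show ?thesis
  proof (subst measurable_cong[OF eq], assumption, rule borel_measurable_cSUP)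
    show "countable (Dset \<times> Dset)" using countable_Dset by simp
    fix p assume p: "p \<in> Dset \<times> Dset"
    then have p01: "fst p \<in> {0..1}" "snd p \<in> {0..1}" using Dset_sub by auto
    show "(\<lambda>\<omega>. \<Phi> (fst p, snd p, X \<omega> (fst p), X \<omega> (snd p), X \<omega> 1)) \<in> borel_measurable M"
      apply (rule measurable_compose[OF _ Pm])
      using meas[OF p01(1)] meas[OF p01(2)] meas[of 1]
      by (intro borel_measurable_Pair) auto
  next
    fix \<omega> assume \<omega>: "\<omega> \<in> space M"
    obtain B where B: "\<forall>t\<in>{0..1}. \<bar>X \<omega> t\<bar> \<le> B" using cadlag_bounded[OF cad[OF \<omega>]] by blast
    show "bdd_above ((\<lambda>p. \<Phi> (fst p, snd p, X \<omega> (fst p), X \<omega> (snd p), X \<omega> 1)) ` (Dset\<times>Dset))"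
      by (rule bdd_above_mono[OF supF_bdd[OF \<Phi> B]]) (use Dset_sub in auto)
  qed
qed

lemma step_cadlag:
  fixes g :: "nat \<Rightarrow> real" and c :: real
  assumes c: "c \<ge> 0"
  shows "(\<lambda>t. g (nat \<lfloor>c * t\<rfloor>)) \<in> cadlag01"
proof (cases "c = 0")
  case True then show ?thesis unfolding cadlag01_def by auto
next
  case False
  then have c: "c > 0" using c by simp
  have right: "((\<lambda>t. g (nat \<lfloor>c * t\<rfloor>)) \<longlongrightarrow> g (nat \<lfloor>c * t\<rfloor>)) (at_right t)" for t
  proof (rule tendsto_eventually)
    let ?b = "(real_of_int \<lfloor>c * t\<rfloor> + 1) / c"
    have "t < ?b" using c real_of_int_floor_add_one_gt[of "c*t"] by (simp add: field_simps)
    moreover have "\<lfloor>c * y\<rfloor> = \<lfloor>c * t\<rfloor>" if "y > t" "y < ?b" for y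
    proof -
      have "c * t \<le> c * y" using that c by simp
      moreover have "c * y < real_of_int \<lfloor>c * t\<rfloor> + 1" using that c by (simp add: field_simps)
      ultimately show ?thesis by (intro floor_unique) (auto intro: order.trans[OF of_int_floor_le])
    qed
    ultimately show "\<forall>\<^sub>F y in at_right t. g (nat \<lfloor>c * y\<rfloor>) = g (nat \<lfloor>c * t\<rfloor>)"
      unfolding eventually_at_right_field by (intro exI[of _ ?b]) auto
  qed
  have left: "((\<lambda>t. g (nat \<lfloor>c * t\<rfloor>)) \<longlongrightarrow> g (nat (\<lceil>c * t\<rceil> - 1))) (at_left t)" for t
  proof (rule tendsto_eventually)
    let ?b = "(real_of_int \<lceil>c * t\<rceil> - 1) / c"
    have "?b < t" using c by (simp add: field_simps) linarith
    moreover have "\<lfloor>c * y\<rfloor> = \<lceil>c * t\<rceil> - 1" if "y > ?b" "y < t" for y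
    proof -
      have "c * y < c * t" using that c by simp
      moreover have "c * y > real_of_int \<lceil>c * t\<rceil> - 1" using that c by (simp add: field_simps)
      ultimately show ?thesis by (intro floor_unique) (auto intro: order.strict_trans2[OF _ le_of_int_ceiling])
    qed
    ultimately show "\<forall>\<^sub>F y in at_left t. g (nat \<lfloor>c * y\<rfloor>) = g (nat (\<lceil>c * t\<rceil> - 1))"
      unfolding eventually_at_left_field by (intro exI[of _ ?b]) auto
  qed
  show ?thesis unfolding cadlag01_def using right left by blast
qed

lemma cont_cadlag:
  assumes "continuous_on {0..1} f"
  shows "f \<in> cadlag01"
proof -
  have r: "(f \<longlongrightarrow> f t) (at_right t)" if "t \<in> {0..<1}" for t
  proof -
    have "continuous_on {t..1} f" by (rule continuous_on_subset[OF assms]) (use that in auto)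
    then have "(f \<longlongrightarrow> f t) (at t within {t..1})" using that unfolding continuous_on_def by auto
    then show ?thesis using that by (simp add: at_within_Icc_at_right)
  qed
  have l: "(f \<longlongrightarrow> f t) (at_left t)" if "t \<in> {0<..1}" for t
  proof -
    have "continuous_on {0..t} f" by (rule continuous_on_subset[OF assms]) (use that in auto)
    then have "(f \<longlongrightarrow> f t) (at t within {0..t})" using that unfolding continuous_on_def by auto
    then show ?thesis using that by (simp add: at_within_Icc_at_left)
  qed
  show ?thesis unfolding cadlag01_def using r l by blast
qed


definition clampr :: "real \<Rightarrow> real" where "clampr z = max 0 (min 1 z)"

lemma clampr_cont[continuous_intros]: "continuous_on A f \<Longrightarrow> continuous_on A (\<lambda>x. clampr (f x))"
  unfolding clampr_def by (intro continuous_intros)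

lemma clampr_01: "0 \<le> clampr z" "clampr z \<le> 1" unfolding clampr_def by auto
lemma clampr_1: "z \<ge> 1 \<Longrightarrow> clampr z = 1" unfolding clampr_def by auto
lemma clampr_0: "z \<le> 0 \<Longrightarrow> clampr z = 0" unfolding clampr_def by auto

definition phiw :: "real \<Rightarrow> real \<Rightarrow> real \<Rightarrow> real \<Rightarrow> real" where
  "phiw c \<delta> a v = clampr (a - \<bar>v - c\<bar> / \<delta>)"

definition chi :: "real \<Rightarrow> real \<Rightarrow> real" where
  "chi \<delta> w = clampr (1 - w / \<delta>)"

abbreviation "c1 \<equiv> (\<lambda>z::real\<times>real\<times>real\<times>real\<times>real. fst z)"
abbreviation "c2 \<equiv> (\<lambda>z::real\<times>real\<times>real\<times>real\<times>real. fst (snd z))"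
abbreviation "c3 \<equiv> (\<lambda>z::real\<times>real\<times>real\<times>real\<times>real. fst (snd (snd z)))"
abbreviation "c4 \<equiv> (\<lambda>z::real\<times>real\<times>real\<times>real\<times>real. fst (snd (snd (snd z))))"
abbreviation "c5 \<equiv> (\<lambda>z::real\<times>real\<times>real\<times>real\<times>real. snd (snd (snd (snd z))))"

definition Phi0 :: "real \<Rightarrow> real \<Rightarrow> real\<times>real\<times>real\<times>real\<times>real \<Rightarrow> real" where
  "Phi0 c \<delta> z = phiw c \<delta> 2 (c2 z) * chi \<delta> (c1 z - c2 z) * \<bar>c3 z - c1 z / max (c2 z) (c/2) * c4 z\<bar>"

definition PhiOsc :: "real \<Rightarrow> real \<Rightarrow> real\<times>real\<times>real\<times>real\<times>real \<Rightarrow> real" where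
  "PhiOsc c \<delta> z = phiw c \<delta> 4 (c1 z) * phiw c \<delta> 4 (c2 z) * \<bar>c3 z - c4 z\<bar>"

definition PhiN :: "real\<times>real\<times>real\<times>real\<times>real \<Rightarrow> real" where
  "PhiN z = \<bar>c3 z\<bar>"

definition PhiRev :: "(real\<times>real\<times>real\<times>real\<times>real \<Rightarrow> real) \<Rightarrow> real\<times>real\<times>real\<times>real\<times>real \<Rightarrow> real" where
  "PhiRev \<Phi> z = \<Phi> (1 - c1 z, 1 - c2 z, c5 z - c3 z, c5 z - c4 z, 0)"

definition prev :: "(real \<Rightarrow> real) \<Rightarrow> real \<Rightarrow> real" where
  "prev x t = x 1 - x (1 - t)"

lemma Phi0_cont: "c > 0 \<Longrightarrow> \<delta> > 0 \<Longrightarrow> continuous_on UNIV (Phi0 c \<delta>)"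
  unfolding Phi0_def phiw_def chi_def
  by (intro continuous_intros) auto

lemma PhiOsc_cont: "\<delta> > 0 \<Longrightarrow> continuous_on UNIV (PhiOsc c \<delta>)"
  unfolding PhiOsc_def phiw_def by (intro continuous_intros) auto

lemma weights_le: "X \<ge> 0 \<Longrightarrow> clampr a * clampr b * X \<le> X"
  using clampr_01[of a] clampr_01[of b] by (simp add: mult_le_one mult_left_le_one_le)

lemma PhiN_cont: "continuous_on UNIV PhiN"
  unfolding PhiN_def by (intro continuous_intros)

lemma PhiRev_cont: "continuous_on UNIV \<Phi> \<Longrightarrow> continuous_on UNIV (PhiRev \<Phi>)"
  unfolding PhiRev_def
  by (rule continuous_on_compose2[of UNIV \<Phi>]) (auto intro!: continuous_intros)

lemma supF_rev:
  assumes "\<And>a b p q r. \<Phi> (a, b, p, q, r) = \<Phi> (a, b, p, q, 0)"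
  shows "supF \<Phi> (prev x) = supF (PhiRev \<Phi>) x"
proof -
  let ?h = "\<lambda>p::real\<times>real. (1 - fst p, 1 - snd p)"
  have im: "?h ` ({0..1}\<times>{0..1}) = {0..1}\<times>{0..1}"
  proof
    show "{0..1}\<times>{0..1} \<subseteq> ?h ` ({0..1}\<times>{0..1})"
    proof
      fix p :: "real\<times>real" assume "p \<in> {0..1}\<times>{0..1}"
      then show "p \<in> ?h ` ({0..1}\<times>{0..1})" by (intro image_eqI[of _ _ "?h p"]) auto
    qed
  qed auto
  have "supF (PhiRev \<Phi>) x = (SUP p\<in>?h ` ({0..1}\<times>{0..1}). PhiRev \<Phi> (fst p, snd p, x (fst p), x (snd p), x 1))"
    unfolding supF_def im ..
  also have "\<dots> = (SUP p\<in>{0..1}\<times>{0..1}. PhiRev \<Phi> (1 - fst p, 1 - snd p, x (1 - fst p), x (1 - snd p), x 1))"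
    by (simp add: image_image)
  also have "\<dots> = supF \<Phi> (prev x)"
    unfolding supF_def PhiRev_def prev_def by (subst (2) assms) simp
  finally show ?thesis ..
qed

lemma clampr_le1: "a * clampr z \<le> a" if "a \<ge> 0" for a z
  using clampr_01[of z] that by (simp add: mult_left_le)

lemma Phi0_lower:
  fixes z :: "real \<Rightarrow> real"
  assumes c: "0 < c" and d: "0 < \<delta>" "\<delta> \<le> c/8"
    and s: "s \<in> {0..1}" "\<bar>s - c\<bar> \<le> \<delta>" and u: "u \<in> {0..s}"
  shows "Phi0 c \<delta> (u, s, z u, z s, z 1) = \<bar>z u - u / s * z s\<bar>"
proof -
  have "phiw c \<delta> 2 s = 1" unfolding phiw_def using d s by (intro clampr_1) (simp add: field_simps)
  moreover have "chi \<delta> (u - s) = 1" unfolding chi_def using d u by (intro clampr_1) (simp add: field_simps)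
  moreover have "max s (c/2) = s" using s d by auto
  ultimately show ?thesis unfolding Phi0_def by simp
qed

lemma Phi0_upper:
  fixes z :: "real \<Rightarrow> real"
  assumes c: "0 < c" and d: "0 < \<delta>" "\<delta> \<le> c/8"
    and N: "\<forall>t\<in>{0..1}. \<bar>z t\<bar> \<le> Nz"
    and osc: "\<And>a b. a \<in> {0..1} \<Longrightarrow> b \<in> {0..1} \<Longrightarrow> \<bar>a - c\<bar> \<le> 3*\<delta> \<Longrightarrow> \<bar>b - c\<bar> \<le> 3*\<delta> \<Longrightarrow> \<bar>z a - z b\<bar> \<le> \<omega>"
    and om: "\<omega> \<ge> 0"
    and s: "s \<in> {0..1}" "\<bar>s - c\<bar> \<le> \<delta>" and u: "u \<in> {0..1}" and v: "v \<in> {0..1}"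
  shows "Phi0 c \<delta> (u, v, z u, z v, z 1) \<le> \<bar>z (min u s) - min u s / s * z s\<bar> + \<omega> + 8 * \<delta> * Nz / c"
proof -
  have Nz: "Nz \<ge> 0" using N[rule_format, of 0] by simp
  have w0: "0 \<le> 8 * \<delta> * Nz / c" using Nz d c by simp
  show ?thesis
  proof (cases "\<bar>v - c\<bar> < 2*\<delta> \<and> u - v < \<delta>")
    case False
    then have "phiw c \<delta> 2 v = 0 \<or> chi \<delta> (u - v) = 0"
      unfolding phiw_def chi_def using d by (auto intro!: clampr_0 simp: field_simps)
    then have "Phi0 c \<delta> (u, v, z u, z v, z 1) = 0" unfolding Phi0_def by auto
    then show ?thesis using om w0 by simp
  next
    case True
    have vpos: "v \<ge> c/2" using True d by auto
    then have mx: "max v (c/2) = v" by simp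
    have vp: "v > 0" using vpos c by simp
    have spos: "s \<ge> c/2" using s d by auto
    have sp: "s > 0" using spos c by simp
    have "Phi0 c \<delta> (u, v, z u, z v, z 1) \<le> \<bar>z u - u / v * z v\<bar>"
      unfolding Phi0_def fst_conv snd_conv mx phiw_def chi_def by (rule weights_le) simp
    also have "\<dots> \<le> \<bar>z (min u s) - min u s / s * z s\<bar> + \<omega> + 8 * \<delta> * Nz / c"
    proof (cases "u \<le> s")
      case True2: True
      have zv: "\<bar>z v\<bar> \<le> Nz" using N v by auto
      have e1: "\<bar>u / s * z s - u / v * z v\<bar> \<le> u / s * \<bar>z s - z v\<bar> + u * \<bar>1/s - 1/v\<bar> * \<bar>z v\<bar>"
      proof -
        have "u / s * z s - u / v * z v = u / s * (z s - z v) + u * (1/s - 1/v) * z v"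
          using sp vp by (simp add: field_simps)
        also have "\<bar>\<dots>\<bar> \<le> \<bar>u / s * (z s - z v)\<bar> + \<bar>u * (1/s - 1/v) * z v\<bar>" by (rule abs_triangle_ineq)
        also have "\<dots> = u / s * \<bar>z s - z v\<bar> + u * \<bar>1/s - 1/v\<bar> * \<bar>z v\<bar>"
          using u sp by (simp add: abs_mult)
        finally show ?thesis .
      qed
      have t1: "u / s * \<bar>z s - z v\<bar> \<le> \<omega>"
      proof -
        have "\<bar>z s - z v\<bar> \<le> \<omega>" using osc[OF s(1) v] s(2) True d by auto
        moreover have "u / s \<le> 1" "0 \<le> u / s" using True2 sp u by auto
        ultimately show ?thesis using om by (metis mult_le_one mult_left_le_one_le abs_ge_zero order.trans mult_nonneg_nonneg)
      qed
      have t2: "u * \<bar>1/s - 1/v\<bar> * \<bar>z v\<bar> \<le> 8 * \<delta> * Nz / c"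
      proof -
        have "u * \<bar>1/s - 1/v\<bar> = u / s * (\<bar>v - s\<bar> / v)"
          using sp vp by (simp add: field_simps abs_div abs_mult)
        also have "\<dots> \<le> 1 * (3 * \<delta> / (c/2))"
        proof (rule mult_mono)
          show "u / s \<le> 1" using True2 sp by simp
          have "\<bar>v - s\<bar> \<le> 3 * \<delta>" using True s(2) by auto
          then show "\<bar>v - s\<bar> / v \<le> 3 * \<delta> / (c / 2)"
            using vpos c vp by (intro frac_le) auto
        qed (use u sp d vp in auto)
        finally have "u * \<bar>1/s - 1/v\<bar> \<le> 6 * \<delta> / c" by simp
        then have "u * \<bar>1/s - 1/v\<bar> * \<bar>z v\<bar> \<le> 6 * \<delta> / c * Nz"
          using zv u d c by (intro mult_mono) auto
        also have "\<dots> \<le> 8 * \<delta> * Nz / c" using Nz d c by (simp add: field_simps)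
        finally show ?thesis .
      qed
      have "\<bar>z u - u / v * z v\<bar> \<le> \<bar>z u - u / s * z s\<bar> + \<bar>u / s * z s - u / v * z v\<bar>"
        by (rule order.trans[OF _ abs_triangle_ineq]) simp
      then show ?thesis using True2 e1 t1 t2 by simp
    next
      case False2: False
      have m: "min u s = s" using False2 by simp
      have zv: "\<bar>z v\<bar> \<le> Nz" using N v by auto
      have "\<bar>z u - z v\<bar> \<le> \<omega>" using osc[OF u v] s(2) True False2 d by auto
      moreover have "\<bar>z v - u / v * z v\<bar> \<le> 8 * \<delta> * Nz / c"
      proof -
        have "z v - u / v * z v = (v - u) / v * z v" using vp by (simp add: field_simps)
        then have "\<bar>z v - u / v * z v\<bar> = \<bar>v - u\<bar> / v * \<bar>z v\<bar>"
          using vp by (simp add: abs_mult abs_div)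
        also have "\<dots> \<le> (4 * \<delta> / (c/2)) * Nz"
        proof (rule mult_mono)
          have "\<bar>v - u\<bar> \<le> 4 * \<delta>" using True s(2) False2 by auto
          then show "\<bar>v - u\<bar> / v \<le> 4 * \<delta> / (c / 2)"
            using vpos c vp by (intro frac_le) auto
        qed (use zv d c in auto)
        also have "\<dots> = 8 * \<delta> * Nz / c" by simp
        finally show ?thesis .
      qed
      ultimately have "\<bar>z u - u / v * z v\<bar> \<le> \<omega> + 8 * \<delta> * Nz / c"
        by (smt (verit))
      then show ?thesis using m sp by simp
    qed
    finally show ?thesis .
  qed
qed


definition aS :: "(real \<Rightarrow> real) \<Rightarrow> real \<Rightarrow> real" where
  "aS z s = (SUP u\<in>{0..s}. \<bar>z u - u / s * z s\<bar>)"

locale wsetup =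
  fixes c \<delta> s Nz \<omega> :: real and z :: "real \<Rightarrow> real"
  assumes c: "0 < c" and d: "0 < \<delta>" "\<delta> \<le> c/8"
    and N: "\<forall>t\<in>{0..1}. \<bar>z t\<bar> \<le> Nz"
    and osc: "\<And>a b. a \<in> {0..1} \<Longrightarrow> b \<in> {0..1} \<Longrightarrow> \<bar>a - c\<bar> \<le> 3*\<delta> \<Longrightarrow> \<bar>b - c\<bar> \<le> 3*\<delta> \<Longrightarrow> \<bar>z a - z b\<bar> \<le> \<omega>"
    and om: "\<omega> \<ge> 0"
    and s: "s \<in> {0..1}" "\<bar>s - c\<bar> \<le> \<delta>"
begin

lemma Nz: "Nz \<ge> 0" using N[rule_format, of 0] by simp
lemma sp: "s \<ge> c/2" "s > 0" using s d c by auto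

lemma val_bound: "u \<in> {0..s} \<Longrightarrow> \<bar>z u - u / s * z s\<bar> \<le> 2 * Nz"
proof -
  assume u: "u \<in> {0..s}"
  have "\<bar>z u - u / s * z s\<bar> \<le> \<bar>z u\<bar> + \<bar>u / s * z s\<bar>" by (rule abs_triangle_ineq4)
  also have "\<bar>u / s * z s\<bar> = u / s * \<bar>z s\<bar>" using u sp by (simp add: abs_mult)
  also have "\<dots> \<le> 1 * Nz" using u sp N s by (intro mult_mono) auto
  finally show ?thesis using N u s by force
qed

lemma L1: "u \<in> {0..s} \<Longrightarrow> \<bar>z u - u / s * z s\<bar> \<le> supF (Phi0 c \<delta>) z"
  using Phi0_lower[OF c d s, of u z] supF_upper[OF Phi0_cont[OF c d(1)] N, of u s] s
  by auto

lemma supF_nonneg: "0 \<le> supF (Phi0 c \<delta>) z"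
proof -
  have "\<bar>z 0 - 0 / s * z s\<bar> \<le> supF (Phi0 c \<delta>) z" using L1[of 0] sp by auto
  then show ?thesis by (rule order.trans[rotated]) simp
qed

lemma aS_bounds:
  shows "aS z s \<le> supF (Phi0 c \<delta>) z"
    and "supF (Phi0 c \<delta>) z \<le> aS z s + \<omega> + 8 * \<delta> * Nz / c"
proof -
  have bdd: "bdd_above ((\<lambda>u. \<bar>z u - u / s * z s\<bar>) ` {0..s})"
    using val_bound by (intro bdd_aboveI2) auto
  show "aS z s \<le> supF (Phi0 c \<delta>) z"
    unfolding aS_def using sp L1 by (intro cSUP_least) auto
  show "supF (Phi0 c \<delta>) z \<le> aS z s + \<omega> + 8 * \<delta> * Nz / c"
  proof (rule supF_least)
    fix u v :: real assume u: "u \<in> {0..1}" and v: "v \<in> {0..1}"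
    have "min u s \<in> {0..s}" using u sp by auto
    then have "\<bar>z (min u s) - min u s / s * z s\<bar> \<le> aS z s"
      unfolding aS_def by (rule cSUP_upper[OF _ bdd])
    then show "Phi0 c \<delta> (u, v, z u, z v, z 1) \<le> aS z s + \<omega> + 8 * \<delta> * Nz / c"
      using Phi0_upper[OF c d N osc om s u v] by linarith
  qed
qed

lemma grid_bounds:
  fixes K :: "nat set" and p :: "nat \<Rightarrow> real" and h :: real
  assumes K: "finite K" and p: "\<And>k. k \<in> K \<Longrightarrow> p k \<in> {0..s}"
    and cover: "\<And>u. u \<in> {0..s} \<Longrightarrow> \<exists>k\<in>K. z (p k) = z u \<and> \<bar>p k - u\<bar> \<le> h"
  shows "Max (insert 0 ((\<lambda>k. \<bar>z (p k) - p k / s * z s\<bar>) ` K)) \<le> supF (Phi0 c \<delta>) z"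
    and "supF (Phi0 c \<delta>) z \<le> Max (insert 0 ((\<lambda>k. \<bar>z (p k) - p k / s * z s\<bar>) ` K)) + \<omega> + 8 * \<delta> * Nz / c + 2 * h * Nz / c"
proof -
  let ?M = "Max (insert 0 ((\<lambda>k. \<bar>z (p k) - p k / s * z s\<bar>) ` K))"
  show "?M \<le> supF (Phi0 c \<delta>) z"
    using K supF_nonneg L1 p by (auto intro!: Max.boundedI)
  show "supF (Phi0 c \<delta>) z \<le> ?M + \<omega> + 8 * \<delta> * Nz / c + 2 * h * Nz / c"
  proof (rule supF_least)
    fix u v :: real assume u: "u \<in> {0..1}" and v: "v \<in> {0..1}"
    have us: "min u s \<in> {0..s}" using u sp by auto
    obtain k where k: "k \<in> K" "z (p k) = z (min u s)" "\<bar>p k - min u s\<bar> \<le> h" using cover[OF us] by blast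
    have "\<bar>z (min u s) - min u s / s * z s\<bar> \<le> \<bar>z (p k) - p k / s * z s\<bar> + \<bar>(p k - min u s) / s * z s\<bar>"
    proof -
      have "z (min u s) - min u s / s * z s = (z (p k) - p k / s * z s) + (p k - min u s) / s * z s"
        using k(2) sp by (simp add: field_simps)
      then show ?thesis by (metis abs_triangle_ineq)
    qed
    also have "\<bar>(p k - min u s) / s * z s\<bar> \<le> 2 * h * Nz / c"
    proof -
      have "\<bar>(p k - min u s) / s * z s\<bar> = \<bar>p k - min u s\<bar> / s * \<bar>z s\<bar>" using sp by (simp add: abs_mult abs_div)
      also have "\<dots> \<le> h / (c/2) * Nz"
        using k(3) sp N s c Nz by (intro mult_mono frac_le) auto
      finally show ?thesis by (simp add: mult.commute)
    qed
    also have "\<bar>z (p k) - p k / s * z s\<bar> \<le> ?M" using K k(1) by (intro Max_ge) auto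
    finally show "Phi0 c \<delta> (u, v, z u, z v, z 1) \<le> ?M + \<omega> + 8 * \<delta> * Nz / c + 2 * h * Nz / c"
      using Phi0_upper[OF c d N osc om s u v] by linarith
  qed
qed

end


lemma sqrt_ge_self: "0 \<le> c \<Longrightarrow> c \<le> 1 \<Longrightarrow> c \<le> sqrt c"
proof -
  assume c: "0 \<le> c" "c \<le> 1"
  have "sqrt c \<le> 1" using c by simp
  have "c = sqrt c * sqrt c" using c by simp
  also have "\<dots> \<le> sqrt c * 1" using \<open>sqrt c \<le> 1\<close> c by (intro mult_left_mono) auto
  finally show ?thesis by simp
qed

lemma normalize_err:
  fixes c s \<delta> Ug H R \<omega> N :: real
  assumes c: "0 < c" "c \<le> 1" and s: "\<bar>s - c\<bar> \<le> \<delta>" and d: "0 < \<delta>" "\<delta> \<le> c/8"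
    and U: "0 \<le> Ug" "Ug \<le> 2 * N" and H: "Ug \<le> H" "H \<le> Ug + R"
    and R: "0 \<le> R" "R \<le> \<omega> + 10 * \<delta> * N / c" and om: "\<omega> \<ge> 0" and N: "N \<ge> 0"
  shows "\<bar>Ug / sqrt s - H / sqrt c\<bar> \<le> 100 / c^4 * (\<omega> + \<delta> * N)"
proof -
  have sc: "s \<ge> c/2" using s d by auto
  have spos: "s > 0" using sc c by simp
  have sqs: "sqrt s \<ge> c/2"
  proof -
    have "c/2 \<le> sqrt (c/2)" using sqrt_ge_self[of "c/2"] c by auto
    moreover have "sqrt (c/2) \<le> sqrt s" using real_sqrt_le_mono[OF sc] .
    ultimately show ?thesis by linarith
  qed
  have sqc: "sqrt c \<ge> c" using sqrt_ge_self c by auto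
  have sqcp: "sqrt c > 0" using c by simp
  have sqsp: "sqrt s > 0" using spos by simp
  have e1: "\<bar>sqrt c - sqrt s\<bar> \<le> \<delta> / sqrt c"
  proof -
    have "(sqrt c - sqrt s) * (sqrt c + sqrt s) = c - s"
      using c spos by (simp add: algebra_simps)
    then have "\<bar>sqrt c - sqrt s\<bar> * (sqrt c + sqrt s) = \<bar>c - s\<bar>"
      by (metis abs_mult abs_of_pos add_pos_pos sqcp sqsp)
    then have "\<bar>sqrt c - sqrt s\<bar> * sqrt c \<le> \<delta>"
      using s sqsp by (smt (verit, best) abs_ge_zero mult_left_mono)
    then show ?thesis using sqcp by (simp add: field_simps)
  qed
  have "\<bar>Ug / sqrt s - H / sqrt c\<bar> \<le> \<bar>Ug / sqrt s - Ug / sqrt c\<bar> + \<bar>Ug - H\<bar> / sqrt c"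
  proof -
    have "Ug / sqrt s - H / sqrt c = (Ug / sqrt s - Ug / sqrt c) + (Ug - H) / sqrt c"
      by (simp add: diff_divide_distrib)
    then show ?thesis using sqcp by (metis abs_divide abs_of_pos abs_triangle_ineq)
  qed
  also have "\<bar>Ug / sqrt s - Ug / sqrt c\<bar> \<le> 4 * N * \<delta> / c^2"
  proof -
    have "\<bar>Ug / sqrt s - Ug / sqrt c\<bar> = Ug * \<bar>sqrt c - sqrt s\<bar> / (sqrt s * sqrt c)"
    proof -
      have "Ug / sqrt s - Ug / sqrt c = Ug * (sqrt c - sqrt s) / (sqrt s * sqrt c)"
        using sqcp sqsp by (simp add: field_simps)
      then show ?thesis using sqcp sqsp U by (simp add: abs_mult abs_div)
    qed
    also have "\<dots> \<le> (2 * N) * (\<delta> / sqrt c) / ((c/2) * sqrt c)"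
      using U e1 sqs sqcp c d N spos by (intro frac_le mult_mono mult_right_mono) auto
    also have "\<dots> = 4 * N * \<delta> / (c * (sqrt c * sqrt c))" by (simp add: field_simps)
    also have "\<dots> = 4 * N * \<delta> / c^2" using c by (simp add: power2_eq_square)
    finally show ?thesis .
  qed
  also have "\<bar>Ug - H\<bar> / sqrt c \<le> (\<omega> + 10 * \<delta> * N / c) / c"
    using H R sqc c by (intro frac_le) auto
  also have "4 * N * \<delta> / c^2 + (\<omega> + 10 * \<delta> * N / c) / c = \<omega> / c + 14 * \<delta> * N / c^2"
    using c by (simp add: field_simps power2_eq_square)
  also have "\<dots> \<le> 100 / c^4 * \<omega> + 100 / c^4 * (\<delta> * N)"
  proof (rule add_mono)
    have "c^4 \<le> c" using power_decreasing[of 1 4 c] c by simp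
    then have "1 / c \<le> 100 / c^4" using c by (simp add: field_simps)
    then have "(1 / c) * \<omega> \<le> 100 / c^4 * \<omega>" using om by (rule mult_right_mono)
    then show "\<omega> / c \<le> 100 / c^4 * \<omega>" by simp
    have "c^4 \<le> c^2" using c by (simp add: power_decreasing)
    then have "14 / c^2 \<le> 100 / c^4"
    proof -
      assume h: "c^4 \<le> c^2"
      have "14 / c^2 \<le> 100 / c^2" using c by (intro divide_right_mono) auto
      also have "\<dots> \<le> 100 / c^4" using h c by (intro divide_left_mono) auto
      finally show ?thesis .
    qed
    then have "(14 / c^2) * (\<delta> * N) \<le> 100 / c^4 * (\<delta> * N)" using d N by (intro mult_right_mono) auto
    then show "14 * \<delta> * N / c^2 \<le> 100 / c^4 * (\<delta> * N)" by simp
  qed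
  finally show ?thesis by (simp add: distrib_left)
qed


definition Qpath :: "nat \<Rightarrow> (nat \<Rightarrow> real) \<Rightarrow> real \<Rightarrow> real" where
  "Qpath n y t = (\<Sum>j\<in>{1..nat \<lfloor>real n * t\<rfloor>}. y j) / sqrt (real n)"

lemma Qpath_grid:
  assumes "n > 0" shows "Qpath n y (real k / real n) = (\<Sum>j=1..k. y j) / sqrt (real n)"
  using assms unfolding Qpath_def by simp

lemma Qpath_0: "Qpath n y 0 = 0" unfolding Qpath_def by simp

lemma Qpath_cadlag: "Qpath n y \<in> cadlag01"
  unfolding Qpath_def by (rule step_cadlag) simp

lemma Qpath_floor: "Qpath n y u = Qpath n y (real (nat \<lfloor>real n * u\<rfloor>) / real n)" if "n > 0" "u \<ge> 0"
  using that unfolding Qpath_def by simp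

lemma Max_insert0_scale:
  fixes g :: "nat \<Rightarrow> real"
  assumes "finite K" "a \<ge> 0"
  shows "Max (insert 0 ((\<lambda>k. a * g k) ` K)) = a * Max (insert 0 (g ` K))"
proof -
  have "mono (\<lambda>t. a * t)" using assms(2) by (intro monoI mult_left_mono) auto
  then have "a * Max (insert 0 (g ` K)) = Max ((\<lambda>t. a * t) ` insert 0 (g ` K))"
    using assms(1) by (intro mono_Max_commute) auto
  then show ?thesis by (simp add: image_image)
qed

lemma Max_insert0_zero:
  fixes g :: "nat \<Rightarrow> real"
  assumes "g k0 = 0"
  shows "Max (insert 0 (g ` insert k0 K)) = Max (insert 0 (g ` K))"
  using assms by (simp add: insert_commute)

definition Ha :: "real \<Rightarrow> real \<Rightarrow> (real \<Rightarrow> real) \<Rightarrow> real" where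
  "Ha \<theta> \<delta> x = supF (Phi0 \<theta> \<delta>) x / sqrt \<theta>"
definition Hb :: "real \<Rightarrow> real \<Rightarrow> (real \<Rightarrow> real) \<Rightarrow> real" where
  "Hb \<theta> \<delta> x = supF (PhiRev (Phi0 (1-\<theta>) \<delta>)) x / sqrt (1-\<theta>)"
definition Osc :: "real \<Rightarrow> real \<Rightarrow> (real \<Rightarrow> real) \<Rightarrow> real" where
  "Osc \<theta> \<delta> x = supF (PhiOsc \<theta> \<delta>) x"
definition Nrm :: "(real \<Rightarrow> real) \<Rightarrow> real" where
  "Nrm x = supF PhiN x"
definition Err :: "real \<Rightarrow> real \<Rightarrow> (real \<Rightarrow> real) \<Rightarrow> real" where
  "Err \<theta> \<delta> x = 200 / (min \<theta> (1-\<theta>))^4 * (Osc \<theta> \<delta> x + \<delta> * Nrm x)"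

lemma Phi0_indep5: "Phi0 c \<delta> (a, b, p, q, r) = Phi0 c \<delta> (a, b, p, q, 0)"
  unfolding Phi0_def by simp

locale pathsetup =
  fixes \<theta> \<delta> :: real and x :: "real \<Rightarrow> real"
  assumes th: "0 < \<theta>" "\<theta> < 1" and d: "0 < \<delta>" "\<delta> \<le> \<theta>/8" "\<delta> \<le> (1-\<theta>)/8"
    and x: "x \<in> cadlag01"
begin

lemma xN: "\<forall>t\<in>{0..1}. \<bar>x t\<bar> \<le> Nrm x"
proof
  fix t :: real assume t: "t \<in> {0..1}"
  obtain B where B: "\<forall>t\<in>{0..1}. \<bar>x t\<bar> \<le> B" using cadlag_bounded[OF x] by blast
  show "\<bar>x t\<bar> \<le> Nrm x" unfolding Nrm_def
    using supF_upper[OF PhiN_cont B t t] by (simp add: PhiN_def)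
qed

lemma xosc: "\<bar>x a - x b\<bar> \<le> Osc \<theta> \<delta> x"
  if "a \<in> {0..1}" "b \<in> {0..1}" "\<bar>a - \<theta>\<bar> \<le> 3*\<delta>" "\<bar>b - \<theta>\<bar> \<le> 3*\<delta>" for a b
proof -
  obtain B where B: "\<forall>t\<in>{0..1}. \<bar>x t\<bar> \<le> B" using cadlag_bounded[OF x] by blast
  have "phiw \<theta> \<delta> 4 a = 1" "phiw \<theta> \<delta> 4 b = 1"
    unfolding phiw_def using that d by (auto intro!: clampr_1 simp: field_simps)
  then show ?thesis unfolding Osc_def
    using supF_upper[OF PhiOsc_cont[OF d(1)] B that(1,2), of \<theta>] by (simp add: PhiOsc_def)
qed

lemma osc_nonneg: "Osc \<theta> \<delta> x \<ge> 0"
  using xosc[of \<theta> \<theta>] th d by auto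

lemma nrm_nonneg: "Nrm x \<ge> 0"
  using xN by (metis abs_ge_zero atLeastAtMost_iff order.trans zero_le_one order_refl)

lemma ws_a: "\<bar>s - \<theta>\<bar> \<le> \<delta> \<Longrightarrow> s \<in> {0..1} \<Longrightarrow> wsetup \<theta> \<delta> s (Nrm x) (Osc \<theta> \<delta> x) x"
  by unfold_locales (use th d xN xosc osc_nonneg in auto)

lemma rev_N: "\<forall>t\<in>{0..1}. \<bar>prev x t\<bar> \<le> 2 * Nrm x"
proof
  fix t :: real assume t: "t \<in> {0..1}"
  have "\<bar>prev x t\<bar> \<le> \<bar>x 1\<bar> + \<bar>x (1 - t)\<bar>" unfolding prev_def by (rule abs_triangle_ineq4)
  also have "\<dots> \<le> Nrm x + Nrm x" using xN t by (intro add_mono) auto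
  finally show "\<bar>prev x t\<bar> \<le> 2 * Nrm x" by simp
qed

lemma ws_b: "\<bar>s' - (1 - \<theta>)\<bar> \<le> \<delta> \<Longrightarrow> s' \<in> {0..1} \<Longrightarrow> wsetup (1 - \<theta>) \<delta> s' (2 * Nrm x) (Osc \<theta> \<delta> x) (prev x)"
proof unfold_locales
  fix a b :: real
  assume "a \<in> {0..1}" "b \<in> {0..1}" "\<bar>a - (1 - \<theta>)\<bar> \<le> 3 * \<delta>" "\<bar>b - (1 - \<theta>)\<bar> \<le> 3 * \<delta>"
  then have "\<bar>x (1 - b) - x (1 - a)\<bar> \<le> Osc \<theta> \<delta> x" by (intro xosc) auto
  then show "\<bar>prev x a - prev x b\<bar> \<le> Osc \<theta> \<delta> x" unfolding prev_def by simp
qed (use th d rev_N osc_nonneg in auto)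

lemma supF_rev_eq: "supF (Phi0 (1-\<theta>) \<delta>) (prev x) = supF (PhiRev (Phi0 (1-\<theta>) \<delta>)) x"
  by (rule supF_rev) (rule Phi0_indep5)

lemma min_le: "min \<theta> (1-\<theta>) > 0" "min \<theta> (1-\<theta>) \<le> \<theta>" "min \<theta> (1-\<theta>) \<le> 1 - \<theta>"
  using th by auto

lemma err_mono_a: "100 / \<theta>^4 * (Osc \<theta> \<delta> x + \<delta> * Nrm x) \<le> Err \<theta> \<delta> x"
proof -
  have "100 / \<theta>^4 \<le> 200 / (min \<theta> (1-\<theta>))^4"
    using min_le by (intro frac_le power_mono) auto
  then show ?thesis unfolding Err_def using osc_nonneg nrm_nonneg d
    by (intro mult_right_mono) auto
qed

lemma err_mono_b: "100 / (1-\<theta>)^4 * (Osc \<theta> \<delta> x + \<delta> * (2 * Nrm x)) \<le> Err \<theta> \<delta> x"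
proof -
  have "100 / (1-\<theta>)^4 * (Osc \<theta> \<delta> x + \<delta> * (2 * Nrm x)) \<le> 100 / (1-\<theta>)^4 * (2 * (Osc \<theta> \<delta> x + \<delta> * Nrm x))"
    using osc_nonneg th by (intro mult_left_mono) auto
  also have "\<dots> = 200 / (1-\<theta>)^4 * (Osc \<theta> \<delta> x + \<delta> * Nrm x)" by simp
  also have "\<dots> \<le> Err \<theta> \<delta> x"
  proof -
    have "200 / (1-\<theta>)^4 \<le> 200 / (min \<theta> (1-\<theta>))^4"
      using min_le by (intro frac_le power_mono) auto
    then show ?thesis unfolding Err_def using osc_nonneg nrm_nonneg d
      by (intro mult_right_mono) auto
  qed
  finally show ?thesis .
qed

end


context wsetup begin

lemma aS_props: "0 \<le> aS z s" "aS z s \<le> 2 * Nz"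
proof -
  have bdd: "bdd_above ((\<lambda>u. \<bar>z u - u / s * z s\<bar>) ` {0..s})"
    using val_bound by (intro bdd_aboveI2) auto
  have "\<bar>z 0 - 0 / s * z s\<bar> \<le> aS z s" unfolding aS_def using sp by (intro cSUP_upper[OF _ bdd]) auto
  then show "0 \<le> aS z s" by (rule order.trans[rotated]) simp
  show "aS z s \<le> 2 * Nz" unfolding aS_def using sp val_bound by (intro cSUP_least) auto
qed

lemma aS_final:
  assumes "c \<le> 1"
  shows "\<bar>aS z s / sqrt s - supF (Phi0 c \<delta>) z / sqrt c\<bar> \<le> 100 / c^4 * (\<omega> + \<delta> * Nz)"
proof -
  have "8 * \<delta> * Nz / c \<le> 10 * \<delta> * Nz / c" using Nz d c by (intro divide_right_mono mult_right_mono) auto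
  then show ?thesis
  using aS_bounds aS_props Nz om c d s assms
  by (intro normalize_err[where R="\<omega> + 8 * \<delta> * Nz / c"]) (auto intro!: divide_nonneg_pos)
qed

lemma grid_final:
  fixes K :: "nat set" and p :: "nat \<Rightarrow> real" and h :: real
  assumes "c \<le> 1" and K: "finite K" and p: "\<And>k. k \<in> K \<Longrightarrow> p k \<in> {0..s}"
    and cover: "\<And>u. u \<in> {0..s} \<Longrightarrow> \<exists>k\<in>K. z (p k) = z u \<and> \<bar>p k - u\<bar> \<le> h"
    and h: "0 \<le> h" "h \<le> \<delta>"
  shows "\<bar>Max (insert 0 ((\<lambda>k. \<bar>z (p k) - p k / s * z s\<bar>) ` K)) / sqrt s - supF (Phi0 c \<delta>) z / sqrt c\<bar>
           \<le> 100 / c^4 * (\<omega> + \<delta> * Nz)"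
proof (rule normalize_err[where R="\<omega> + 8 * \<delta> * Nz / c + 2 * h * Nz / c"])
  let ?M = "Max (insert 0 ((\<lambda>k. \<bar>z (p k) - p k / s * z s\<bar>) ` K))"
  show "0 \<le> ?M" using K by (intro Max_ge) auto
  show "?M \<le> 2 * Nz" using K val_bound p Nz by (intro Max.boundedI) auto
  show "?M \<le> supF (Phi0 c \<delta>) z" by (rule grid_bounds(1)[OF K p cover])
  show "supF (Phi0 c \<delta>) z \<le> ?M + (\<omega> + 8 * \<delta> * Nz / c + 2 * h * Nz / c)"
    using grid_bounds(2)[OF K p cover] by simp
  show "0 \<le> \<omega> + 8 * \<delta> * Nz / c + 2 * h * Nz / c" using om d c Nz h by auto
  have "h * Nz \<le> \<delta> * Nz" using h Nz by (intro mult_right_mono) auto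
  then have "8 * \<delta> * Nz + 2 * h * Nz \<le> 10 * \<delta> * Nz" by (simp add: algebra_simps)
  then have "(8 * \<delta> * Nz + 2 * h * Nz) / c \<le> 10 * \<delta> * Nz / c" using c by (intro divide_right_mono) auto
  then show "\<omega> + 8 * \<delta> * Nz / c + 2 * h * Nz / c \<le> \<omega> + 10 * \<delta> * Nz / c" by (simp add: add_divide_distrib)
qed (use om Nz c d s assms in auto)

end

context pathsetup begin

lemma G_bound_a: "\<bar>aS x \<theta> / sqrt \<theta> - Ha \<theta> \<delta> x\<bar> \<le> Err \<theta> \<delta> x"
proof -
  interpret wsetup \<theta> \<delta> \<theta> "Nrm x" "Osc \<theta> \<delta> x" x using ws_a[of \<theta>] th d by auto
  have "\<bar>aS x \<theta> / sqrt \<theta> - supF (Phi0 \<theta> \<delta>) x / sqrt \<theta>\<bar> \<le> 100 / \<theta>^4 * (Osc \<theta> \<delta> x + \<delta> * Nrm x)"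
    by (rule aS_final) (use th in auto)
  then show ?thesis unfolding Ha_def using err_mono_a by linarith
qed

lemma G_bound_b: "\<bar>aS (prev x) (1-\<theta>) / sqrt (1-\<theta>) - Hb \<theta> \<delta> x\<bar> \<le> Err \<theta> \<delta> x"
proof -
  interpret wsetup "1-\<theta>" \<delta> "1-\<theta>" "2 * Nrm x" "Osc \<theta> \<delta> x" "prev x" using ws_b[of "1-\<theta>"] th d by auto
  have "\<bar>aS (prev x) (1-\<theta>) / sqrt (1-\<theta>) - supF (Phi0 (1-\<theta>) \<delta>) (prev x) / sqrt (1-\<theta>)\<bar>
     \<le> 100 / (1-\<theta>)^4 * (Osc \<theta> \<delta> x + \<delta> * (2 * Nrm x))"
    by (rule aS_final) (use th in auto)
  then show ?thesis unfolding Hb_def supF_rev_eq using err_mono_b by linarith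
qed

end


definition Ta :: "nat \<Rightarrow> (nat \<Rightarrow> real) \<Rightarrow> nat \<Rightarrow> real" where
  "Ta n y kh = Max (insert 0 ((\<lambda>k. \<bar>(\<Sum>i=1..k. y i) - real k / real kh * (\<Sum>i=1..kh. y i)\<bar>) ` {1..kh}))
                   / sqrt (real kh)"

definition Tb :: "nat \<Rightarrow> (nat \<Rightarrow> real) \<Rightarrow> nat \<Rightarrow> real" where
  "Tb n y kh = Max (insert 0 ((\<lambda>k. \<bar>(\<Sum>i\<in>{kh<..k}. y i)
                          - real (k - kh) / real (n - kh) * (\<Sum>i\<in>{kh<..n}. y i)\<bar>) ` {kh<..n}))
                   / sqrt (real (n - kh))"

lemma nat_floor_bounds: "t \<ge> 0 \<Longrightarrow> real (nat \<lfloor>t\<rfloor>) \<le> t \<and> t < real (nat \<lfloor>t\<rfloor>) + 1"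
  by linarith

lemma sqrt_scale_abs: "a > 0 \<Longrightarrow> sqrt a * \<bar>p / sqrt a - q / sqrt a\<bar> = \<bar>p - q\<bar>"
proof -
  assume a: "a > 0"
  have "p / sqrt a - q / sqrt a = (p - q) / sqrt a" by (simp add: diff_divide_distrib)
  then show ?thesis using a by (simp add: abs_div)
qed

lemma T_bound_a:
  fixes y :: "nat \<Rightarrow> real" and n kh :: nat
  assumes th: "0 < \<theta>" "\<theta> < 1" and d: "0 < \<delta>" "\<delta> \<le> \<theta>/8" "\<delta> \<le> (1-\<theta>)/8"
    and kh: "1 \<le> kh" "kh \<le> n" and s: "\<bar>real kh / real n - \<theta>\<bar> \<le> \<delta>" and nd: "1 / real n \<le> \<delta>"
  shows "\<bar>Ta n y kh - Ha \<theta> \<delta> (Qpath n y)\<bar> \<le> Err \<theta> \<delta> (Qpath n y)"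
proof -
  define x where "x = Qpath n y"
  define S where "S k = (\<Sum>i=1..k. y i)" for k
  define s where "s = real kh / real n"
  have n: "n > 0" using kh by simp
  interpret pathsetup \<theta> \<delta> x using th d Qpath_cadlag unfolding x_def by unfold_locales auto
  have s01: "s \<in> {0..1}" using kh n unfolding s_def by auto
  interpret wsetup \<theta> \<delta> s "Nrm x" "Osc \<theta> \<delta> x" x using ws_a[OF _ s01] s unfolding s_def by auto
  have spos: "s > 0" using kh n unfolding s_def by auto
  have xk: "x (real k / real n) = S k / sqrt (real n)" for k unfolding x_def S_def using Qpath_grid[OF n] .
  define vf where "vf k = \<bar>x (real k / real n) - (real k / real n) / s * x s\<bar>" for k
  have vf0: "vf 0 = 0" unfolding vf_def x_def using Qpath_0 by simp
  have xs: "x s = S kh / sqrt (real n)" using xk[of kh] unfolding s_def .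
  have trm: "\<bar>S k - real k / real kh * S kh\<bar> = sqrt (real n) * vf k" for k
  proof -
    have eq: "(real k / real n) / s = real k / real kh" unfolding s_def using n by simp
    have "vf k = \<bar>S k / sqrt (real n) - real k / real kh * (S kh / sqrt (real n))\<bar>"
      unfolding vf_def xk xs eq ..
    then have vfe: "vf k = \<bar>S k / sqrt (real n) - (real k / real kh * S kh) / sqrt (real n)\<bar>"
      by simp
    have "sqrt (real n) * vf k = \<bar>S k - real k / real kh * S kh\<bar>"
      unfolding vfe by (rule sqrt_scale_abs) (use n in simp)
    then show ?thesis by simp
  qed
  have "Ta n y kh = Max (insert 0 ((\<lambda>k. sqrt (real n) * vf k) ` {1..kh})) / sqrt (real kh)"
    unfolding Ta_def S_def[symmetric] trm ..
  also have "\<dots> = sqrt (real n) * Max (insert 0 (vf ` {1..kh})) / sqrt (real kh)"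
    by (subst Max_insert0_scale) auto
  also have "Max (insert 0 (vf ` {1..kh})) = Max (insert 0 (vf ` {0..kh}))"
  proof -
    have "{0..kh} = insert 0 {1..kh}" by auto
    then show ?thesis using Max_insert0_zero[of vf 0 "{1..kh}", OF vf0] by simp
  qed
  also have "sqrt (real n) * Max (insert 0 (vf ` {0..kh})) / sqrt (real kh) = Max (insert 0 (vf ` {0..kh})) / sqrt s"
    unfolding s_def using n kh by (simp add: real_sqrt_divide field_simps)
  finally have Teq: "Ta n y kh = Max (insert 0 (vf ` {0..kh})) / sqrt s" .
  have "\<bar>Max (insert 0 ((\<lambda>k. \<bar>x (real k / real n) - real k / real n / s * x s\<bar>) ` {0..kh})) / sqrt s
          - supF (Phi0 \<theta> \<delta>) x / sqrt \<theta>\<bar> \<le> 100 / \<theta>^4 * (Osc \<theta> \<delta> x + \<delta> * Nrm x)"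
  proof (rule grid_final[where h="1 / real n"])
    show "real k / real n \<in> {0..s}" if "k \<in> {0..kh}" for k
      using that n unfolding s_def by (auto intro: divide_right_mono)
    fix u assume u: "u \<in> {0..s}"
    let ?k = "nat \<lfloor>real n * u\<rfloor>"
    have b: "real ?k \<le> real n * u" "real n * u < real ?k + 1" using nat_floor_bounds[of "real n * u"] u by auto
    have "real n * u \<le> real kh" using u n unfolding s_def by (simp add: field_simps)
    then have "?k \<le> kh" using b by linarith
    moreover have "x (real ?k / real n) = x u" unfolding x_def using Qpath_floor[OF n, of u] u by simp
    moreover have "\<bar>real ?k / real n - u\<bar> \<le> 1 / real n"
    proof -
      have "real ?k / real n \<le> u" using b n by (simp add: field_simps)
      moreover have "u < real ?k / real n + 1 / real n" using b n by (simp add: field_simps)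
      ultimately show ?thesis by simp
    qed
    ultimately show "\<exists>k\<in>{0..kh}. x (real k / real n) = x u \<and> \<bar>real k / real n - u\<bar> \<le> 1 / real n" by auto
  qed (use th nd in auto)
  then have "\<bar>Ta n y kh - Ha \<theta> \<delta> x\<bar> \<le> 100 / \<theta>^4 * (Osc \<theta> \<delta> x + \<delta> * Nrm x)"
    unfolding Teq Ha_def vf_def by simp
  then show ?thesis using err_mono_a unfolding x_def by linarith
qed

lemma sum_split_gt:
  fixes y :: "nat \<Rightarrow> real"
  assumes "kh \<le> k"
  shows "(\<Sum>i\<in>{kh<..k}. y i) = (\<Sum>i=1..k. y i) - (\<Sum>i=1..kh. y i)"
proof -
  have "{1..k} = {1..kh} \<union> {kh<..k}" using assms by auto
  then have "(\<Sum>i=1..k. y i) = (\<Sum>i=1..kh. y i) + (\<Sum>i\<in>{kh<..k}. y i)"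
    by (simp add: sum.union_disjoint ivl_disj_int)
  then show ?thesis by simp
qed

lemma T_bound_b:
  fixes y :: "nat \<Rightarrow> real" and n kh :: nat
  assumes th: "0 < \<theta>" "\<theta> < 1" and d: "0 < \<delta>" "\<delta> \<le> \<theta>/8" "\<delta> \<le> (1-\<theta>)/8"
    and kh: "1 \<le> kh" "kh \<le> n" and s: "\<bar>real kh / real n - \<theta>\<bar> \<le> \<delta>" and nd: "1 / real n \<le> \<delta>"
  shows "\<bar>Tb n y kh - Hb \<theta> \<delta> (Qpath n y)\<bar> \<le> Err \<theta> \<delta> (Qpath n y)"
proof -
  define x where "x = Qpath n y"
  define z where "z = prev x"
  define S where "S k = (\<Sum>i=1..k. y i)" for k
  define s where "s = 1 - real kh / real n"
  have n: "n > 0" using kh by simp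
  have khn: "real kh < real n"
  proof -
    have "real kh / real n < 1" using s th d by auto
    then show ?thesis using n by (simp add: field_simps)
  qed
  then have khn': "kh < n" by simp
  interpret pathsetup \<theta> \<delta> x using th d Qpath_cadlag unfolding x_def by unfold_locales auto
  have s01: "s \<in> {0..1}" using kh n khn unfolding s_def by (auto simp: field_simps)
  have s1: "\<bar>s - (1 - \<theta>)\<bar> \<le> \<delta>" using s unfolding s_def by (simp add: abs_minus_commute)
  interpret wsetup "1-\<theta>" \<delta> s "2 * Nrm x" "Osc \<theta> \<delta> x" z using ws_b[OF s1 s01] unfolding z_def .
  have spos: "s > 0" using khn n unfolding s_def by (simp add: field_simps)
  have sform: "s = real (n - kh) / real n" unfolding s_def using n khn' by (simp add: field_simps)
  have xk: "x (real k / real n) = S k / sqrt (real n)" for k unfolding x_def S_def using Qpath_grid[OF n] .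
  have x1: "x 1 = S n / sqrt (real n)" using xk[of n] n by simp
  have zk: "z (1 - real k / real n) = (S n - S k) / sqrt (real n)" for k
    unfolding z_def prev_def using xk[of k] x1 by (simp add: diff_divide_distrib)
  have zs: "z s = (S n - S kh) / sqrt (real n)" using zk[of kh] unfolding s_def .
  define vf where "vf k = \<bar>z (1 - real k / real n) - (1 - real k / real n) / s * z s\<bar>" for k
  have vfkh: "vf kh = 0" unfolding vf_def using spos by (simp add: s_def[symmetric])
  have trm: "\<bar>(\<Sum>i\<in>{kh<..k}. y i) - real (k - kh) / real (n - kh) * (\<Sum>i\<in>{kh<..n}. y i)\<bar>
      = sqrt (real n) * vf k" if k: "k \<in> {kh<..n}" for k
  proof -
    have eq: "(1 - real k / real n) / s = real (n - k) / real (n - kh)"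
      unfolding sform using n k khn' by (simp add: field_simps of_nat_diff)
    have "vf k = \<bar>(S n - S k) / sqrt (real n) - real (n - k) / real (n - kh) * ((S n - S kh) / sqrt (real n))\<bar>"
      unfolding vf_def zk zs eq ..
    then have vfe: "vf k = \<bar>(S n - S k) / sqrt (real n) - (real (n - k) / real (n - kh) * (S n - S kh)) / sqrt (real n)\<bar>"
      by simp
    have "sqrt (real n) * vf k = \<bar>(S n - S k) - real (n - k) / real (n - kh) * (S n - S kh)\<bar>"
      unfolding vfe by (rule sqrt_scale_abs) (use n in simp)
    also have "\<dots> = \<bar>(S k - S kh) - real (k - kh) / real (n - kh) * (S n - S kh)\<bar>"
    proof -
      have "(S k - S kh) - real (k - kh) / real (n - kh) * (S n - S kh)
          = - ((S n - S k) - real (n - k) / real (n - kh) * (S n - S kh))"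
        using k khn' by (simp add: field_simps of_nat_diff)
      then show ?thesis by (metis abs_minus_cancel)
    qed
    finally show ?thesis using k unfolding S_def by (simp add: sum_split_gt)
  qed
  have "Tb n y kh = Max (insert 0 ((\<lambda>k. sqrt (real n) * vf k) ` {kh<..n})) / sqrt (real (n - kh))"
  proof -
    have "(\<lambda>k. \<bar>(\<Sum>i\<in>{kh<..k}. y i) - real (k - kh) / real (n - kh) * (\<Sum>i\<in>{kh<..n}. y i)\<bar>) ` {kh<..n}
        = (\<lambda>k. sqrt (real n) * vf k) ` {kh<..n}" by (rule image_cong[OF refl trm])
    then show ?thesis unfolding Tb_def by simp
  qed
  also have "\<dots> = sqrt (real n) * Max (insert 0 (vf ` {kh<..n})) / sqrt (real (n - kh))"
    by (subst Max_insert0_scale) auto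
  also have "Max (insert 0 (vf ` {kh<..n})) = Max (insert 0 (vf ` {kh..n}))"
  proof -
    have "{kh..n} = insert kh {kh<..n}" using khn' by auto
    then show ?thesis using Max_insert0_zero[of vf kh "{kh<..n}", OF vfkh] by simp
  qed
  also have "sqrt (real n) * Max (insert 0 (vf ` {kh..n})) / sqrt (real (n - kh)) = Max (insert 0 (vf ` {kh..n})) / sqrt s"
    unfolding sform using n khn' by (simp add: real_sqrt_divide field_simps)
  finally have Teq: "Tb n y kh = Max (insert 0 (vf ` {kh..n})) / sqrt s" .
  have "\<bar>Max (insert 0 ((\<lambda>k. \<bar>z (1 - real k / real n) - (1 - real k / real n) / s * z s\<bar>) ` {kh..n})) / sqrt s
          - supF (Phi0 (1-\<theta>) \<delta>) z / sqrt (1-\<theta>)\<bar> \<le> 100 / (1-\<theta>)^4 * (Osc \<theta> \<delta> x + \<delta> * (2 * Nrm x))"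
  proof (rule grid_final[where h="1 / real n"])
    show "1 - real k / real n \<in> {0..s}" if "k \<in> {kh..n}" for k
      using that n unfolding s_def by (auto simp: field_simps)
    fix u assume u: "u \<in> {0..s}"
    let ?k = "nat \<lfloor>real n * (1 - u)\<rfloor>"
    have u1: "1 - u \<ge> 0" using u s01 by auto
    have b: "real ?k \<le> real n * (1 - u)" "real n * (1 - u) < real ?k + 1"
      using nat_floor_bounds[of "real n * (1 - u)"] u1 by auto
    have "real n * (1 - u) \<ge> real kh" using u n unfolding s_def by (simp add: field_simps)
    then have "kh \<le> ?k" by linarith
    moreover have "real n * (1 - u) \<le> real n" using u n by (simp add: field_simps)
    then have "?k \<le> n" using b by linarith
    moreover have "z (1 - real ?k / real n) = z u"
      unfolding z_def prev_def x_def using Qpath_floor[OF n u1] by simp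
    moreover have "\<bar>(1 - real ?k / real n) - u\<bar> \<le> 1 / real n"
    proof -
      have "real ?k / real n \<le> 1 - u" using b n by (simp add: field_simps)
      moreover have "1 - u < real ?k / real n + 1 / real n" using b n by (simp add: field_simps)
      ultimately show ?thesis by simp
    qed
    ultimately show "\<exists>k\<in>{kh..n}. z (1 - real k / real n) = z u \<and> \<bar>(1 - real k / real n) - u\<bar> \<le> 1 / real n"
      by auto
  qed (use th nd in auto)
  then have "\<bar>Tb n y kh - Hb \<theta> \<delta> x\<bar> \<le> 100 / (1-\<theta>)^4 * (Osc \<theta> \<delta> x + \<delta> * (2 * Nrm x))"
    unfolding Teq Hb_def vf_def z_def supF_rev_eq by simp
  then show ?thesis using err_mono_b unfolding x_def by linarith
qed


lemma integrable_indicator_prob: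
  assumes "prob_space M" "S \<in> sets M"
  shows "integrable M (\<lambda>\<omega>. indicator S \<omega> :: real)"
proof -
  interpret prob_space M by fact
  show ?thesis using assms(2) by (intro integrable_const_bound[where B=1]) (auto simp: indicator_def)
qed

lemma int_diff_le:
  fixes g h :: "'a \<Rightarrow> real"
  assumes M: "prob_space M" and g: "g \<in> borel_measurable M" and h: "h \<in> borel_measurable M"
    and gB: "\<forall>\<omega>\<in>space M. \<bar>g \<omega>\<bar> \<le> B" and hB: "\<forall>\<omega>\<in>space M. \<bar>h \<omega>\<bar> \<le> B"
    and S: "S \<in> sets M" and close: "\<forall>\<omega>\<in>space M - S. \<bar>g \<omega> - h \<omega>\<bar> \<le> e" and e: "e \<ge> 0"
  shows "\<bar>(\<integral>\<omega>. g \<omega> \<partial>M) - (\<integral>\<omega>. h \<omega> \<partial>M)\<bar> \<le> e + 2 * B * measure M S"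
proof -
  interpret prob_space M by (rule M)
  have ig: "integrable M g" using gB g by (intro integrable_const_bound[where B=B]) auto
  have ih: "integrable M h" using hB h by (intro integrable_const_bound[where B=B]) auto
  have iS: "integrable M (\<lambda>\<omega>. e + 2 * B * indicator S \<omega>)"
    using S by (intro integrable_const_bound[where B="\<bar>e\<bar> + 2 * \<bar>B\<bar>"]) (auto simp: indicator_def)
  have "\<bar>(\<integral>\<omega>. g \<omega> \<partial>M) - (\<integral>\<omega>. h \<omega> \<partial>M)\<bar> = \<bar>\<integral>\<omega>. g \<omega> - h \<omega> \<partial>M\<bar>"
    using ig ih by simp
  also have "\<dots> \<le> (\<integral>\<omega>. \<bar>g \<omega> - h \<omega>\<bar> \<partial>M)" by (rule integral_abs_bound)
  also have "\<dots> \<le> (\<integral>\<omega>. e + 2 * B * indicator S \<omega> \<partial>M)"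
  proof (rule integral_mono)
    show "integrable M (\<lambda>\<omega>. \<bar>g \<omega> - h \<omega>\<bar>)" using ig ih by auto
    show "integrable M (\<lambda>\<omega>. e + 2 * B * indicator S \<omega>)" by (rule iS)
    fix \<omega> assume \<omega>: "\<omega> \<in> space M"
    show "\<bar>g \<omega> - h \<omega>\<bar> \<le> e + 2 * B * indicator S \<omega>"
    proof (cases "\<omega> \<in> S")
      case True
      have "\<bar>g \<omega> - h \<omega>\<bar> \<le> \<bar>g \<omega>\<bar> + \<bar>h \<omega>\<bar>" by (rule abs_triangle_ineq4)
      also have "\<dots> \<le> 2 * B" using gB hB \<omega> by (smt (verit))
      finally show ?thesis using True e by simp
    next
      case False
      then show ?thesis using close \<omega> by simp
    qed
  qed
  also have "\<dots> = e + 2 * B * measure M S"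
  proof -
    have iI: "integrable M (\<lambda>\<omega>. indicator S \<omega> :: real)" by (rule integrable_indicator_prob[OF M S])
    have "(\<integral>\<omega>. e + 2 * B * indicator S \<omega> \<partial>M) = (\<integral>\<omega>. e \<partial>M) + (\<integral>\<omega>. 2 * B * indicator S \<omega> \<partial>M)"
      using iI by (intro Bochner_Integration.integral_add) auto
    also have "(\<integral>\<omega>. 2 * B * indicator S \<omega> \<partial>M) = 2 * B * (\<integral>\<omega>. indicator S \<omega> \<partial>M)"
      by (rule integral_mult_right_zero)
    also have "(\<integral>\<omega>. indicator S \<omega> \<partial>M) = measure M S"
      using S by (simp add: sets.Int_space_eq2)
    finally show ?thesis by (simp add: prob_space)
  qed
  finally show ?thesis .
qed

lemma prob_le_int:
  fixes g :: "'a \<Rightarrow> real"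
  assumes M: "prob_space M" and g: "g \<in> borel_measurable M" and S: "S \<in> sets M"
    and g01: "\<forall>\<omega>\<in>space M. 0 \<le> g \<omega> \<and> g \<omega> \<le> 1" and gS: "\<forall>\<omega>\<in>S. g \<omega> \<ge> 1"
  shows "measure M S \<le> (\<integral>\<omega>. g \<omega> \<partial>M)"
proof -
  interpret prob_space M by (rule M)
  have ig: "integrable M g" using g01 g by (intro integrable_const_bound[where B=1]) auto
  have "measure M S = (\<integral>\<omega>. indicator S \<omega> \<partial>M)" using S by (simp add: sets.Int_space_eq2)
  also have "\<dots> \<le> (\<integral>\<omega>. g \<omega> \<partial>M)"
    using S ig g01 gS sets.sets_into_space[OF S] integrable_indicator_prob[OF M S]
    by (intro integral_mono) (auto simp: indicator_def)
  finally show ?thesis .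
qed

lemma int_le_prob:
  fixes g :: "'a \<Rightarrow> real"
  assumes M: "prob_space M" and g: "g \<in> borel_measurable M" and S: "S \<in> sets M"
    and g01: "\<forall>\<omega>\<in>space M. 0 \<le> g \<omega> \<and> g \<omega> \<le> 1" and gS: "\<forall>\<omega>\<in>space M - S. g \<omega> = 0"
  shows "(\<integral>\<omega>. g \<omega> \<partial>M) \<le> measure M S"
proof -
  interpret prob_space M by (rule M)
  have ig: "integrable M g" using g01 g by (intro integrable_const_bound[where B=1]) auto
  have "(\<integral>\<omega>. g \<omega> \<partial>M) \<le> (\<integral>\<omega>. indicator S \<omega> \<partial>M)"
    using S ig g01 gS integrable_indicator_prob[OF M S]
    by (intro integral_mono) (auto simp: indicator_def)
  also have "\<dots> = measure M S" using S by (simp add: sets.Int_space_eq2)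
  finally show ?thesis .
qed

lemma tail_small:
  fixes V :: "'b \<Rightarrow> real \<times> real"
  assumes N: "prob_space N" and V: "V \<in> borel_measurable N" and e: "e > 0"
  shows "\<exists>R>0. measure N {\<omega>\<in>space N. norm (V \<omega>) \<ge> R} \<le> e"
proof -
  interpret prob_space N by (rule N)
  let ?A = "\<lambda>i::nat. {\<omega>\<in>space N. norm (V \<omega>) \<ge> real i}"
  have "(\<lambda>i. measure N (?A i)) \<longlonglongrightarrow> measure N (\<Inter> (range ?A))"
  proof (rule finite_Lim_measure_decseq)
    show "range ?A \<subseteq> sets N" using V by auto
    show "antimono_on UNIV ?A" by (auto simp: monotone_on_def)
  qed
  moreover have "\<Inter> (range ?A) = {}"
  proof safe
    fix \<omega> assume "\<omega> \<in> \<Inter> (range ?A)"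
    then have "norm (V \<omega>) \<ge> real (nat \<lceil>norm (V \<omega>)\<rceil> + 1)" by blast
    then show "\<omega> \<in> {}" by linarith
  qed
  ultimately have "(\<lambda>i. measure N (?A i)) \<longlonglongrightarrow> 0" by simp
  then have "eventually (\<lambda>i. measure N (?A i) < e) sequentially" using e by (rule order_tendstoD)
  then obtain i0 where "\<forall>i\<ge>i0. measure N (?A i) < e" unfolding eventually_sequentially by blast
  then have "measure N (?A (Suc i0)) < e" by (metis le_Suc_eq order_refl)
  then show ?thesis by (intro exI[of _ "real (Suc i0)"]) auto
qed


lemma approx_weak:
  fixes M :: "'a measure" and N :: "'b measure"
    and U :: "nat \<Rightarrow> 'a \<Rightarrow> real \<times> real" and V :: "'b \<Rightarrow> real \<times> real"
    and f :: "real \<times> real \<Rightarrow> real"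
  assumes M: "prob_space M" and N: "prob_space N"
    and U[measurable]: "\<And>n. U n \<in> borel_measurable M" and V[measurable]: "V \<in> borel_measurable N"
    and approx: "\<And>\<epsilon>. \<epsilon> > 0 \<Longrightarrow> \<exists>An A. (\<forall>n. An n \<in> borel_measurable M) \<and> A \<in> borel_measurable N \<and>
      (\<forall>g::real\<times>real \<Rightarrow> real. continuous_on UNIV g \<longrightarrow> bounded (range g) \<longrightarrow>
          (\<lambda>n. \<integral>\<omega>. g (An n \<omega>) \<partial>M) \<longlonglongrightarrow> (\<integral>\<omega>. g (A \<omega>) \<partial>N)) \<and>
      eventually (\<lambda>n. measure M {\<omega>\<in>space M. dist (U n \<omega>) (An n \<omega>) > \<epsilon>} \<le> \<epsilon>) sequentially \<and>
      measure N {\<omega>\<in>space N. dist (V \<omega>) (A \<omega>) > \<epsilon>} \<le> \<epsilon>"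
    and f: "continuous_on UNIV f" "bounded (range f)"
  shows "(\<lambda>n. \<integral>\<omega>. f (U n \<omega>) \<partial>M) \<longlonglongrightarrow> (\<integral>\<omega>. f (V \<omega>) \<partial>N)"
proof (rule tendstoI)
  fix r :: real assume r: "r > 0"
  interpret PM: prob_space M by (rule M)
  interpret PN: prob_space N by (rule N)
  have fm[measurable]: "f \<in> borel_measurable borel" using f(1) by (rule borel_measurable_continuous_onI)
  obtain B0 where B0: "\<forall>p\<in>range f. norm p \<le> B0" using f(2) unfolding bounded_iff by blast
  define B where "B = \<bar>B0\<bar>"
  have B: "\<And>p. \<bar>f p\<bar> \<le> B" "B \<ge> 0"
  proof -
    fix p have "norm (f p) \<le> B0" using B0 rangeI[of f p] by blast
    then show "\<bar>f p\<bar> \<le> B" unfolding B_def by simp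
  qed (simp add: B_def)
  define \<epsilon>0 where "\<epsilon>0 = r / (4 + 12 * B)"
  have e0: "\<epsilon>0 > 0" unfolding \<epsilon>0_def using r B by simp
  obtain R where R: "R > 0" "measure N {\<omega>\<in>space N. norm (V \<omega>) \<ge> R} \<le> \<epsilon>0"
    using tail_small[OF N V e0] by blast
  have "uniformly_continuous_on (cball 0 (R+3)) f"
    using f(1) by (intro compact_uniformly_continuous) (auto intro: continuous_on_subset)
  then obtain \<eta> where \<eta>: "\<eta> > 0" "\<And>p q. p \<in> cball 0 (R+3) \<Longrightarrow> q \<in> cball 0 (R+3) \<Longrightarrow> dist q p < \<eta> \<Longrightarrow> dist (f q) (f p) < \<epsilon>0"
    unfolding uniformly_continuous_on_def using e0 by metis
  have fclose: "\<bar>f p - f q\<bar> \<le> \<epsilon>0" if "norm p \<le> R + 3" "norm q \<le> R + 3" "dist p q < \<eta>" for p q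
    using \<eta>(2)[of q p] that by (simp add: dist_real_def dist_commute)
  define \<epsilon> where "\<epsilon> = min (\<eta>/2) (min \<epsilon>0 (1/2))"
  have eps: "\<epsilon> > 0" "\<epsilon> < \<eta>" "\<epsilon> \<le> \<epsilon>0" "\<epsilon> < 1" unfolding \<epsilon>_def using \<eta> e0 by auto
  obtain An A where An[measurable]: "\<And>n. An n \<in> borel_measurable M" and A[measurable]: "A \<in> borel_measurable N"
    and conv: "\<And>g::real\<times>real \<Rightarrow> real. continuous_on UNIV g \<Longrightarrow> bounded (range g) \<Longrightarrow>
          (\<lambda>n. \<integral>\<omega>. g (An n \<omega>) \<partial>M) \<longlonglongrightarrow> (\<integral>\<omega>. g (A \<omega>) \<partial>N)"
    and evU: "eventually (\<lambda>n. measure M {\<omega>\<in>space M. dist (U n \<omega>) (An n \<omega>) > \<epsilon>} \<le> \<epsilon>) sequentially"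
    and VA: "measure N {\<omega>\<in>space N. dist (V \<omega>) (A \<omega>) > \<epsilon>} \<le> \<epsilon>"
    using approx[OF eps(1)] by blast
  define SN where "SN = {\<omega>\<in>space N. norm (V \<omega>) \<ge> R} \<union> {\<omega>\<in>space N. dist (V \<omega>) (A \<omega>) > \<epsilon>}"
  have SN[measurable]: "SN \<in> sets N" unfolding SN_def by measurable
  have mSN: "measure N SN \<le> 2 * \<epsilon>0"
  proof -
    have "measure N SN \<le> measure N {\<omega>\<in>space N. norm (V \<omega>) \<ge> R} + measure N {\<omega>\<in>space N. dist (V \<omega>) (A \<omega>) > \<epsilon>}"
      unfolding SN_def by (intro measure_Un_le) measurable
    then show ?thesis using R VA eps by linarith
  qed
  have a: "\<bar>(\<integral>\<omega>. f (V \<omega>) \<partial>N) - (\<integral>\<omega>. f (A \<omega>) \<partial>N)\<bar> \<le> \<epsilon>0 + 2 * B * measure N SN"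
  proof (rule int_diff_le[OF N _ _ _ _ SN])
    show "\<forall>\<omega>\<in>space N - SN. \<bar>f (V \<omega>) - f (A \<omega>)\<bar> \<le> \<epsilon>0"
    proof
      fix \<omega> assume \<omega>: "\<omega> \<in> space N - SN"
      then have nV: "norm (V \<omega>) < R" and dVA: "dist (V \<omega>) (A \<omega>) \<le> \<epsilon>" unfolding SN_def by auto
      have "norm (A \<omega>) \<le> norm (V \<omega>) + dist (V \<omega>) (A \<omega>)"
        by (metis dist_norm norm_minus_commute norm_triangle_sub add.commute)
      then show "\<bar>f (V \<omega>) - f (A \<omega>)\<bar> \<le> \<epsilon>0" using nV dVA eps by (intro fclose) auto
    qed
  qed (use B e0 in auto)
  define \<psi> where "\<psi> p = max 0 (min 1 (norm p - (R + 1)))" for p :: "real \<times> real"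
  have \<psi>c: "continuous_on UNIV \<psi>" unfolding \<psi>_def by (intro continuous_intros)
  have \<psi>m[measurable]: "\<psi> \<in> borel_measurable borel" using \<psi>c by (rule borel_measurable_continuous_onI)
  have \<psi>b: "bounded (range \<psi>)" unfolding \<psi>_def bounded_iff by (intro exI[of _ 1]) auto
  have lim\<psi>: "(\<integral>\<omega>. \<psi> (A \<omega>) \<partial>N) \<le> 2 * \<epsilon>0"
  proof -
    have "(\<integral>\<omega>. \<psi> (A \<omega>) \<partial>N) \<le> measure N SN"
    proof (rule int_le_prob[OF N _ SN])
      show "\<forall>\<omega>\<in>space N. 0 \<le> \<psi> (A \<omega>) \<and> \<psi> (A \<omega>) \<le> 1" unfolding \<psi>_def by auto
      show "\<forall>\<omega>\<in>space N - SN. \<psi> (A \<omega>) = 0"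
      proof
        fix \<omega> assume \<omega>: "\<omega> \<in> space N - SN"
        then have nV: "norm (V \<omega>) < R" and dVA: "dist (V \<omega>) (A \<omega>) \<le> \<epsilon>" unfolding SN_def by auto
        have "norm (A \<omega>) \<le> norm (V \<omega>) + dist (V \<omega>) (A \<omega>)"
          by (metis dist_norm norm_minus_commute norm_triangle_sub add.commute)
        then show "\<psi> (A \<omega>) = 0" unfolding \<psi>_def using nV dVA eps by auto
      qed
    qed measurable
    then show ?thesis using mSN by linarith
  qed
  have ev1: "eventually (\<lambda>n. (\<integral>\<omega>. \<psi> (An n \<omega>) \<partial>M) < 3 * \<epsilon>0) sequentially"
    using conv[OF \<psi>c \<psi>b] lim\<psi> e0 by (intro order_tendstoD(2)) auto
  have ev2: "eventually (\<lambda>n. dist (\<integral>\<omega>. f (An n \<omega>) \<partial>M) (\<integral>\<omega>. f (A \<omega>) \<partial>N) < \<epsilon>0) sequentially"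
    using conv[OF f] e0 by (rule tendstoD)
  show "eventually (\<lambda>n. dist (\<integral>\<omega>. f (U n \<omega>) \<partial>M) (\<integral>\<omega>. f (V \<omega>) \<partial>N) < r) sequentially"
    using ev1 ev2 evU
  proof eventually_elim
    case (elim n)
    define SM where "SM = {\<omega>\<in>space M. dist (U n \<omega>) (An n \<omega>) > \<epsilon>} \<union> {\<omega>\<in>space M. norm (An n \<omega>) \<ge> R + 2}"
    have SM[measurable]: "SM \<in> sets M" unfolding SM_def by measurable
    have m2: "measure M {\<omega>\<in>space M. norm (An n \<omega>) \<ge> R + 2} \<le> (\<integral>\<omega>. \<psi> (An n \<omega>) \<partial>M)"
    proof (rule prob_le_int[OF M])
      show "\<forall>\<omega>\<in>space M. 0 \<le> \<psi> (An n \<omega>) \<and> \<psi> (An n \<omega>) \<le> 1" unfolding \<psi>_def by auto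
      show "\<forall>\<omega>\<in>{\<omega> \<in> space M. R + 2 \<le> norm (An n \<omega>)}. 1 \<le> \<psi> (An n \<omega>)" unfolding \<psi>_def by auto
    qed measurable
    have mSM: "measure M SM \<le> 4 * \<epsilon>0"
    proof -
      have "measure M SM \<le> measure M {\<omega>\<in>space M. dist (U n \<omega>) (An n \<omega>) > \<epsilon>} + measure M {\<omega>\<in>space M. norm (An n \<omega>) \<ge> R + 2}"
        unfolding SM_def by (intro measure_Un_le) measurable
      then show ?thesis using elim m2 eps by linarith
    qed
    have c: "\<bar>(\<integral>\<omega>. f (U n \<omega>) \<partial>M) - (\<integral>\<omega>. f (An n \<omega>) \<partial>M)\<bar> \<le> \<epsilon>0 + 2 * B * measure M SM"
    proof (rule int_diff_le[OF M _ _ _ _ SM])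
      show "\<forall>\<omega>\<in>space M - SM. \<bar>f (U n \<omega>) - f (An n \<omega>)\<bar> \<le> \<epsilon>0"
      proof
        fix \<omega> assume \<omega>: "\<omega> \<in> space M - SM"
        then have nA: "norm (An n \<omega>) < R + 2" and dUA: "dist (U n \<omega>) (An n \<omega>) \<le> \<epsilon>" unfolding SM_def by auto
        have "norm (U n \<omega>) \<le> norm (An n \<omega>) + dist (U n \<omega>) (An n \<omega>)"
          by (metis dist_norm norm_triangle_sub add.commute)
        then show "\<bar>f (U n \<omega>) - f (An n \<omega>)\<bar> \<le> \<epsilon>0" using nA dUA eps by (intro fclose) auto
      qed
    qed (use B e0 in auto)
    have "dist (\<integral>\<omega>. f (U n \<omega>) \<partial>M) (\<integral>\<omega>. f (V \<omega>) \<partial>N)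
        \<le> \<bar>(\<integral>\<omega>. f (U n \<omega>) \<partial>M) - (\<integral>\<omega>. f (An n \<omega>) \<partial>M)\<bar>
          + dist (\<integral>\<omega>. f (An n \<omega>) \<partial>M) (\<integral>\<omega>. f (A \<omega>) \<partial>N)
          + \<bar>(\<integral>\<omega>. f (V \<omega>) \<partial>N) - (\<integral>\<omega>. f (A \<omega>) \<partial>N)\<bar>"
      unfolding dist_real_def by linarith
    also have "\<dots> \<le> (\<epsilon>0 + 2 * B * (4 * \<epsilon>0)) + \<epsilon>0 + (\<epsilon>0 + 2 * B * (2 * \<epsilon>0))"
      using c elim a mSN mSM B(2) by (smt (verit, best) mult_left_mono)
    also have "\<dots> = (3 + 12 * B) * \<epsilon>0" by (simp add: algebra_simps)
    also have "\<dots> < r"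
    proof -
      have "(3 + 12 * B) * \<epsilon>0 < (4 + 12 * B) * \<epsilon>0" using e0 by simp
      also have "\<dots> = r" unfolding \<epsilon>0_def using B by simp
      finally show ?thesis .
    qed
    finally show ?case .
  qed
qed


definition jcont :: "((real \<Rightarrow> real) \<Rightarrow> real) \<Rightarrow> bool" where
  "jcont H \<longleftrightarrow> (\<forall>x\<in>cadlag01. \<forall>e>0. \<exists>d>0. \<forall>y\<in>cadlag01. skorokhod_dist x y < d \<longrightarrow> \<bar>H x - H y\<bar> < e)"

lemma jcont_supF: "continuous_on UNIV \<Phi> \<Longrightarrow> jcont (supF \<Phi>)"
  unfolding jcont_def using supF_cont by blast

lemma jcont_comp2:
  fixes g :: "real \<times> real \<Rightarrow> real"
  assumes H1: "jcont H1" and H2: "jcont H2" and g: "continuous_on UNIV g"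
  shows "jcont (\<lambda>x. g (H1 x, H2 x))"
  unfolding jcont_def
proof (intro ballI allI impI)
  fix x :: "real \<Rightarrow> real" and e :: real assume x: "x \<in> cadlag01" and e: "e > 0"
  obtain \<eta> where \<eta>: "\<eta> > 0" "\<And>q. dist q (H1 x, H2 x) < \<eta> \<Longrightarrow> dist (g q) (g (H1 x, H2 x)) < e"
    using g e unfolding continuous_on_iff by (metis UNIV_I)
  obtain d1 where d1: "d1 > 0" "\<And>y. y \<in> cadlag01 \<Longrightarrow> skorokhod_dist x y < d1 \<Longrightarrow> \<bar>H1 x - H1 y\<bar> < \<eta>/2"
    using H1 x \<eta>(1) unfolding jcont_def by (meson half_gt_zero)
  obtain d2 where d2: "d2 > 0" "\<And>y. y \<in> cadlag01 \<Longrightarrow> skorokhod_dist x y < d2 \<Longrightarrow> \<bar>H2 x - H2 y\<bar> < \<eta>/2"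
    using H2 x \<eta>(1) unfolding jcont_def by (meson half_gt_zero)
  show "\<exists>d>0. \<forall>y\<in>cadlag01. skorokhod_dist x y < d \<longrightarrow> \<bar>g (H1 x, H2 x) - g (H1 y, H2 y)\<bar> < e"
  proof (intro exI[of _ "min d1 d2"] conjI ballI impI)
    show "min d1 d2 > 0" using d1 d2 by simp
    fix y assume y: "y \<in> cadlag01" "skorokhod_dist x y < min d1 d2"
    have "dist (H1 y, H2 y) (H1 x, H2 x) \<le> dist (H1 y) (H1 x) + dist (H2 y) (H2 x)" by (rule dist_Pair_le)
    also have "\<dots> < \<eta>/2 + \<eta>/2" using d1(2)[OF y(1)] d2(2)[OF y(1)] y(2)
      by (intro add_strict_mono) (auto simp: dist_real_def abs_minus_commute)
    finally have "dist (g (H1 y, H2 y)) (g (H1 x, H2 x)) < e" using \<eta>(2) by simp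
    then show "\<bar>g (H1 x, H2 x) - g (H1 y, H2 y)\<bar> < e" by (simp add: dist_real_def abs_minus_commute)
  qed
qed

lemma bcw_comp2:
  fixes g :: "real \<times> real \<Rightarrow> real"
  assumes "jcont H1" "jcont H2" "continuous_on UNIV g" "bounded (range g)"
  shows "bounded_continuous_wrt skorokhod_dist cadlag01 (\<lambda>x. g (H1 x, H2 x))"
proof -
  obtain B where "\<forall>p\<in>range g. norm p \<le> B" using assms(4) unfolding bounded_iff by blast
  then have "\<forall>x\<in>cadlag01. \<bar>g (H1 x, H2 x)\<bar> \<le> B" by auto
  then show ?thesis using jcont_comp2[OF assms(1-3)] unfolding bounded_continuous_wrt_def jcont_def by blast
qed

lemma fclt_apply:
  fixes g :: "real \<times> real \<Rightarrow> real"
  assumes F: "conv_distr_wrt skorokhod_dist cadlag01 M Xs N X"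
    and H: "jcont H1" "jcont H2" and g: "continuous_on UNIV g" "bounded (range g)"
    and m1: "\<And>n. (\<lambda>\<omega>. H1 (Xs n \<omega>)) \<in> borel_measurable M" "\<And>n. (\<lambda>\<omega>. H2 (Xs n \<omega>)) \<in> borel_measurable M"
    and m2: "(\<lambda>\<omega>. H1 (X \<omega>)) \<in> borel_measurable N" "(\<lambda>\<omega>. H2 (X \<omega>)) \<in> borel_measurable N"
  shows "(\<lambda>n. \<integral>\<omega>. g (H1 (Xs n \<omega>), H2 (Xs n \<omega>)) \<partial>M) \<longlonglongrightarrow> (\<integral>\<omega>. g (H1 (X \<omega>), H2 (X \<omega>)) \<partial>N)"
proof -
  have gm: "g \<in> borel_measurable borel" using g(1) by (rule borel_measurable_continuous_onI)
  have "(\<lambda>\<omega>. g (H1 (Xs n \<omega>), H2 (Xs n \<omega>))) \<in> borel_measurable M" for n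
    using m1 by (intro measurable_compose[OF _ gm] borel_measurable_Pair) auto
  moreover have "(\<lambda>\<omega>. g (H1 (X \<omega>), H2 (X \<omega>))) \<in> borel_measurable N"
    using m2 by (intro measurable_compose[OF _ gm] borel_measurable_Pair) auto
  ultimately show ?thesis
    using F bcw_comp2[OF H g] unfolding conv_distr_wrt_def by blast
qed

lemma Err_nonneg:
  assumes "pathsetup \<theta> \<delta> x" shows "Err \<theta> \<delta> x \<ge> 0"
proof -
  interpret pathsetup \<theta> \<delta> x by fact
  show ?thesis unfolding Err_def using osc_nonneg nrm_nonneg d min_le by auto
qed

lemma Err_small:
  assumes th: "0 < \<theta>" "\<theta> < 1" and x: "continuous_on {0..1} x" and e: "e > 0"
  shows "\<exists>\<delta>1>0. \<forall>\<delta>. 0 < \<delta> \<and> \<delta> \<le> \<delta>1 \<longrightarrow> Err \<theta> \<delta> x \<le> e"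
proof -
  define m where "m = min \<theta> (1-\<theta>)"
  have m: "m > 0" unfolding m_def using th by simp
  define e' where "e' = e * m^4 / 400"
  have e': "e' > 0" unfolding e'_def using e m by simp
  have xc: "x \<in> cadlag01" by (rule cont_cadlag[OF x])
  have "uniformly_continuous_on {0..1} x" using x by (intro compact_uniformly_continuous) auto
  then obtain \<eta> where \<eta>: "\<eta> > 0" "\<And>u v. u \<in> {0..1} \<Longrightarrow> v \<in> {0..1} \<Longrightarrow> dist v u < \<eta> \<Longrightarrow> dist (x v) (x u) < e'"
    unfolding uniformly_continuous_on_def using e' by metis
  obtain Bx where Bx: "\<forall>t\<in>{0..1}. \<bar>x t\<bar> \<le> Bx" using cadlag_bounded[OF xc] by blast
  define \<delta>1 where "\<delta>1 = min (min (\<theta>/8) ((1-\<theta>)/8)) (min (\<eta>/8) (e' / (\<bar>Nrm x\<bar> + 1)))"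
  have d1: "\<delta>1 > 0" unfolding \<delta>1_def using th \<eta> e' by (simp add: add_pos_nonneg)
  show ?thesis
  proof (intro exI[of _ \<delta>1] conjI allI impI)
    show "\<delta>1 > 0" by (rule d1)
    fix \<delta> assume d: "0 < \<delta> \<and> \<delta> \<le> \<delta>1"
    have osc: "Osc \<theta> \<delta> x \<le> e'" unfolding Osc_def
    proof (rule supF_least)
      fix u v :: real assume u: "u \<in> {0..1}" and v: "v \<in> {0..1}"
      show "PhiOsc \<theta> \<delta> (u, v, x u, x v, x 1) \<le> e'"
      proof (cases "\<bar>u - \<theta>\<bar> < 4 * \<delta> \<and> \<bar>v - \<theta>\<bar> < 4 * \<delta>")
        case True
        then have "dist v u < \<eta>" using d unfolding \<delta>1_def dist_real_def by auto
        then have "\<bar>x u - x v\<bar> < e'" using \<eta>(2)[OF u v] by (simp add: dist_real_def abs_minus_commute)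
        moreover have "PhiOsc \<theta> \<delta> (u, v, x u, x v, x 1) \<le> \<bar>x u - x v\<bar>"
          unfolding PhiOsc_def phiw_def fst_conv snd_conv by (rule weights_le) simp
        ultimately show ?thesis by simp
      next
        case False
        then have "phiw \<theta> \<delta> 4 u = 0 \<or> phiw \<theta> \<delta> 4 v = 0"
          unfolding phiw_def using d by (auto intro!: clampr_0 simp: field_simps)
        then have "PhiOsc \<theta> \<delta> (u, v, x u, x v, x 1) = 0" unfolding PhiOsc_def by auto
        then show ?thesis using e' by simp
      qed
    qed
    have nrm: "\<delta> * Nrm x \<le> e'"
    proof -
      have "\<delta> * Nrm x \<le> \<delta> * (\<bar>Nrm x\<bar> + 1)" using d by (intro mult_left_mono) auto
      also have "\<dots> \<le> e' / (\<bar>Nrm x\<bar> + 1) * (\<bar>Nrm x\<bar> + 1)"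
        using d unfolding \<delta>1_def by (intro mult_right_mono) auto
      also have "\<dots> = e'" by (simp add: add_pos_nonneg)
      finally show ?thesis .
    qed
    have "Err \<theta> \<delta> x \<le> 200 / m^4 * (e' + e')"
      unfolding Err_def m_def[symmetric] using osc nrm m by (intro mult_left_mono) auto
    also have "\<dots> = e" unfolding e'_def using m by (simp add: field_simps)
    finally show "Err \<theta> \<delta> x \<le> e" .
  qed
qed


lemma measurable_Max_insert:
  fixes g :: "nat \<Rightarrow> 'a \<Rightarrow> real"
  assumes K: "finite K" and g: "\<And>k. k \<in> K \<Longrightarrow> g k \<in> borel_measurable M"
  shows "(\<lambda>\<omega>. Max (insert c ((\<lambda>k. g k \<omega>) ` K))) \<in> borel_measurable M"
  using K g
proof (induction K rule: finite_induct)
  case empty then show ?case by simp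
next
  case (insert a K)
  have "(\<lambda>\<omega>. Max (insert c ((\<lambda>k. g k \<omega>) ` insert a K))) = (\<lambda>\<omega>. max (g a \<omega>) (Max (insert c ((\<lambda>k. g k \<omega>) ` K))))"
  proof
    fix \<omega>
    have e: "insert c ((\<lambda>k. g k \<omega>) ` insert a K) = insert (g a \<omega>) (insert c ((\<lambda>k. g k \<omega>) ` K))" by auto
    show "Max (insert c ((\<lambda>k. g k \<omega>) ` insert a K)) = max (g a \<omega>) (Max (insert c ((\<lambda>k. g k \<omega>) ` K)))"
      unfolding e using insert.hyps by (subst Max_insert) auto
  qed
  then show ?case using insert by (simp add: borel_measurable_max)
qed

lemma measurable_Max_image:
  fixes g :: "nat \<Rightarrow> 'a \<Rightarrow> real"
  assumes K: "finite K" "K \<noteq> {}" and g: "\<And>k. k \<in> K \<Longrightarrow> g k \<in> borel_measurable M"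
  shows "(\<lambda>\<omega>. Max ((\<lambda>k. g k \<omega>) ` K)) \<in> borel_measurable M"
  using K g
proof (induction K rule: finite_ne_induct)
  case (singleton x) then show ?case by simp
next
  case (insert a K)
  have "(\<lambda>\<omega>. Max ((\<lambda>k. g k \<omega>) ` insert a K)) = (\<lambda>\<omega>. max (g a \<omega>) (Max ((\<lambda>k. g k \<omega>) ` K)))"
    using insert.hyps by simp
  then show ?case using insert by (simp add: borel_measurable_max)
qed

lemma khat_range:
  assumes "n \<ge> 1" shows "1 \<le> khat n x \<and> khat n x \<le> n"
proof -
  have "Max (cusum n x ` {1..n}) \<in> cusum n x ` {1..n}" using assms by (intro Max_in) auto
  then obtain k where "k \<in> {1..n}" "cusum n x k = Max (cusum n x ` {1..n})" by auto
  then have "\<exists>k. 1 \<le> k \<and> k \<le> n \<and> cusum n x k = Max (cusum n x ` {1..n})" by auto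
  then show ?thesis unfolding khat_def by (rule LeastI2_ex) auto
qed

lemma khat_measurable:
  fixes X :: "'a \<Rightarrow> nat \<Rightarrow> real"
  assumes X: "\<And>j. (\<lambda>\<omega>. X \<omega> j) \<in> borel_measurable M"
  shows "(\<lambda>\<omega>. khat n (X \<omega>)) \<in> measurable M (count_space UNIV)"
proof -
  have cm: "(\<lambda>\<omega>. cusum n (X \<omega>) k) \<in> borel_measurable M" for k
    unfolding cusum_def using X by measurable
  have mm: "(\<lambda>\<omega>. Max (cusum n (X \<omega>) ` {1..n})) \<in> borel_measurable M"
  proof (cases "n = 0")
    case True then show ?thesis by simp
  next
    case False
    then show ?thesis using cm by (intro measurable_Max_image) auto
  qed
  have "(\<lambda>\<omega>. LEAST k. 1 \<le> k \<and> k \<le> n \<and> cusum n (X \<omega>) k = Max (cusum n (X \<omega>) ` {1..n})) \<in> measurable M (count_space UNIV)"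
  proof (rule measurable_Least)
    fix k
    have "Measurable.pred M (\<lambda>\<omega>. cusum n (X \<omega>) k = Max (cusum n (X \<omega>) ` {1..n}))"
      using cm mm by measurable
    then show "(\<lambda>\<omega>. 1 \<le> k \<and> k \<le> n \<and> cusum n (X \<omega>) k = Max (cusum n (X \<omega>) ` {1..n})) \<in> measurable M (count_space UNIV)"
      by measurable
  qed
  then show ?thesis unfolding khat_def .
qed

lemma Ta_measurable:
  fixes Y :: "nat \<Rightarrow> 'a \<Rightarrow> real"
  assumes Y: "\<And>j. Y j \<in> borel_measurable M"
  shows "(\<lambda>\<omega>. Ta n (\<lambda>i. Y i \<omega>) kh) \<in> borel_measurable M"
  unfolding Ta_def
  by (intro borel_measurable_divide measurable_Max_insert borel_measurable_const) (use Y in measurable)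

lemma Tb_measurable:
  fixes Y :: "nat \<Rightarrow> 'a \<Rightarrow> real"
  assumes Y: "\<And>j. Y j \<in> borel_measurable M"
  shows "(\<lambda>\<omega>. Tb n (\<lambda>i. Y i \<omega>) kh) \<in> borel_measurable M"
  unfolding Tb_def
  by (intro borel_measurable_divide measurable_Max_insert borel_measurable_const) (use Y in measurable)

lemma U_measurable:
  fixes Y :: "nat \<Rightarrow> 'a \<Rightarrow> real" and X :: "'a \<Rightarrow> nat \<Rightarrow> real"
  assumes Y: "\<And>j. Y j \<in> borel_measurable M" and X: "\<And>j. (\<lambda>\<omega>. X \<omega> j) \<in> borel_measurable M"
  shows "(\<lambda>\<omega>. (Ta n (\<lambda>i. Y i \<omega>) (khat n (X \<omega>)), Tb n (\<lambda>i. Y i \<omega>) (khat n (X \<omega>)))) \<in> borel_measurable M"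
proof (rule measurable_compose_countable'[where I=UNIV and g="\<lambda>\<omega>. khat n (X \<omega>)"])
  fix kh :: nat
  show "(\<lambda>\<omega>. (Ta n (\<lambda>i. Y i \<omega>) kh, Tb n (\<lambda>i. Y i \<omega>) kh)) \<in> borel_measurable M"
    using Ta_measurable[OF Y] Tb_measurable[OF Y] by (intro borel_measurable_Pair)
qed (use khat_measurable[OF X] in auto)

lemma Qpath_measurable:
  fixes Y :: "nat \<Rightarrow> 'a \<Rightarrow> real"
  assumes Y: "\<And>j. Y j \<in> borel_measurable M"
  shows "(\<lambda>\<omega>. Qpath n (\<lambda>j. Y j \<omega>) t) \<in> borel_measurable M"
  unfolding Qpath_def using Y by measurable


locale mainsetup =
  fixes M :: "'a measure" and Y :: "nat \<Rightarrow> 'a \<Rightarrow> real"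
    and N :: "'b measure" and W :: "real \<Rightarrow> 'b \<Rightarrow> real"
    and \<sigma> \<mu> \<theta> :: real and \<Delta> :: "nat \<Rightarrow> real"
  assumes M: "prob_space M"
    and Y_rv: "\<And>i. Y i \<in> borel_measurable M"
    and \<sigma>_pos: "\<sigma> > 0"
    and W: "wiener_process N W"
    and FCLT: "conv_distr_wrt skorokhod_dist cadlag01 M
                 (\<lambda>n \<omega> t. (\<Sum>j\<in>{1..nat \<lfloor>real n * t\<rfloor>}. Y j \<omega>) / sqrt (real n))
                 N (\<lambda>\<omega> t. \<sigma> * W t \<omega>)"
    and \<theta>: "0 < \<theta>" "\<theta> < 1"
    and consistent: "\<And>\<epsilon>. \<epsilon> > 0 \<Longrightarrow>
          (\<lambda>n. measure M {\<omega>\<in>space M.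
             \<bar>real (khat n (\<lambda>i. \<mu> + (if i \<le> nat \<lfloor>real n * \<theta>\<rfloor> then 0 else \<Delta> n) + Y i \<omega>))
                / real n - \<theta>\<bar> > \<epsilon>}) \<longlonglongrightarrow> 0"
begin

definition "Xn n \<omega> = Qpath n (\<lambda>j. Y j \<omega>)"
definition "XN \<omega> = (\<lambda>t. \<sigma> * W t \<omega>)"
definition "xv n \<omega> = (\<lambda>i. \<mu> + (if i \<le> nat \<lfloor>real n * \<theta>\<rfloor> then 0 else \<Delta> n) + Y i \<omega>)"
definition "kh n \<omega> = khat n (xv n \<omega>)"
definition "U n \<omega> = (Ta n (\<lambda>i. Y i \<omega>) (kh n \<omega>), Tb n (\<lambda>i. Y i \<omega>) (kh n \<omega>))"
definition "V \<omega> = (aS (XN \<omega>) \<theta> / sqrt \<theta>, aS (prev (XN \<omega>)) (1-\<theta>) / sqrt (1-\<theta>))"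
definition "Hp \<delta> x = (Ha \<theta> \<delta> x, Hb \<theta> \<delta> x)"
definition "dmax = min (\<theta>/8) ((1-\<theta>)/8)"

lemma dmax_pos: "dmax > 0" unfolding dmax_def using \<theta> by simp

lemma N: "prob_space N" using W unfolding wiener_process_def by auto

lemma FCLT': "conv_distr_wrt skorokhod_dist cadlag01 M Xn N XN"
proof -
  have "(\<lambda>n \<omega> t. (\<Sum>j\<in>{1..nat \<lfloor>real n * t\<rfloor>}. Y j \<omega>) / sqrt (real n)) = Xn"
    unfolding Xn_def Qpath_def by (intro ext) simp
  moreover have "(\<lambda>\<omega> t. \<sigma> * W t \<omega>) = XN" unfolding XN_def by (intro ext) simp
  ultimately show ?thesis using FCLT by simp
qed

lemma XN_cont: "\<omega> \<in> space N \<Longrightarrow> continuous_on {0..1} (XN \<omega>)"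
  using W unfolding wiener_process_def XN_def by (auto intro: continuous_intros)

lemma XN_cadlag: "\<omega> \<in> space N \<Longrightarrow> XN \<omega> \<in> cadlag01"
  using XN_cont cont_cadlag by blast

lemma XN_meas: "t \<in> {0..1} \<Longrightarrow> (\<lambda>\<omega>. XN \<omega> t) \<in> borel_measurable N"
proof -
  assume t: "t \<in> {0..1}"
  then have "W t \<in> borel_measurable N" using W unfolding wiener_process_def by auto
  then show ?thesis unfolding XN_def by (intro borel_measurable_times) auto
qed

lemma Xn_cadlag: "Xn n \<omega> \<in> cadlag01" unfolding Xn_def by (rule Qpath_cadlag)

lemma Xn_meas: "(\<lambda>\<omega>. Xn n \<omega> t) \<in> borel_measurable M"
  unfolding Xn_def using Y_rv by (rule Qpath_measurable)

lemma supF_XN_meas: "continuous_on UNIV \<Phi> \<Longrightarrow> (\<lambda>\<omega>. supF \<Phi> (XN \<omega>)) \<in> borel_measurable N"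
  by (rule supF_measurable[OF _ XN_cadlag XN_meas])

lemma supF_Xn_meas: "continuous_on UNIV \<Phi> \<Longrightarrow> (\<lambda>\<omega>. supF \<Phi> (Xn n \<omega>)) \<in> borel_measurable M"
  by (rule supF_measurable[OF _ Xn_cadlag Xn_meas])

lemma Phis_cont:
  assumes "\<delta> > 0"
  shows "continuous_on UNIV (Phi0 \<theta> \<delta>)" "continuous_on UNIV (PhiRev (Phi0 (1-\<theta>) \<delta>))"
    "continuous_on UNIV (PhiOsc \<theta> \<delta>)" "continuous_on UNIV PhiN"
  using assms \<theta> by (auto intro!: Phi0_cont PhiRev_cont PhiOsc_cont PhiN_cont)

lemma H_meas:
  assumes d: "\<delta> > 0"
  shows "(\<lambda>\<omega>. Ha \<theta> \<delta> (XN \<omega>)) \<in> borel_measurable N" "(\<lambda>\<omega>. Hb \<theta> \<delta> (XN \<omega>)) \<in> borel_measurable N"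
    "(\<lambda>\<omega>. Err \<theta> \<delta> (XN \<omega>)) \<in> borel_measurable N"
    "(\<lambda>\<omega>. Ha \<theta> \<delta> (Xn n \<omega>)) \<in> borel_measurable M" "(\<lambda>\<omega>. Hb \<theta> \<delta> (Xn n \<omega>)) \<in> borel_measurable M"
    "(\<lambda>\<omega>. Err \<theta> \<delta> (Xn n \<omega>)) \<in> borel_measurable M"
  unfolding Ha_def Hb_def Err_def Osc_def Nrm_def
  using supF_XN_meas[OF Phis_cont(1)[OF d]] supF_XN_meas[OF Phis_cont(2)[OF d]]
    supF_XN_meas[OF Phis_cont(3)[OF d]] supF_XN_meas[OF Phis_cont(4)[OF d]]
    supF_Xn_meas[OF Phis_cont(1)[OF d]] supF_Xn_meas[OF Phis_cont(2)[OF d]]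
    supF_Xn_meas[OF Phis_cont(3)[OF d]] supF_Xn_meas[OF Phis_cont(4)[OF d]]
  by (auto intro!: borel_measurable_divide borel_measurable_times borel_measurable_add)

lemma H_jcont:
  assumes d: "\<delta> > 0"
  shows "jcont (Ha \<theta> \<delta>)" "jcont (Hb \<theta> \<delta>)" "jcont (Err \<theta> \<delta>)"
proof -
  have "jcont (\<lambda>x. (\<lambda>p. fst p / sqrt \<theta>) (supF (Phi0 \<theta> \<delta>) x, supF (Phi0 \<theta> \<delta>) x))"
    by (intro jcont_comp2 jcont_supF Phis_cont[OF d] continuous_intros) (use \<theta> in auto)
  then show "jcont (Ha \<theta> \<delta>)" unfolding Ha_def by simp
  have "jcont (\<lambda>x. (\<lambda>p. fst p / sqrt (1-\<theta>)) (supF (PhiRev (Phi0 (1-\<theta>) \<delta>)) x, supF (PhiRev (Phi0 (1-\<theta>) \<delta>)) x))"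
    by (intro jcont_comp2 jcont_supF Phis_cont[OF d] continuous_intros) (use \<theta> in auto)
  then show "jcont (Hb \<theta> \<delta>)" unfolding Hb_def by simp
  have "jcont (\<lambda>x. (\<lambda>p. 200 / (min \<theta> (1-\<theta>))^4 * (fst p + \<delta> * snd p)) (supF (PhiOsc \<theta> \<delta>) x, supF PhiN x))"
    by (intro jcont_comp2 jcont_supF Phis_cont[OF d] continuous_intros) (use \<theta> in auto)
  then show "jcont (Err \<theta> \<delta>)" unfolding Err_def Osc_def Nrm_def by simp
qed

lemma ps: "0 < \<delta> \<Longrightarrow> \<delta> \<le> dmax \<Longrightarrow> x \<in> cadlag01 \<Longrightarrow> pathsetup \<theta> \<delta> x"
  unfolding dmax_def by unfold_locales (use \<theta> in auto)

lemma boundN: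
  assumes d: "0 < \<delta>" "\<delta> \<le> dmax" and \<omega>: "\<omega> \<in> space N"
  shows "dist (V \<omega>) (Hp \<delta> (XN \<omega>)) \<le> 2 * Err \<theta> \<delta> (XN \<omega>)"
proof -
  interpret pathsetup \<theta> \<delta> "XN \<omega>" by (rule ps[OF d XN_cadlag[OF \<omega>]])
  have "dist (V \<omega>) (Hp \<delta> (XN \<omega>)) \<le> dist (aS (XN \<omega>) \<theta> / sqrt \<theta>) (Ha \<theta> \<delta> (XN \<omega>))
      + dist (aS (prev (XN \<omega>)) (1-\<theta>) / sqrt (1-\<theta>)) (Hb \<theta> \<delta> (XN \<omega>))"
    unfolding V_def Hp_def by (rule dist_Pair_le)
  then show ?thesis using G_bound_a G_bound_b by (simp add: dist_real_def)
qed

lemma boundM: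
  assumes d: "0 < \<delta>" "\<delta> \<le> dmax" and n: "n \<ge> 1" "1 / real n \<le> \<delta>"
    and k: "\<bar>real (kh n \<omega>) / real n - \<theta>\<bar> \<le> \<delta>"
  shows "dist (U n \<omega>) (Hp \<delta> (Xn n \<omega>)) \<le> 2 * Err \<theta> \<delta> (Xn n \<omega>)"
proof -
  have kr: "1 \<le> kh n \<omega>" "kh n \<omega> \<le> n" using khat_range[OF n(1)] unfolding kh_def by auto
  have dd: "\<delta> \<le> \<theta>/8" "\<delta> \<le> (1-\<theta>)/8" using d unfolding dmax_def by auto
  have "dist (U n \<omega>) (Hp \<delta> (Xn n \<omega>)) \<le> dist (Ta n (\<lambda>i. Y i \<omega>) (kh n \<omega>)) (Ha \<theta> \<delta> (Xn n \<omega>))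
      + dist (Tb n (\<lambda>i. Y i \<omega>) (kh n \<omega>)) (Hb \<theta> \<delta> (Xn n \<omega>))"
    unfolding U_def Hp_def by (rule dist_Pair_le)
  then show ?thesis
    using T_bound_a[OF \<theta> d(1) dd kr k n(2), where y="\<lambda>i. Y i \<omega>"] T_bound_b[OF \<theta> d(1) dd kr k n(2), where y="\<lambda>i. Y i \<omega>"]
    unfolding Xn_def by (simp add: dist_real_def)
qed

lemma Err_lim:
  assumes \<omega>: "\<omega> \<in> space N"
  shows "(\<lambda>i. Err \<theta> (dmax / (real i + 1)) (XN \<omega>)) \<longlonglongrightarrow> 0"
proof (rule tendstoI)
  fix e :: real assume e: "e > 0"
  obtain \<delta>1 where d1: "\<delta>1 > 0" "\<And>\<delta>. 0 < \<delta> \<and> \<delta> \<le> \<delta>1 \<Longrightarrow> Err \<theta> \<delta> (XN \<omega>) \<le> e/2"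
    using Err_small[OF \<theta> XN_cont[OF \<omega>], of "e/2"] e by auto
  obtain i0 :: nat where i0: "dmax / \<delta>1 < real i0" using reals_Archimedean2 by blast
  show "eventually (\<lambda>i. dist (Err \<theta> (dmax / (real i + 1)) (XN \<omega>)) 0 < e) sequentially"
    unfolding eventually_sequentially
  proof (intro exI allI impI)
    fix i assume i: "i \<ge> i0"
    have pos: "0 < dmax / (real i + 1)" using dmax_pos by simp
    have "dmax / (real i + 1) \<le> \<delta>1"
    proof -
      have "dmax < \<delta>1 * real i0" using i0 d1 by (simp add: field_simps)
      also have "\<dots> \<le> \<delta>1 * (real i + 1)" using i d1 by (intro mult_left_mono) auto
      finally show ?thesis using d1 by (simp add: field_simps)
    qed
    then have "Err \<theta> (dmax / (real i + 1)) (XN \<omega>) \<le> e/2" using d1(2) pos by blast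
    moreover have "Err \<theta> (dmax / (real i + 1)) (XN \<omega>) \<ge> 0"
    proof (rule Err_nonneg, rule ps)
      show "dmax / (real i + 1) \<le> dmax" using dmax_pos by (simp add: field_simps)
    qed (use pos XN_cadlag[OF \<omega>] in auto)
    ultimately show "dist (Err \<theta> (dmax / (real i + 1)) (XN \<omega>)) 0 < e" using e by simp
  qed
qed

lemma Err_prob_small:
  assumes c: "c > 0" and e: "e > 0"
  shows "\<exists>\<delta>. 0 < \<delta> \<and> \<delta> \<le> dmax \<and> measure N {\<omega>\<in>space N. Err \<theta> \<delta> (XN \<omega>) > c} \<le> e"
proof -
  interpret PN: prob_space N by (rule N)
  define d where "d i = dmax / (real i + 1)" for i :: nat
  have dpos: "0 < d i" "d i \<le> dmax" for i unfolding d_def using dmax_pos by (auto simp: field_simps)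
  define S where "S i = {\<omega>\<in>space N. Err \<theta> (d i) (XN \<omega>) > c}" for i
  have Sm: "S i \<in> sets N" for i unfolding S_def using H_meas(3)[OF dpos(1)[of i]] by measurable
  have "(\<lambda>i. \<integral>\<omega>. indicator (S i) \<omega> \<partial>N) \<longlonglongrightarrow> (\<integral>\<omega>. (0::real) \<partial>N)"
  proof (rule integral_dominated_convergence[where w="\<lambda>_. 1"])
    show "\<And>i. (\<lambda>\<omega>. indicator (S i) \<omega> :: real) \<in> borel_measurable N" using Sm by simp
    show "AE \<omega> in N. (\<lambda>i. indicator (S i) \<omega> :: real) \<longlonglongrightarrow> 0"
    proof (rule AE_I2)
      fix \<omega> assume \<omega>: "\<omega> \<in> space N"
      have "eventually (\<lambda>i. Err \<theta> (d i) (XN \<omega>) < c) sequentially"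
        using Err_lim[OF \<omega>] c unfolding d_def by (intro order_tendstoD(2)) auto
      then have "eventually (\<lambda>i. indicator (S i) \<omega> = (0::real)) sequentially"
        by eventually_elim (auto simp: S_def)
      then show "(\<lambda>i. indicator (S i) \<omega> :: real) \<longlonglongrightarrow> 0" by (rule tendsto_eventually)
    qed
  qed (auto simp: indicator_def)
  then have "(\<lambda>i. measure N (S i)) \<longlonglongrightarrow> 0" using Sm by (simp add: sets.Int_space_eq2)
  then have "eventually (\<lambda>i. measure N (S i) < e) sequentially" using e by (intro order_tendstoD(2)) auto
  then obtain i0 where "\<forall>i\<ge>i0. measure N (S i) < e" unfolding eventually_sequentially by blast
  then have "measure N (S i0) < e" by blast
  then obtain i where "measure N (S i) < e" by blast
  then show ?thesis using dpos[of i] unfolding S_def by (intro exI[of _ "d i"]) auto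
qed

end


context mainsetup begin

lemma V_meas: "V \<in> borel_measurable N"
proof (rule borel_measurable_LIMSEQ_metric[where f="\<lambda>i \<omega>. Hp (dmax / (real i + 1)) (XN \<omega>)"])
  fix i :: nat
  have p: "dmax / (real i + 1) > 0" using dmax_pos by simp
  show "(\<lambda>\<omega>. Hp (dmax / (real i + 1)) (XN \<omega>)) \<in> borel_measurable N"
    unfolding Hp_def using H_meas[OF p] by (intro borel_measurable_Pair) auto
next
  fix \<omega> assume \<omega>: "\<omega> \<in> space N"
  show "(\<lambda>i. Hp (dmax / (real i + 1)) (XN \<omega>)) \<longlonglongrightarrow> V \<omega>"
  proof (rule tendsto_dist_iff[THEN iffD2], rule tendsto_sandwich[OF _ _ tendsto_const])
    show "eventually (\<lambda>i. 0 \<le> dist (Hp (dmax / (real i + 1)) (XN \<omega>)) (V \<omega>)) sequentially" by simp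
    have "dist (Hp (dmax / (real i + 1)) (XN \<omega>)) (V \<omega>) \<le> 2 * Err \<theta> (dmax / (real i + 1)) (XN \<omega>)" for i
      using boundN[of "dmax / (real i + 1)" \<omega>] \<omega> dmax_pos by (simp add: dist_commute field_simps)
    then show "eventually (\<lambda>i. dist (Hp (dmax / (real i + 1)) (XN \<omega>)) (V \<omega>) \<le> 2 * Err \<theta> (dmax / (real i + 1)) (XN \<omega>)) sequentially"
      by simp
    show "(\<lambda>i. 2 * Err \<theta> (dmax / (real i + 1)) (XN \<omega>)) \<longlonglongrightarrow> 0"
      using tendsto_mult_right_zero[OF Err_lim[OF \<omega>], of 2] by (simp add: mult.commute)
  qed
qed

lemma U_meas: "U n \<in> borel_measurable M"
proof -
  have X: "\<And>j. (\<lambda>\<omega>. xv n \<omega> j) \<in> borel_measurable M" unfolding xv_def using Y_rv by measurable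
  show ?thesis unfolding U_def kh_def by (rule U_measurable[where Y=Y, OF Y_rv X])
qed

lemma convC:
  fixes f :: "real \<times> real \<Rightarrow> real"
  assumes f: "continuous_on UNIV f" "bounded (range f)"
  shows "(\<lambda>n. \<integral>\<omega>. f (U n \<omega>) \<partial>M) \<longlonglongrightarrow> (\<integral>\<omega>. f (V \<omega>) \<partial>N)"
proof (rule approx_weak[OF M N U_meas V_meas _ f])
  fix \<epsilon> :: real assume e: "\<epsilon> > 0"
  interpret PM: prob_space M by (rule M)
  interpret PN: prob_space N by (rule N)
  obtain \<delta> where d: "0 < \<delta>" "\<delta> \<le> dmax" and dN: "measure N {\<omega>\<in>space N. Err \<theta> \<delta> (XN \<omega>) > \<epsilon>/8} \<le> \<epsilon>/4"
    using Err_prob_small[of "\<epsilon>/8" "\<epsilon>/4"] e by auto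
  note Hm = H_meas[OF d(1)]
  note Hj = H_jcont[OF d(1)]
  define An where "An n \<omega> = Hp \<delta> (Xn n \<omega>)" for n \<omega>
  define A where "A \<omega> = Hp \<delta> (XN \<omega>)" for \<omega>
  have Anm: "An n \<in> borel_measurable M" for n unfolding An_def Hp_def using Hm by (intro borel_measurable_Pair) auto
  have Am: "A \<in> borel_measurable N" unfolding A_def Hp_def using Hm by (intro borel_measurable_Pair) auto
  have conv: "(\<lambda>n. \<integral>\<omega>. g (An n \<omega>) \<partial>M) \<longlonglongrightarrow> (\<integral>\<omega>. g (A \<omega>) \<partial>N)"
    if "continuous_on UNIV g" "bounded (range g)" for g :: "real \<times> real \<Rightarrow> real"
    unfolding An_def A_def Hp_def
    by (rule fclt_apply[OF FCLT' Hj(1) Hj(2) that]) (use Hm in auto)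
  have ErrN_m: "{\<omega>\<in>space N. Err \<theta> \<delta> (XN \<omega>) > \<epsilon>/8} \<in> sets N" using Hm by measurable
  have VA: "measure N {\<omega>\<in>space N. dist (V \<omega>) (A \<omega>) > \<epsilon>} \<le> \<epsilon>"
  proof -
    have "measure N {\<omega>\<in>space N. dist (V \<omega>) (A \<omega>) > \<epsilon>} \<le> measure N {\<omega>\<in>space N. Err \<theta> \<delta> (XN \<omega>) > \<epsilon>/8}"
    proof (rule PN.finite_measure_mono[OF _ ErrN_m])
      show "{\<omega>\<in>space N. dist (V \<omega>) (A \<omega>) > \<epsilon>} \<subseteq> {\<omega>\<in>space N. Err \<theta> \<delta> (XN \<omega>) > \<epsilon>/8}"
        using boundN[OF d] e unfolding A_def by force
    qed
    then show ?thesis using dN e by linarith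
  qed
  define \<phi> where "\<phi> t = max 0 (min 1 (8 * t / \<epsilon> - 1))" for t :: real
  have \<phi>c: "continuous_on UNIV (\<lambda>p::real\<times>real. \<phi> (fst p))" unfolding \<phi>_def by (intro continuous_intros) (use e in auto)
  have \<phi>b: "bounded (range (\<lambda>p::real\<times>real. \<phi> (fst p)))" unfolding \<phi>_def bounded_iff by (intro exI[of _ 1]) auto
  have \<phi>m: "\<phi> \<in> borel_measurable borel" unfolding \<phi>_def by measurable
  have limphi: "(\<lambda>n. \<integral>\<omega>. \<phi> (Err \<theta> \<delta> (Xn n \<omega>)) \<partial>M) \<longlonglongrightarrow> (\<integral>\<omega>. \<phi> (Err \<theta> \<delta> (XN \<omega>)) \<partial>N)"
    using fclt_apply[OF FCLT' Hj(3) Hj(3) \<phi>c \<phi>b] Hm by simp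
  have phiN: "(\<integral>\<omega>. \<phi> (Err \<theta> \<delta> (XN \<omega>)) \<partial>N) \<le> \<epsilon>/4"
  proof -
    have "(\<integral>\<omega>. \<phi> (Err \<theta> \<delta> (XN \<omega>)) \<partial>N) \<le> measure N {\<omega>\<in>space N. Err \<theta> \<delta> (XN \<omega>) > \<epsilon>/8}"
    proof (rule int_le_prob[OF N _ ErrN_m])
      show "(\<lambda>\<omega>. \<phi> (Err \<theta> \<delta> (XN \<omega>))) \<in> borel_measurable N" using Hm \<phi>m by measurable
      show "\<forall>\<omega>\<in>space N. 0 \<le> \<phi> (Err \<theta> \<delta> (XN \<omega>)) \<and> \<phi> (Err \<theta> \<delta> (XN \<omega>)) \<le> 1" unfolding \<phi>_def by auto
      show "\<forall>\<omega>\<in>space N - {\<omega> \<in> space N. \<epsilon> / 8 < Err \<theta> \<delta> (XN \<omega>)}. \<phi> (Err \<theta> \<delta> (XN \<omega>)) = 0"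
      proof
        fix \<omega> assume "\<omega> \<in> space N - {\<omega> \<in> space N. \<epsilon> / 8 < Err \<theta> \<delta> (XN \<omega>)}"
        then have "Err \<theta> \<delta> (XN \<omega>) \<le> \<epsilon> / 8" by auto
        then have "8 * Err \<theta> \<delta> (XN \<omega>) / \<epsilon> - 1 \<le> 0" using e by (simp add: field_simps)
        then show "\<phi> (Err \<theta> \<delta> (XN \<omega>)) = 0" unfolding \<phi>_def by simp
      qed
    qed
    then show ?thesis using dN by linarith
  qed
  have ev1: "eventually (\<lambda>n. (\<integral>\<omega>. \<phi> (Err \<theta> \<delta> (Xn n \<omega>)) \<partial>M) < \<epsilon>/2) sequentially"
    using limphi phiN e by (intro order_tendstoD(2)) auto
  have ev2: "eventually (\<lambda>n. measure M {\<omega>\<in>space M. \<bar>real (kh n \<omega>) / real n - \<theta>\<bar> > \<delta>} < \<epsilon>/2) sequentially"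
  proof -
    have "(\<lambda>n. measure M {\<omega>\<in>space M. \<bar>real (kh n \<omega>) / real n - \<theta>\<bar> > \<delta>}) \<longlonglongrightarrow> 0"
      using consistent[OF d(1)] unfolding kh_def xv_def .
    then show ?thesis using e by (intro order_tendstoD(2)) auto
  qed
  obtain n0 :: nat where n0: "1 / \<delta> < real n0" using reals_Archimedean2 by blast
  have ev3: "eventually (\<lambda>n. n \<ge> 1 \<and> 1 / real n \<le> \<delta>) sequentially"
    unfolding eventually_sequentially
  proof (intro exI[of _ "Suc n0"] allI impI conjI)
    fix n assume n: "Suc n0 \<le> n"
    then show "n \<ge> 1" by simp
    have "1 / \<delta> < real n" using n0 n by linarith
    then show "1 / real n \<le> \<delta>" using d(1) n by (simp add: field_simps)
  qed
  have evU: "eventually (\<lambda>n. measure M {\<omega>\<in>space M. dist (U n \<omega>) (An n \<omega>) > \<epsilon>} \<le> \<epsilon>) sequentially"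
    using ev1 ev2 ev3
  proof eventually_elim
    case (elim n)
    have khm: "(\<lambda>\<omega>. kh n \<omega>) \<in> measurable M (count_space UNIV)"
    proof -
      have "(\<lambda>\<omega>. xv n \<omega> j) \<in> borel_measurable M" for j unfolding xv_def using Y_rv by measurable
      then show ?thesis unfolding kh_def by (rule khat_measurable)
    qed
    define S1 where "S1 = {\<omega>\<in>space M. \<bar>real (kh n \<omega>) / real n - \<theta>\<bar> > \<delta>}"
    define S2 where "S2 = {\<omega>\<in>space M. Err \<theta> \<delta> (Xn n \<omega>) \<ge> \<epsilon>/4}"
    have S1m: "S1 \<in> sets M" unfolding S1_def using khm by measurable
    have S2m: "S2 \<in> sets M" unfolding S2_def using Hm by measurable
    have sub: "{\<omega>\<in>space M. dist (U n \<omega>) (An n \<omega>) > \<epsilon>} \<subseteq> S1 \<union> S2"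
    proof
      fix \<omega> assume \<omega>: "\<omega> \<in> {\<omega>\<in>space M. dist (U n \<omega>) (An n \<omega>) > \<epsilon>}"
      show "\<omega> \<in> S1 \<union> S2"
      proof (cases "\<omega> \<in> S1")
        case False
        then have "\<bar>real (kh n \<omega>) / real n - \<theta>\<bar> \<le> \<delta>" using \<omega> unfolding S1_def by auto
        then have "dist (U n \<omega>) (An n \<omega>) \<le> 2 * Err \<theta> \<delta> (Xn n \<omega>)"
          unfolding An_def using boundM[OF d] elim by auto
        then show ?thesis using \<omega> e unfolding S2_def by auto
      qed simp
    qed
    have "measure M S2 \<le> (\<integral>\<omega>. \<phi> (Err \<theta> \<delta> (Xn n \<omega>)) \<partial>M)"
    proof (rule prob_le_int[OF M _ S2m])
      show "(\<lambda>\<omega>. \<phi> (Err \<theta> \<delta> (Xn n \<omega>))) \<in> borel_measurable M" using Hm \<phi>m by measurable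
      show "\<forall>\<omega>\<in>space M. 0 \<le> \<phi> (Err \<theta> \<delta> (Xn n \<omega>)) \<and> \<phi> (Err \<theta> \<delta> (Xn n \<omega>)) \<le> 1" unfolding \<phi>_def by auto
      show "\<forall>\<omega>\<in>S2. 1 \<le> \<phi> (Err \<theta> \<delta> (Xn n \<omega>))" unfolding \<phi>_def S2_def using e by (auto simp: field_simps)
    qed
    then have "measure M (S1 \<union> S2) \<le> \<epsilon>" using measure_Un_le[OF S1m S2m] elim unfolding S1_def by linarith
    moreover have "measure M {\<omega>\<in>space M. dist (U n \<omega>) (An n \<omega>) > \<epsilon>} \<le> measure M (S1 \<union> S2)"
      using sub S1m S2m by (intro PM.finite_measure_mono) auto
    ultimately show ?case by linarith
  qed
  show "\<exists>An A. (\<forall>n. An n \<in> borel_measurable M) \<and> A \<in> borel_measurable N \<and>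
      (\<forall>g::real\<times>real \<Rightarrow> real. continuous_on UNIV g \<longrightarrow> bounded (range g) \<longrightarrow>
          (\<lambda>n. \<integral>\<omega>. g (An n \<omega>) \<partial>M) \<longlonglongrightarrow> (\<integral>\<omega>. g (A \<omega>) \<partial>N)) \<and>
      eventually (\<lambda>n. measure M {\<omega>\<in>space M. dist (U n \<omega>) (An n \<omega>) > \<epsilon>} \<le> \<epsilon>) sequentially \<and>
      measure N {\<omega>\<in>space N. dist (V \<omega>) (A \<omega>) > \<epsilon>} \<le> \<epsilon>"
    using Anm Am conv evU VA by blast
qed

end


lemma grid_sup:
  fixes g :: "real \<Rightarrow> real"
  assumes g: "continuous_on {0..1} g"
  shows "(\<lambda>m. Max ((\<lambda>j. g (real j / real (Suc m))) ` {0..Suc m})) \<longlonglongrightarrow> (SUP t\<in>{0..1}. g t)"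
proof (rule tendstoI)
  fix e :: real assume e: "e > 0"
  have "compact (g ` {0..1})" using g by (intro compact_continuous_image) auto
  then have bdd: "bdd_above (g ` {0..1})" by (intro bounded_imp_bdd_above compact_imp_bounded)
  have "uniformly_continuous_on {0..1} g" using g by (intro compact_uniformly_continuous) auto
  then obtain \<eta> where \<eta>: "\<eta> > 0" "\<And>u v. u \<in> {0..1} \<Longrightarrow> v \<in> {0..1} \<Longrightarrow> dist v u < \<eta> \<Longrightarrow> dist (g v) (g u) < e/2"
    unfolding uniformly_continuous_on_def using e by (metis half_gt_zero)
  obtain m0 :: nat where m0: "1 / \<eta> < real m0" using reals_Archimedean2 by blast
  show "eventually (\<lambda>m. dist (Max ((\<lambda>j. g (real j / real (Suc m))) ` {0..Suc m})) (SUP t\<in>{0..1}. g t) < e) sequentially"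
    unfolding eventually_sequentially
  proof (intro exI[of _ m0] allI impI)
    fix m assume m: "m \<ge> m0"
    let ?a = "Max ((\<lambda>j. g (real j / real (Suc m))) ` {0..Suc m})"
    have pts: "real j / real (Suc m) \<in> {0..1}" if "j \<in> {0..Suc m}" for j using that by auto
    have le: "?a \<le> (SUP t\<in>{0..1}. g t)"
      using pts by (intro Max.boundedI) (auto intro!: cSUP_upper[OF _ bdd])
    have ge: "(SUP t\<in>{0..1}. g t) \<le> ?a + e/2"
    proof (rule cSUP_least)
      fix t :: real assume t: "t \<in> {0..1}"
      let ?j = "nat \<lfloor>t * real (Suc m)\<rfloor>"
      have jb: "real ?j \<le> t * real (Suc m)" "t * real (Suc m) < real ?j + 1"
        using nat_floor_bounds[of "t * real (Suc m)"] t by auto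
      have "real ?j \<le> real (Suc m)"
        by (rule order.trans[OF jb(1)]) (use t in \<open>auto intro: mult_left_le_one_le\<close>)
      then have "?j \<le> Suc m" by (simp only: of_nat_le_iff)
      then have jin: "?j \<in> {0..Suc m}" by simp
      have "dist t (real ?j / real (Suc m)) < \<eta>"
      proof -
        have "real ?j / real (Suc m) \<le> t" using jb by (simp add: field_simps)
        moreover have "t < real ?j / real (Suc m) + 1 / real (Suc m)" using jb by (simp add: field_simps)
        moreover have "1 / real (Suc m) < \<eta>"
        proof -
          have "1 / \<eta> < real (Suc m)" using m0 m by linarith
          then show ?thesis using \<eta>(1) by (simp add: field_simps)
        qed
        ultimately show ?thesis by (simp add: dist_real_def)
      qed
      then have "\<bar>g t - g (real ?j / real (Suc m))\<bar> < e/2"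
        using \<eta>(2)[OF pts[OF jin] t] by (simp add: dist_real_def dist_commute)
      then have "g t < g (real ?j / real (Suc m)) + e/2" unfolding abs_less_iff by linarith
      also have "g (real ?j / real (Suc m)) \<le> ?a" using jin by (intro Max_ge) auto
      finally show "g t \<le> ?a + e/2" by simp
    qed simp
    show "dist ?a (SUP t\<in>{0..1}. g t) < e" using le ge e by (simp add: dist_real_def)
  qed
qed

lemma aS_param:
  assumes s: "s > 0"
  shows "aS x s = (SUP t\<in>{0..1}. \<bar>x (s * t) - t * x s\<bar>)"
proof -
  have im: "{0..s} = (\<lambda>t. s * t) ` {0..1}"
  proof
    show "{0..s} \<subseteq> (\<lambda>t. s * t) ` {0..1}"
    proof
      fix u assume "u \<in> {0..s}"
      then show "u \<in> (\<lambda>t. s * t) ` {0..1}" using s by (intro image_eqI[of _ _ "u / s"]) (auto simp: field_simps)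
    qed
  qed (use s in \<open>auto simp: mult_le_cancel_left1\<close>)
  show ?thesis unfolding aS_def im image_image using s by simp
qed


definition stdN :: "nat \<Rightarrow> real measure" where
  "stdN m = density lborel (\<lambda>x. ennreal (normal_density 0 (sqrt (1 / real m)) x))"

definition incv :: "(real \<Rightarrow> 'c \<Rightarrow> real) \<Rightarrow> real \<Rightarrow> real \<Rightarrow> nat \<Rightarrow> 'c \<Rightarrow> nat \<Rightarrow> real" where
  "incv B a L m \<omega> = (\<lambda>i\<in>{..<m}. (B (a + L * real (Suc i) / real m) \<omega> - B (a + L * real i / real m) \<omega>) / sqrt L)"

lemma wiener_incr_law:
  fixes P0 :: "'c measure" and B :: "real \<Rightarrow> 'c \<Rightarrow> real"
  assumes W: "wiener_process P0 B" and a: "0 \<le> a" and L: "0 < L" and aL: "a + L \<le> 1" and m: "m > 0"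
  shows "distr P0 (PiM {..<m} (\<lambda>_. borel)) (incv B a L m) = PiM {..<m} (\<lambda>_. stdN m)"
proof -
  interpret prob_space P0 using W unfolding wiener_process_def by auto
  define ts where "ts i = a + L * real i / real m" for i
  have ts0: "0 \<le> ts 0" unfolding ts_def using a by simp
  have tsm: "ts m \<le> 1" unfolding ts_def using aL m by simp
  have tsmono: "\<forall>i<m. ts i \<le> ts (Suc i)" unfolding ts_def using L m by (auto intro!: divide_right_mono)
  have ind0: "indep_vars (\<lambda>_. borel) (\<lambda>i \<omega>. B (ts (Suc i)) \<omega> - B (ts i) \<omega>) {..<m}"
    using W ts0 tsm tsmono unfolding wiener_process_def by blast
  define X where "X i \<omega> = (B (ts (Suc i)) \<omega> - B (ts i) \<omega>) / sqrt L" for i \<omega>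
  have ind: "indep_vars (\<lambda>_. borel) X {..<m}"
    unfolding X_def by (rule indep_vars_compose2[OF ind0]) auto
  have dist: "distributed P0 lborel (X i) (\<lambda>x. ennreal (normal_density 0 (sqrt (1 / real m)) x))" if i: "i < m" for i
  proof -
    have tsin: "0 \<le> ts i" "ts i < ts (Suc i)" "ts (Suc i) \<le> 1"
    proof -
      show "0 \<le> ts i" unfolding ts_def using a L by simp
      show "ts i < ts (Suc i)" unfolding ts_def using L m by (simp add: field_simps)
      have "real (Suc i) \<le> real m" using i by simp
      then have "L * real (Suc i) \<le> L * real m" using L by (intro mult_left_mono) auto
      then have "L * real (Suc i) / real m \<le> L * real m / real m" by (intro divide_right_mono) auto
      then have "L * real (Suc i) / real m \<le> L" using m by simp
      then show "ts (Suc i) \<le> 1" unfolding ts_def using aL by simp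
    qed
    have "distributed P0 lborel (\<lambda>\<omega>. B (ts (Suc i)) \<omega> - B (ts i) \<omega>)
        (\<lambda>x. ennreal (normal_density 0 (sqrt (ts (Suc i) - ts i)) x))"
      using W tsin unfolding wiener_process_def by blast
    then have "distributed P0 lborel (\<lambda>\<omega>. 0 + (1 / sqrt L) * (B (ts (Suc i)) \<omega> - B (ts i) \<omega>))
        (\<lambda>x. ennreal (normal_density (0 + (1 / sqrt L) * 0) (\<bar>1 / sqrt L\<bar> * sqrt (ts (Suc i) - ts i)) x))"
      by (rule normal_density_affine) (use tsin L in auto)
    moreover have "\<bar>1 / sqrt L\<bar> * sqrt (ts (Suc i) - ts i) = sqrt (1 / real m)"
    proof -
      have e: "ts (Suc i) - ts i = L / real m" unfolding ts_def using m by (simp add: field_simps)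
      have "sqrt L > 0" using L by simp
      then show ?thesis unfolding e using L m by (simp add: real_sqrt_divide)
    qed
    ultimately show ?thesis unfolding X_def by simp
  qed
  have rv: "random_variable borel (X i)" if "i < m" for i
    using dist[OF that] unfolding distributed_def by (simp add: measurable_lborel1)
  have "distr P0 (PiM {..<m} (\<lambda>_. borel)) (\<lambda>\<omega>. \<lambda>i\<in>{..<m}. X i \<omega>) = PiM {..<m} (\<lambda>i. distr P0 borel (X i))"
    using ind m rv by (subst indep_vars_iff_distr_eq_PiM'[symmetric]) auto
  also have "\<dots> = PiM {..<m} (\<lambda>_. stdN m)"
  proof (rule PiM_cong)
    fix i assume "i \<in> {..<m}"
    then have "distr P0 lborel (X i) = stdN m" using dist unfolding distributed_def stdN_def by auto
    moreover have "distr P0 borel (X i) = distr P0 lborel (X i)" by (rule distr_cong) auto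
    ultimately show "distr P0 borel (X i) = stdN m" by simp
  qed simp
  finally show ?thesis unfolding incv_def X_def ts_def .
qed


lemma wiener_two_blocks:
  fixes P0 :: "'c measure" and B :: "real \<Rightarrow> 'c \<Rightarrow> real"
  assumes W: "wiener_process P0 B" and th: "0 < \<theta>" "\<theta> < 1" and m: "m > 0"
  shows "prob_space.indep_var P0 (PiM {..<m} (\<lambda>_. borel)) (incv B 0 \<theta> m) (PiM {..<m} (\<lambda>_. borel)) (incv B \<theta> (1-\<theta>) m)"
proof -
  interpret prob_space P0 using W unfolding wiener_process_def by auto
  define ts where "ts i = (if i \<le> m then \<theta> * real i / real m else \<theta> + (1-\<theta>) * real (i - m) / real m)" for i
  have ts0: "0 \<le> ts 0" unfolding ts_def by simp
  have tsm: "ts (2*m) \<le> 1" unfolding ts_def using m by (simp add: of_nat_diff)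
  have tsmono: "\<forall>i<2*m. ts i \<le> ts (Suc i)"
  proof (intro allI impI)
    fix i assume "i < 2*m"
    consider "Suc i \<le> m" | "i = m" | "i > m" by linarith
    then show "ts i \<le> ts (Suc i)"
    proof cases
      case 1 then show ?thesis unfolding ts_def using th m by (auto intro!: divide_right_mono mult_left_mono)
    next
      case 2 then show ?thesis unfolding ts_def using th m by (simp add: field_simps)
    next
      case 3 then show ?thesis unfolding ts_def using th m
        by (auto intro!: divide_right_mono mult_left_mono simp: of_nat_diff)
    qed
  qed
  define Inc where "Inc i \<omega> = B (ts (Suc i)) \<omega> - B (ts i) \<omega>" for i \<omega>
  have ind: "indep_vars (\<lambda>_. borel) Inc {..<2*m}"
    using W ts0 tsm tsmono unfolding wiener_process_def Inc_def by blast
  have iv: "indep_var (PiM {..<m} (\<lambda>_. borel)) (\<lambda>\<omega>. restrict (\<lambda>i. Inc i \<omega>) {..<m})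
                      (PiM {m..<2*m} (\<lambda>_. borel)) (\<lambda>\<omega>. restrict (\<lambda>i. Inc i \<omega>) {m..<2*m})"
    by (rule indep_var_restrict[OF ind]) auto
  define g1 where "g1 p = (\<lambda>i\<in>{..<m}. p i / sqrt \<theta>)" for p :: "nat \<Rightarrow> real"
  define g2 where "g2 p = (\<lambda>i\<in>{..<m}. p (m + i) / sqrt (1-\<theta>))" for p :: "nat \<Rightarrow> real"
  have g1m: "g1 \<in> measurable (PiM {..<m} (\<lambda>_. borel)) (PiM {..<m} (\<lambda>_. borel))"
    unfolding g1_def by (intro measurable_restrict borel_measurable_divide measurable_component_singleton) auto
  have g2m: "g2 \<in> measurable (PiM {m..<2*m} (\<lambda>_. borel)) (PiM {..<m} (\<lambda>_. borel))"
    unfolding g2_def by (intro measurable_restrict borel_measurable_divide measurable_component_singleton) auto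
  have "indep_var (PiM {..<m} (\<lambda>_. borel)) (g1 \<circ> (\<lambda>\<omega>. restrict (\<lambda>i. Inc i \<omega>) {..<m}))
                  (PiM {..<m} (\<lambda>_. borel)) (g2 \<circ> (\<lambda>\<omega>. restrict (\<lambda>i. Inc i \<omega>) {m..<2*m}))"
    by (rule indep_var_compose[OF iv g1m g2m])
  moreover have "g1 \<circ> (\<lambda>\<omega>. restrict (\<lambda>i. Inc i \<omega>) {..<m}) = incv B 0 \<theta> m"
  proof (rule ext)
    fix \<omega>
    show "(g1 \<circ> (\<lambda>\<omega>. restrict (\<lambda>i. Inc i \<omega>) {..<m})) \<omega> = incv B 0 \<theta> m \<omega>"
      unfolding g1_def incv_def comp_def
    proof (rule restrict_ext)
      fix i assume i: "i \<in> {..<m}"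
      then have "Suc i \<le> m" by simp
      then show "restrict (\<lambda>i. Inc i \<omega>) {..<m} i / sqrt \<theta>
          = (B (0 + \<theta> * real (Suc i) / real m) \<omega> - B (0 + \<theta> * real i / real m) \<omega>) / sqrt \<theta>"
        using i unfolding Inc_def ts_def by simp
    qed
  qed
  moreover have "g2 \<circ> (\<lambda>\<omega>. restrict (\<lambda>i. Inc i \<omega>) {m..<2*m}) = incv B \<theta> (1-\<theta>) m"
  proof (rule ext)
    fix \<omega>
    show "(g2 \<circ> (\<lambda>\<omega>. restrict (\<lambda>i. Inc i \<omega>) {m..<2*m})) \<omega> = incv B \<theta> (1-\<theta>) m \<omega>"
      unfolding g2_def incv_def comp_def
    proof (rule restrict_ext)
      fix i assume i: "i \<in> {..<m}"
      have t1: "ts (Suc (m + i)) = \<theta> + (1 - \<theta>) * real (Suc i) / real m" unfolding ts_def by simp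
      have t2: "ts (m + i) = \<theta> + (1 - \<theta>) * real i / real m" unfolding ts_def using m by (auto simp: field_simps)
      show "restrict (\<lambda>i. Inc i \<omega>) {m..<2*m} (m + i) / sqrt (1 - \<theta>)
          = (B (\<theta> + (1 - \<theta>) * real (Suc i) / real m) \<omega> - B (\<theta> + (1 - \<theta>) * real i / real m) \<omega>) / sqrt (1 - \<theta>)"
        using i by (simp add: Inc_def t1 t2)
    qed
  qed
  ultimately show ?thesis by simp
qed

lemma paths_indep_incv:
  fixes P0 :: "'c measure" and W1 W2 :: "real \<Rightarrow> 'c \<Rightarrow> real"
  assumes P0: "prob_space P0"
    and ind: "prob_space.indep_var P0
             (Pi\<^sub>M {0..1} (\<lambda>_. borel)) (\<lambda>\<omega>. restrict (\<lambda>t. W1 t \<omega>) {0..1})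
             (Pi\<^sub>M {0..1} (\<lambda>_. borel)) (\<lambda>\<omega>. restrict (\<lambda>t. W2 t \<omega>) {0..1})"
    and m: "m > 0"
  shows "prob_space.indep_var P0 (PiM {..<m} (\<lambda>_. borel)) (incv W1 0 1 m) (PiM {..<m} (\<lambda>_. borel)) (incv W2 0 1 m)"
proof -
  interpret prob_space P0 by (rule P0)
  define g where "g p = (\<lambda>i\<in>{..<m}. (p (0 + 1 * real (Suc i) / real m) - p (0 + 1 * real i / real m)) / sqrt 1)"
    for p :: "real \<Rightarrow> real"
  have pts: "0 + 1 * real (Suc i) / real m \<in> {0..1}" "0 + 1 * real i / real m \<in> {0..1}" if "i \<in> {..<m}" for i
    using that m by auto
  have gm: "g \<in> measurable (PiM {0..1} (\<lambda>_. borel)) (PiM {..<m} (\<lambda>_. borel))"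
    unfolding g_def
    by (intro measurable_restrict borel_measurable_divide borel_measurable_diff measurable_component_singleton
        borel_measurable_const pts) auto
  have "indep_var (PiM {..<m} (\<lambda>_. borel)) (g \<circ> (\<lambda>\<omega>. restrict (\<lambda>t. W1 t \<omega>) {0..1}))
                  (PiM {..<m} (\<lambda>_. borel)) (g \<circ> (\<lambda>\<omega>. restrict (\<lambda>t. W2 t \<omega>) {0..1}))"
    by (rule indep_var_compose[OF ind gm gm])
  moreover have "g \<circ> (\<lambda>\<omega>. restrict (\<lambda>t. W t \<omega>) {0..1}) = incv W 0 1 m" for W :: "real \<Rightarrow> 'c \<Rightarrow> real"
  proof (rule ext)
    fix \<omega>
    show "(g \<circ> (\<lambda>\<omega>. restrict (\<lambda>t. W t \<omega>) {0..1})) \<omega> = incv W 0 1 m \<omega>"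
      unfolding g_def incv_def comp_def by (rule restrict_ext) (use pts in auto)
  qed
  ultimately show ?thesis by simp
qed

lemma pair_law:
  assumes P0: "prob_space P0" and ind: "prob_space.indep_var P0 S X S Y"
    and lx: "distr P0 S X = Q" and ly: "distr P0 S Y = Q"
  shows "distr P0 (S \<Otimes>\<^sub>M S) (\<lambda>\<omega>. (X \<omega>, Y \<omega>)) = Q \<Otimes>\<^sub>M Q"
proof -
  interpret prob_space P0 by (rule P0)
  show ?thesis using ind unfolding indep_var_distribution_eq lx ly by simp
qed


definition Fgrid :: "nat \<Rightarrow> (nat \<Rightarrow> real) \<Rightarrow> real" where
  "Fgrid m p = Max ((\<lambda>j. \<bar>(\<Sum>i<j. p i) - real j / real m * (\<Sum>i<m. p i)\<bar>) ` {0..m})"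

lemma sum_comp_meas: "(j::nat) \<le> m \<Longrightarrow> (\<lambda>p::nat\<Rightarrow>real. \<Sum>i<j. p i) \<in> borel_measurable (PiM {..<m} (\<lambda>_. borel))"
proof (induction j)
  case 0 then show ?case by simp
next
  case (Suc j)
  have m1: "(\<lambda>p::nat\<Rightarrow>real. \<Sum>i<j. p i) \<in> borel_measurable (PiM {..<m} (\<lambda>_. borel))" using Suc by simp
  have m2: "(\<lambda>p::nat\<Rightarrow>real. p j) \<in> borel_measurable (PiM {..<m} (\<lambda>_. borel))"
    using Suc.prems by (intro measurable_component_singleton) auto
  have "(\<lambda>p::nat\<Rightarrow>real. (\<Sum>i<j. p i) + p j) \<in> borel_measurable (PiM {..<m} (\<lambda>_. borel))"
    using m1 m2 by (rule borel_measurable_add)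
  then show ?case by simp
qed

lemma div_comb: "x / s - c * (y / s) = (x - c * y) / (s::real)"
  by (simp add: diff_divide_distrib)

lemma Fgrid_meas: "Fgrid m \<in> borel_measurable (PiM {..<m} (\<lambda>_. borel))"
proof -
  have "(\<lambda>p. Max ((\<lambda>j. (\<lambda>j p. \<bar>(\<Sum>i<j. p i) - real j / real m * (\<Sum>i<m. p i)\<bar>) j p) ` {0..m}))
        \<in> borel_measurable (PiM {..<m} (\<lambda>_. borel))"
  proof (rule measurable_Max_image)
    fix j assume j: "j \<in> {0..m}"
    have c: "(\<lambda>p::nat\<Rightarrow>real. p i) \<in> borel_measurable (PiM {..<m} (\<lambda>_. borel))" if "i < m" for i :: nat
      using that by (intro measurable_component_singleton) auto
    have s1: "(\<lambda>p::nat\<Rightarrow>real. \<Sum>i<j. p i) \<in> borel_measurable (PiM {..<m} (\<lambda>_. borel))"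
      using j by (intro sum_comp_meas) auto
    have s2: "(\<lambda>p::nat\<Rightarrow>real. \<Sum>i<m. p i) \<in> borel_measurable (PiM {..<m} (\<lambda>_. borel))"
      by (intro sum_comp_meas) auto
    show "(\<lambda>p. \<bar>(\<Sum>i<j. p i) - real j / real m * (\<Sum>i<m. p i)\<bar>) \<in> borel_measurable (PiM {..<m} (\<lambda>_. borel))"
      using s1 s2 by measurable
  qed auto
  then show ?thesis unfolding Fgrid_def by simp
qed

lemma incv_sum:
  assumes "j \<le> m" "m > 0"
  shows "(\<Sum>i<j. incv B a L m \<omega> i) = (B (a + L * real j / real m) \<omega> - B a \<omega>) / sqrt L"
proof -
  have "(\<Sum>i<j. incv B a L m \<omega> i) = (\<Sum>i<j. (B (a + L * real (Suc i) / real m) \<omega> - B (a + L * real i / real m) \<omega>) / sqrt L)"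
    using assms by (intro sum.cong) (auto simp: incv_def)
  also have "\<dots> = (\<Sum>i<j. B (a + L * real (Suc i) / real m) \<omega> - B (a + L * real i / real m) \<omega>) / sqrt L"
    by (simp add: sum_divide_distrib)
  also have "(\<Sum>i<j. B (a + L * real (Suc i) / real m) \<omega> - B (a + L * real i / real m) \<omega>)
      = B (a + L * real j / real m) \<omega> - B (a + L * real 0 / real m) \<omega>"
    by (rule sum_lessThan_telescope[where f="\<lambda>i. B (a + L * real i / real m) \<omega>"])
  finally show ?thesis by simp
qed

lemma Max_scale_pos:
  fixes g :: "nat \<Rightarrow> real"
  assumes "finite K" "K \<noteq> {}" "c \<ge> 0"
  shows "Max ((\<lambda>k. c * g k) ` K) = c * Max (g ` K)"
proof -
  have "mono (\<lambda>t. c * t)" using assms(3) by (intro monoI mult_left_mono) auto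
  then have "c * Max (g ` K) = Max ((\<lambda>t. c * t) ` g ` K)"
    using assms by (intro mono_Max_commute) auto
  then show ?thesis by (simp add: image_image)
qed

lemma Fgrid_incv:
  assumes m: "m > 0" and L: "L > 0"
  shows "Fgrid m (incv B a L m \<omega>) =
    Max ((\<lambda>j. \<bar>(B (a + L * real j / real m) \<omega> - B a \<omega>) - real j / real m * (B (a + L) \<omega> - B a \<omega>)\<bar>) ` {0..m}) / sqrt L"
proof -
  have e: "\<bar>(\<Sum>i<j. incv B a L m \<omega> i) - real j / real m * (\<Sum>i<m. incv B a L m \<omega> i)\<bar>
      = (1 / sqrt L) * \<bar>(B (a + L * real j / real m) \<omega> - B a \<omega>) - real j / real m * (B (a + L) \<omega> - B a \<omega>)\<bar>"
    if "j \<in> {0..m}" for j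
  proof -
    have "(\<Sum>i<j. incv B a L m \<omega> i) - real j / real m * (\<Sum>i<m. incv B a L m \<omega> i)
        = ((B (a + L * real j / real m) \<omega> - B a \<omega>) - real j / real m * (B (a + L) \<omega> - B a \<omega>)) / sqrt L"
    proof -
      have s1: "(\<Sum>i<j. incv B a L m \<omega> i) = (B (a + L * real j / real m) \<omega> - B a \<omega>) / sqrt L"
        using that m by (intro incv_sum) auto
      have s2: "(\<Sum>i<m. incv B a L m \<omega> i) = (B (a + L) \<omega> - B a \<omega>) / sqrt L"
        using incv_sum[of m m B a L \<omega>] m by simp
      show ?thesis unfolding s1 s2 by (rule div_comb)
    qed
    then show ?thesis using L by (simp add: abs_div)
  qed
  have "Fgrid m (incv B a L m \<omega>) = Max ((\<lambda>j. (1 / sqrt L) * \<bar>(B (a + L * real j / real m) \<omega> - B a \<omega>) - real j / real m * (B (a + L) \<omega> - B a \<omega>)\<bar>) ` {0..m})"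
  proof -
    have "(\<lambda>j. \<bar>(\<Sum>i<j. incv B a L m \<omega> i) - real j / real m * (\<Sum>i<m. incv B a L m \<omega> i)\<bar>) ` {0..m}
      = (\<lambda>j. (1 / sqrt L) * \<bar>(B (a + L * real j / real m) \<omega> - B a \<omega>) - real j / real m * (B (a + L) \<omega> - B a \<omega>)\<bar>) ` {0..m}"
      by (rule image_cong[OF refl e])
    then show ?thesis unfolding Fgrid_def by simp
  qed
  also have "\<dots> = (1 / sqrt L) * Max ((\<lambda>j. \<bar>(B (a + L * real j / real m) \<omega> - B a \<omega>) - real j / real m * (B (a + L) \<omega> - B a \<omega>)\<bar>) ` {0..m})"
    using L by (intro Max_scale_pos) auto
  finally show ?thesis by simp
qed

lemma Max_reflect:
  fixes g :: "nat \<Rightarrow> real"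
  shows "Max ((\<lambda>j. g (m - j)) ` {0..m}) = Max (g ` {0..m})"
proof -
  have "(\<lambda>j. m - j) ` {0..m} = {0..m}"
  proof
    show "{0..m} \<subseteq> (\<lambda>j. m - j) ` {0..m}"
    proof
      fix k assume "k \<in> {0..m}" then show "k \<in> (\<lambda>j. m - j) ` {0..m}" by (intro image_eqI[of _ _ "m - k"]) auto
    qed
  qed auto
  then have "(\<lambda>j. g (m - j)) ` {0..m} = g ` {0..m}" by (metis image_image)
  then show ?thesis by simp
qed


lemma incv_meas:
  fixes P0 :: "'c measure" and B :: "real \<Rightarrow> 'c \<Rightarrow> real"
  assumes W: "wiener_process P0 B" and a: "0 \<le> a" and L: "0 < L" and aL: "a + L \<le> 1"
  shows "incv B a L m \<in> measurable P0 (PiM {..<m} (\<lambda>_. borel))"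
proof -
  have Bm: "B t \<in> borel_measurable P0" if "t \<in> {0..1}" for t using W that unfolding wiener_process_def by auto
  have pt: "a + L * real k / real m \<in> {0..1}" if "k \<le> m" for k
  proof -
    have "L * real k / real m \<le> L"
    proof (cases "m = 0")
      case False
      then have "L * real k \<le> L * real m" using that L by (intro mult_left_mono) auto
      then show ?thesis using False by (simp add: field_simps)
    qed (use L in simp)
    then show ?thesis using a L aL by auto
  qed
  show ?thesis unfolding incv_def
    by (intro measurable_restrict borel_measurable_divide borel_measurable_diff Bm pt borel_measurable_const) auto
qed

lemma abs_scale: "(c::real) > 0 \<Longrightarrow> \<bar>c * a - x * (c * b)\<bar> = c * \<bar>a - x * b\<bar>"
proof -
  assume c: "c > 0"
  have "c * a - x * (c * b) = c * (a - x * b)" by (simp add: algebra_simps)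
  then show ?thesis using c by (simp add: abs_mult)
qed

lemma grid_conv_gen:
  fixes g :: "real \<Rightarrow> real"
  assumes "continuous_on {0..1} g" "c \<ge> 0"
  shows "(\<lambda>m. c * Max ((\<lambda>j. g (real j / real (Suc m))) ` {0..Suc m})) \<longlonglongrightarrow> c * (SUP t\<in>{0..1}. g t)"
  by (intro tendsto_mult_left grid_sup assms(1))

context mainsetup begin

lemma W0: "\<omega> \<in> space N \<Longrightarrow> W 0 \<omega> = 0" using W unfolding wiener_process_def by auto
lemma Wc: "\<omega> \<in> space N \<Longrightarrow> continuous_on {0..1} (\<lambda>t. W t \<omega>)" using W unfolding wiener_process_def by auto

lemma V_grid1:
  assumes \<omega>: "\<omega> \<in> space N"
  shows "(\<lambda>m. \<sigma> * Fgrid (Suc m) (incv W 0 \<theta> (Suc m) \<omega>)) \<longlonglongrightarrow> aS (XN \<omega>) \<theta> / sqrt \<theta>"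
proof -
  define h where "h t = \<bar>W (\<theta> * t) \<omega> - t * W \<theta> \<omega>\<bar>" for t
  have hc: "continuous_on {0..1} h"
  proof -
    have "continuous_on {0..1} (\<lambda>t. W (\<theta> * t) \<omega>)"
      by (rule continuous_on_compose2[OF Wc[OF \<omega>]]) (use \<theta> in \<open>auto intro!: continuous_intros simp: mult_le_one\<close>)
    then show ?thesis unfolding h_def by (intro continuous_intros)
  qed
  have aS_eq: "aS (XN \<omega>) \<theta> / sqrt \<theta> = (\<sigma> / sqrt \<theta>) * (SUP t\<in>{0..1}. h t)"
  proof -
    have pt: "\<bar>XN \<omega> (\<theta> * t) - t * XN \<omega> \<theta>\<bar> = \<sigma> * h t" for t
      unfolding XN_def h_def by (rule abs_scale[OF \<sigma>_pos])
    have "aS (XN \<omega>) \<theta> = (SUP t\<in>{0..1}. \<sigma> * h t)"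
      unfolding aS_param[OF \<theta>(1)] pt ..
    also have "\<dots> = \<sigma> * (SUP t\<in>{0..1}. h t)"
    proof -
      have "compact (h ` {0..1})" using hc by (intro compact_continuous_image) auto
      then have bdd: "bdd_above (h ` {0..1})" by (intro bounded_imp_bdd_above compact_imp_bounded)
      have "mono (\<lambda>t. \<sigma> * t)" using \<sigma>_pos by (intro monoI mult_left_mono) auto
      moreover have "continuous (at_left (SUP t\<in>{0..1}. h t)) (\<lambda>t. \<sigma> * t)" by (intro continuous_intros)
      ultimately show ?thesis using bdd by (subst continuous_at_Sup_mono) (auto simp: image_image)
    qed
    finally show ?thesis by simp
  qed
  have Feq: "\<sigma> * Fgrid (Suc m) (incv W 0 \<theta> (Suc m) \<omega>) = (\<sigma> / sqrt \<theta>) * Max ((\<lambda>j. h (real j / real (Suc m))) ` {0..Suc m})" for m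
  proof -
    have "(\<lambda>j. \<bar>(W (0 + \<theta> * real j / real (Suc m)) \<omega> - W 0 \<omega>) - real j / real (Suc m) * (W (0 + \<theta>) \<omega> - W 0 \<omega>)\<bar>) ` {0..Suc m}
        = (\<lambda>j. h (real j / real (Suc m))) ` {0..Suc m}"
      unfolding h_def using W0[OF \<omega>] by (intro image_cong refl) simp
    then show ?thesis using Fgrid_incv[of "Suc m" \<theta> W 0 \<omega>] \<theta> by simp
  qed
  show ?thesis unfolding Feq aS_eq using \<sigma>_pos \<theta> by (intro grid_conv_gen hc) auto
qed

end


lemma Z_grid:
  fixes N' :: "'c measure" and W' :: "real \<Rightarrow> 'c \<Rightarrow> real"
  assumes W': "wiener_process N' W'" and \<omega>: "\<omega> \<in> space N'" and s: "\<sigma> \<ge> 0"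
  shows "(\<lambda>m. \<sigma> * Fgrid (Suc m) (incv W' 0 1 (Suc m) \<omega>)) \<longlonglongrightarrow> \<sigma> * (SUP t\<in>{0..1}. \<bar>bbridge W' t \<omega>\<bar>)"
proof -
  have W0: "W' 0 \<omega> = 0" and Wc: "continuous_on {0..1} (\<lambda>t. W' t \<omega>)" using W' \<omega> unfolding wiener_process_def by auto
  have hc: "continuous_on {0..1} (\<lambda>t. \<bar>bbridge W' t \<omega>\<bar>)"
    unfolding bbridge_def using Wc by (intro continuous_intros) auto
  have Feq: "Fgrid (Suc m) (incv W' 0 1 (Suc m) \<omega>) = Max ((\<lambda>j. \<bar>bbridge W' (real j / real (Suc m)) \<omega>\<bar>) ` {0..Suc m})" for m
  proof -
    have "(\<lambda>j. \<bar>(W' (0 + 1 * real j / real (Suc m)) \<omega> - W' 0 \<omega>) - real j / real (Suc m) * (W' (0 + 1) \<omega> - W' 0 \<omega>)\<bar>) ` {0..Suc m}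
        = (\<lambda>j. \<bar>bbridge W' (real j / real (Suc m)) \<omega>\<bar>) ` {0..Suc m}"
      unfolding bbridge_def using W0 by (intro image_cong refl) simp
    then show ?thesis using Fgrid_incv[of "Suc m" 1 W' 0 \<omega>] by simp
  qed
  show ?thesis unfolding Feq using s by (intro grid_conv_gen hc) auto
qed

context mainsetup begin

lemma V_grid2:
  assumes \<omega>: "\<omega> \<in> space N"
  shows "(\<lambda>m. \<sigma> * Fgrid (Suc m) (incv W \<theta> (1-\<theta>) (Suc m) \<omega>)) \<longlonglongrightarrow> aS (prev (XN \<omega>)) (1-\<theta>) / sqrt (1-\<theta>)"
proof -
  define h where "h t = \<bar>(W 1 \<omega> - W (1 - (1-\<theta>) * t) \<omega>) - t * (W 1 \<omega> - W \<theta> \<omega>)\<bar>" for t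
  have hc: "continuous_on {0..1} h"
  proof -
    have "continuous_on {0..1} (\<lambda>t. W (1 - (1-\<theta>) * t) \<omega>)"
    proof (rule continuous_on_compose2[OF Wc[OF \<omega>]])
      show "(\<lambda>t. 1 - (1-\<theta>) * t) ` {0..1} \<subseteq> {0..1}"
      proof
        fix y assume "y \<in> (\<lambda>t. 1 - (1-\<theta>) * t) ` {0..1}"
        then obtain t where t: "t \<in> {0..1}" "y = 1 - (1-\<theta>) * t" by auto
        have "(1-\<theta>) * t \<le> 1" using t \<theta> by (simp add: mult_le_one)
        moreover have "0 \<le> (1-\<theta>) * t" using t \<theta> by simp
        ultimately show "y \<in> {0..1}" using t by simp
      qed
    qed (intro continuous_intros)
    then show ?thesis unfolding h_def by (intro continuous_intros)
  qed
  have aS_eq: "aS (prev (XN \<omega>)) (1-\<theta>) / sqrt (1-\<theta>) = (\<sigma> / sqrt (1-\<theta>)) * (SUP t\<in>{0..1}. h t)"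
  proof -
    have pt: "\<bar>prev (XN \<omega>) ((1-\<theta>) * t) - t * prev (XN \<omega>) (1-\<theta>)\<bar> = \<sigma> * h t" for t
    proof -
      have r1: "prev (XN \<omega>) ((1-\<theta>) * t) = \<sigma> * (W 1 \<omega> - W (1 - (1-\<theta>) * t) \<omega>)"
        unfolding prev_def XN_def by (simp add: right_diff_distrib)
      have r2: "prev (XN \<omega>) (1-\<theta>) = \<sigma> * (W 1 \<omega> - W \<theta> \<omega>)"
        unfolding prev_def XN_def by (simp add: right_diff_distrib)
      show ?thesis unfolding r1 r2 h_def by (rule abs_scale[OF \<sigma>_pos])
    qed
    have ap: "aS (prev (XN \<omega>)) (1-\<theta>) = (SUP t\<in>{0..1}. \<bar>prev (XN \<omega>) ((1-\<theta>) * t) - t * prev (XN \<omega>) (1-\<theta>)\<bar>)"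
      by (rule aS_param) (use \<theta> in simp)
    have "aS (prev (XN \<omega>)) (1-\<theta>) = (SUP t\<in>{0..1}. \<sigma> * h t)"
      unfolding ap pt ..
    also have "\<dots> = \<sigma> * (SUP t\<in>{0..1}. h t)"
    proof -
      have "compact (h ` {0..1})" using hc by (intro compact_continuous_image) auto
      then have bdd: "bdd_above (h ` {0..1})" by (intro bounded_imp_bdd_above compact_imp_bounded)
      have "mono (\<lambda>t. \<sigma> * t)" using \<sigma>_pos by (intro monoI mult_left_mono) auto
      moreover have "continuous (at_left (SUP t\<in>{0..1}. h t)) (\<lambda>t. \<sigma> * t)" by (intro continuous_intros)
      ultimately show ?thesis using bdd by (subst continuous_at_Sup_mono) (auto simp: image_image)
    qed
    finally show ?thesis by simp
  qed
  have Feq: "\<sigma> * Fgrid (Suc m) (incv W \<theta> (1-\<theta>) (Suc m) \<omega>) = (\<sigma> / sqrt (1-\<theta>)) * Max ((\<lambda>j. h (real j / real (Suc m))) ` {0..Suc m})" for m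
  proof -
    define mm where "mm = Suc m"
    have mm: "mm > 0" unfolding mm_def by simp
    define \<phi> where "\<phi> k = \<bar>(W (\<theta> + (1-\<theta>) * real k / real mm) \<omega> - W \<theta> \<omega>) - real k / real mm * (W (\<theta> + (1-\<theta>)) \<omega> - W \<theta> \<omega>)\<bar>" for k
    have ph: "\<phi> (mm - j) = h (real j / real mm)" if j: "j \<in> {0..mm}" for j
    proof -
      have r: "real (mm - j) = real mm - real j" using j by (simp add: of_nat_diff)
      have arg: "\<theta> + (1-\<theta>) * real (mm - j) / real mm = 1 - (1-\<theta>) * (real j / real mm)"
        unfolding r using mm by (simp add: field_simps)
      have coef: "real (mm - j) / real mm = 1 - real j / real mm" unfolding r using mm by (simp add: field_simps)
      have "\<phi> (mm - j) = \<bar>(W (1 - (1-\<theta>) * (real j / real mm)) \<omega> - W \<theta> \<omega>) - (1 - real j / real mm) * (W 1 \<omega> - W \<theta> \<omega>)\<bar>"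
        unfolding \<phi>_def arg coef by simp
      also have "\<dots> = h (real j / real mm)"
      proof -
        have "(W (1 - (1-\<theta>) * (real j / real mm)) \<omega> - W \<theta> \<omega>) - (1 - real j / real mm) * (W 1 \<omega> - W \<theta> \<omega>)
            = - ((W 1 \<omega> - W (1 - (1-\<theta>) * (real j / real mm)) \<omega>) - real j / real mm * (W 1 \<omega> - W \<theta> \<omega>))"
          by (simp add: algebra_simps)
        then show ?thesis unfolding h_def by (metis abs_minus_cancel)
      qed
      finally show ?thesis .
    qed
    have "Fgrid mm (incv W \<theta> (1-\<theta>) mm \<omega>) = Max (\<phi> ` {0..mm}) / sqrt (1-\<theta>)"
      unfolding \<phi>_def using Fgrid_incv[OF mm, of "1-\<theta>" W \<theta> \<omega>] \<theta> by simp
    also have "Max (\<phi> ` {0..mm}) = Max ((\<lambda>j. \<phi> (mm - j)) ` {0..mm})" by (rule Max_reflect[symmetric])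
    also have "(\<lambda>j. \<phi> (mm - j)) ` {0..mm} = (\<lambda>j. h (real j / real mm)) ` {0..mm}"
      by (rule image_cong[OF refl ph])
    finally show ?thesis unfolding mm_def by simp
  qed
  show ?thesis unfolding Feq aS_eq using \<sigma>_pos \<theta> by (intro grid_conv_gen hc) auto
qed

end


context mainsetup begin

lemma law_eq:
  fixes N' :: "'c measure" and W1 W2 :: "real \<Rightarrow> 'c \<Rightarrow> real" and f :: "real \<times> real \<Rightarrow> real"
  assumes W1: "wiener_process N' W1" and W2: "wiener_process N' W2"
    and ind: "prob_space.indep_var N'
             (Pi\<^sub>M {0..1} (\<lambda>_. borel)) (\<lambda>\<omega>. restrict (\<lambda>t. W1 t \<omega>) {0..1})
             (Pi\<^sub>M {0..1} (\<lambda>_. borel)) (\<lambda>\<omega>. restrict (\<lambda>t. W2 t \<omega>) {0..1})"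
    and fm: "f \<in> borel_measurable borel" and mm: "mm > 0"
  shows "(\<integral>\<omega>. f (\<sigma> * Fgrid mm (incv W 0 \<theta> mm \<omega>), \<sigma> * Fgrid mm (incv W \<theta> (1-\<theta>) mm \<omega>)) \<partial>N)
       = (\<integral>\<omega>. f (\<sigma> * Fgrid mm (incv W1 0 1 mm \<omega>), \<sigma> * Fgrid mm (incv W2 0 1 mm \<omega>)) \<partial>N')"
proof -
  define S where "S = PiM {..<mm} (\<lambda>_. borel :: real measure)"
  define Q where "Q = PiM {..<mm} (\<lambda>_. stdN mm)"
  define hf where "hf pq = f (\<sigma> * Fgrid mm (fst pq), \<sigma> * Fgrid mm (snd pq))" for pq
  have Fm: "Fgrid mm \<in> borel_measurable S" unfolding S_def by (rule Fgrid_meas)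
  have hfm: "hf \<in> borel_measurable (S \<Otimes>\<^sub>M S)"
    unfolding hf_def
    by (rule measurable_compose[OF _ fm], intro borel_measurable_Pair borel_measurable_times borel_measurable_const
        measurable_compose[OF measurable_fst Fm] measurable_compose[OF measurable_snd Fm])
  have P': "prob_space N'" using W1 unfolding wiener_process_def by auto
  have D1m: "incv W 0 \<theta> mm \<in> measurable N S" unfolding S_def using \<theta> by (intro incv_meas[OF W]) auto
  have D2m: "incv W \<theta> (1-\<theta>) mm \<in> measurable N S" unfolding S_def using \<theta> by (intro incv_meas[OF W]) auto
  have E1m: "incv W1 0 1 mm \<in> measurable N' S" unfolding S_def by (intro incv_meas[OF W1]) auto
  have E2m: "incv W2 0 1 mm \<in> measurable N' S" unfolding S_def by (intro incv_meas[OF W2]) auto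
  have lawN: "distr N (S \<Otimes>\<^sub>M S) (\<lambda>\<omega>. (incv W 0 \<theta> mm \<omega>, incv W \<theta> (1-\<theta>) mm \<omega>)) = Q \<Otimes>\<^sub>M Q"
    unfolding S_def Q_def
  proof (rule pair_law[OF N wiener_two_blocks[OF W \<theta> mm]])
    show "distr N (PiM {..<mm} (\<lambda>_. borel)) (incv W 0 \<theta> mm) = PiM {..<mm} (\<lambda>_. stdN mm)"
      by (rule wiener_incr_law[OF W]) (use \<theta> mm in auto)
    show "distr N (PiM {..<mm} (\<lambda>_. borel)) (incv W \<theta> (1-\<theta>) mm) = PiM {..<mm} (\<lambda>_. stdN mm)"
      by (rule wiener_incr_law[OF W]) (use \<theta> mm in auto)
  qed
  have lawN': "distr N' (S \<Otimes>\<^sub>M S) (\<lambda>\<omega>. (incv W1 0 1 mm \<omega>, incv W2 0 1 mm \<omega>)) = Q \<Otimes>\<^sub>M Q"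
    unfolding S_def Q_def
  proof (rule pair_law[OF P' paths_indep_incv[OF P' ind mm]])
    show "distr N' (PiM {..<mm} (\<lambda>_. borel)) (incv W1 0 1 mm) = PiM {..<mm} (\<lambda>_. stdN mm)"
      by (rule wiener_incr_law[OF W1]) (use mm in auto)
    show "distr N' (PiM {..<mm} (\<lambda>_. borel)) (incv W2 0 1 mm) = PiM {..<mm} (\<lambda>_. stdN mm)"
      by (rule wiener_incr_law[OF W2]) (use mm in auto)
  qed
  have "(\<integral>\<omega>. f (\<sigma> * Fgrid mm (incv W 0 \<theta> mm \<omega>), \<sigma> * Fgrid mm (incv W \<theta> (1-\<theta>) mm \<omega>)) \<partial>N)
      = integral\<^sup>L (distr N (S \<Otimes>\<^sub>M S) (\<lambda>\<omega>. (incv W 0 \<theta> mm \<omega>, incv W \<theta> (1-\<theta>) mm \<omega>))) hf"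
    by (subst integral_distr[OF measurable_Pair[OF D1m D2m] hfm]) (simp add: hf_def)
  also have "\<dots> = integral\<^sup>L (Q \<Otimes>\<^sub>M Q) hf" unfolding lawN ..
  also have "\<dots> = integral\<^sup>L (distr N' (S \<Otimes>\<^sub>M S) (\<lambda>\<omega>. (incv W1 0 1 mm \<omega>, incv W2 0 1 mm \<omega>))) hf"
    unfolding lawN' ..
  also have "\<dots> = (\<integral>\<omega>. f (\<sigma> * Fgrid mm (incv W1 0 1 mm \<omega>), \<sigma> * Fgrid mm (incv W2 0 1 mm \<omega>)) \<partial>N')"
    by (subst integral_distr[OF measurable_Pair[OF E1m E2m] hfm]) (simp add: hf_def)
  finally show ?thesis .
qed

lemma convL:
  fixes N' :: "'c measure" and W1 W2 :: "real \<Rightarrow> 'c \<Rightarrow> real" and f :: "real \<times> real \<Rightarrow> real"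
  assumes W1: "wiener_process N' W1" and W2: "wiener_process N' W2"
    and ind: "prob_space.indep_var N'
             (Pi\<^sub>M {0..1} (\<lambda>_. borel)) (\<lambda>\<omega>. restrict (\<lambda>t. W1 t \<omega>) {0..1})
             (Pi\<^sub>M {0..1} (\<lambda>_. borel)) (\<lambda>\<omega>. restrict (\<lambda>t. W2 t \<omega>) {0..1})"
    and f: "continuous_on UNIV f" "bounded (range f)"
  shows "(\<integral>\<omega>. f (V \<omega>) \<partial>N) = (\<integral>\<omega>. f (\<sigma> * (SUP t\<in>{0..1}. \<bar>bbridge W1 t \<omega>\<bar>),
                  \<sigma> * (SUP t\<in>{0..1}. \<bar>bbridge W2 t \<omega>\<bar>)) \<partial>N')"
proof -
  define Z where "Z \<omega> = (\<sigma> * (SUP t\<in>{0..1}. \<bar>bbridge W1 t \<omega>\<bar>), \<sigma> * (SUP t\<in>{0..1}. \<bar>bbridge W2 t \<omega>\<bar>))" for \<omega>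
  define Vm where "Vm m \<omega> = (\<sigma> * Fgrid (Suc m) (incv W 0 \<theta> (Suc m) \<omega>), \<sigma> * Fgrid (Suc m) (incv W \<theta> (1-\<theta>) (Suc m) \<omega>))" for m \<omega>
  define Zm where "Zm m \<omega> = (\<sigma> * Fgrid (Suc m) (incv W1 0 1 (Suc m) \<omega>), \<sigma> * Fgrid (Suc m) (incv W2 0 1 (Suc m) \<omega>))" for m \<omega>
  have P': "prob_space N'" using W1 unfolding wiener_process_def by auto
  interpret PN: prob_space N by (rule N)
  interpret PN': prob_space N' by (rule P')
  have fm: "f \<in> borel_measurable borel" using f(1) by (rule borel_measurable_continuous_onI)
  have fc: "\<And>p. isCont f p" using f(1) continuous_on_eq_continuous_at by blast
  obtain B where B: "\<And>p. norm (f p) \<le> B" using f(2) unfolding bounded_iff by auto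
  have Fm: "Fgrid (Suc m) \<in> borel_measurable (PiM {..<Suc m} (\<lambda>_. borel))" for m by (rule Fgrid_meas)
  have Vmm: "Vm m \<in> borel_measurable N" for m
    unfolding Vm_def using \<theta>
    by (intro borel_measurable_Pair borel_measurable_times borel_measurable_const
        measurable_compose[OF incv_meas[OF W] Fm]) auto
  have Zmm: "Zm m \<in> borel_measurable N'" for m
    unfolding Zm_def
    by (intro borel_measurable_Pair borel_measurable_times borel_measurable_const
        measurable_compose[OF incv_meas[OF W1] Fm] measurable_compose[OF incv_meas[OF W2] Fm]) auto
  have VmV: "(\<lambda>m. Vm m \<omega>) \<longlonglongrightarrow> V \<omega>" if "\<omega> \<in> space N" for \<omega>
    unfolding Vm_def V_def using V_grid1[OF that] V_grid2[OF that] by (rule tendsto_Pair)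
  have ZmZ: "(\<lambda>m. Zm m \<omega>) \<longlonglongrightarrow> Z \<omega>" if "\<omega> \<in> space N'" for \<omega>
    unfolding Zm_def Z_def using Z_grid[OF W1 that less_imp_le[OF \<sigma>_pos]] Z_grid[OF W2 that less_imp_le[OF \<sigma>_pos]] by (rule tendsto_Pair)
  have Zmeas: "Z \<in> borel_measurable N'" by (rule borel_measurable_LIMSEQ_metric[OF Zmm ZmZ])
  have lim1: "(\<lambda>m. \<integral>\<omega>. f (Vm m \<omega>) \<partial>N) \<longlonglongrightarrow> (\<integral>\<omega>. f (V \<omega>) \<partial>N)"
  proof (rule integral_dominated_convergence[where w="\<lambda>_. B"])
    show "(\<lambda>\<omega>. f (V \<omega>)) \<in> borel_measurable N" using V_meas fm by measurable
    show "(\<lambda>\<omega>. f (Vm m \<omega>)) \<in> borel_measurable N" for m using Vmm fm by measurable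
    show "AE \<omega> in N. (\<lambda>m. f (Vm m \<omega>)) \<longlonglongrightarrow> f (V \<omega>)"
      using VmV fc by (intro AE_I2 isCont_tendsto_compose[of _ f]) auto
  qed (use B in auto)
  have lim2: "(\<lambda>m. \<integral>\<omega>. f (Zm m \<omega>) \<partial>N') \<longlonglongrightarrow> (\<integral>\<omega>. f (Z \<omega>) \<partial>N')"
  proof (rule integral_dominated_convergence[where w="\<lambda>_. B"])
    show "(\<lambda>\<omega>. f (Z \<omega>)) \<in> borel_measurable N'" using Zmeas fm by measurable
    show "(\<lambda>\<omega>. f (Zm m \<omega>)) \<in> borel_measurable N'" for m using Zmm fm by measurable
    show "AE \<omega> in N'. (\<lambda>m. f (Zm m \<omega>)) \<longlonglongrightarrow> f (Z \<omega>)"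
      using ZmZ fc by (intro AE_I2 isCont_tendsto_compose[of _ f]) auto
  qed (use B in auto)
  have eq: "(\<integral>\<omega>. f (Vm m \<omega>) \<partial>N) = (\<integral>\<omega>. f (Zm m \<omega>) \<partial>N')" for m
    unfolding Vm_def Zm_def by (rule law_eq[OF W1 W2 ind fm]) simp
  have "(\<lambda>m. \<integral>\<omega>. f (Vm m \<omega>) \<partial>N) \<longlonglongrightarrow> (\<integral>\<omega>. f (Z \<omega>) \<partial>N')" unfolding eq by (rule lim2)
  with lim1 show ?thesis unfolding Z_def using LIMSEQ_unique by blast
qed

end



theorem lemmaB2:
  fixes M :: "'a measure" and Y :: "nat \<Rightarrow> 'a \<Rightarrow> real"
    and N :: "'b measure" and W :: "real \<Rightarrow> 'b \<Rightarrow> real"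
    and \<sigma> \<mu> \<theta> :: real and \<Delta> :: "nat \<Rightarrow> real"
  assumes "prob_space M"
    and Y_rv: "\<And>i. Y i \<in> borel_measurable M"
    and Y_int: "\<And>i. integrable M (Y i)"
    and Y_mean: "\<And>i. (\<integral>\<omega>. Y i \<omega> \<partial>M) = 0"
    and \<sigma>_pos: "\<sigma> > 0"
    and W: "wiener_process N W"
    and FCLT: "conv_distr_wrt skorokhod_dist cadlag01 M
                 (\<lambda>n \<omega> t. (\<Sum>j\<in>{1..nat \<lfloor>real n * t\<rfloor>}. Y j \<omega>) / sqrt (real n))
                 N (\<lambda>\<omega> t. \<sigma> * W t \<omega>)"
    and \<theta>: "0 < \<theta>" "\<theta> < 1"
    and consistent: "\<And>\<epsilon>. \<epsilon> > 0 \<Longrightarrow>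
          (\<lambda>n. measure M {\<omega>\<in>space M.
             \<bar>real (khat n (\<lambda>i. \<mu> + (if i \<le> nat \<lfloor>real n * \<theta>\<rfloor> then 0 else \<Delta> n) + Y i \<omega>))
                / real n - \<theta>\<bar> > \<epsilon>}) \<longlonglongrightarrow> 0"
  shows "\<forall>(N' :: 'c measure) W1 W2. wiener_process N' W1 \<longrightarrow> wiener_process N' W2 \<longrightarrow>
           prob_space.indep_var N'
             (Pi\<^sub>M {0..1} (\<lambda>_. borel)) (\<lambda>\<omega>. restrict (\<lambda>t. W1 t \<omega>) {0..1})
             (Pi\<^sub>M {0..1} (\<lambda>_. borel)) (\<lambda>\<omega>. restrict (\<lambda>t. W2 t \<omega>) {0..1}) \<longrightarrow>
         conv_distr_R2 M
           (\<lambda>n \<omega>. let kh = khat n (\<lambda>i. \<mu> + (if i \<le> nat \<lfloor>real n * \<theta>\<rfloor> then 0 else \<Delta> n) + Y i \<omega>)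
             in ( Max (insert 0 ((\<lambda>k. \<bar>(\<Sum>i=1..k. Y i \<omega>)
                          - real k / real kh * (\<Sum>i=1..kh. Y i \<omega>)\<bar>) ` {1..kh}))
                   / sqrt (real kh),
                  Max (insert 0 ((\<lambda>k. \<bar>(\<Sum>i\<in>{kh<..k}. Y i \<omega>)
                          - real (k - kh) / real (n - kh) * (\<Sum>i\<in>{kh<..n}. Y i \<omega>)\<bar>) ` {kh<..n}))
                   / sqrt (real (n - kh))))
           N'
           (\<lambda>\<omega>. (\<sigma> * (SUP t\<in>{0..1}. \<bar>bbridge W1 t \<omega>\<bar>),
                  \<sigma> * (SUP t\<in>{0..1}. \<bar>bbridge W2 t \<omega>\<bar>)))"
proof -
  interpret mainsetup M Y N W \<sigma> \<mu> \<theta> \<Delta>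
    by (rule mainsetup.intro) fact+
  show ?thesis
  proof (intro allI impI)
    fix N' :: "'c measure" and W1 W2
    assume W1: "wiener_process N' W1" and W2: "wiener_process N' W2"
      and ind: "prob_space.indep_var N'
             (Pi\<^sub>M {0..1} (\<lambda>_. borel)) (\<lambda>\<omega>. restrict (\<lambda>t. W1 t \<omega>) {0..1})
             (Pi\<^sub>M {0..1} (\<lambda>_. borel)) (\<lambda>\<omega>. restrict (\<lambda>t. W2 t \<omega>) {0..1})"
    have Ueq: "(\<lambda>n \<omega>. let kh = khat n (\<lambda>i. \<mu> + (if i \<le> nat \<lfloor>real n * \<theta>\<rfloor> then 0 else \<Delta> n) + Y i \<omega>)
             in ( Max (insert 0 ((\<lambda>k. \<bar>(\<Sum>i=1..k. Y i \<omega>)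
                          - real k / real kh * (\<Sum>i=1..kh. Y i \<omega>)\<bar>) ` {1..kh}))
                   / sqrt (real kh),
                  Max (insert 0 ((\<lambda>k. \<bar>(\<Sum>i\<in>{kh<..k}. Y i \<omega>)
                          - real (k - kh) / real (n - kh) * (\<Sum>i\<in>{kh<..n}. Y i \<omega>)\<bar>) ` {kh<..n}))
                   / sqrt (real (n - kh)))) = U"
    proof (intro ext)
      fix n \<omega>
      show "(let kh = khat n (\<lambda>i. \<mu> + (if i \<le> nat \<lfloor>real n * \<theta>\<rfloor> then 0 else \<Delta> n) + Y i \<omega>)
             in ( Max (insert 0 ((\<lambda>k. \<bar>(\<Sum>i=1..k. Y i \<omega>)
                          - real k / real kh * (\<Sum>i=1..kh. Y i \<omega>)\<bar>) ` {1..kh}))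
                   / sqrt (real kh),
                  Max (insert 0 ((\<lambda>k. \<bar>(\<Sum>i\<in>{kh<..k}. Y i \<omega>)
                          - real (k - kh) / real (n - kh) * (\<Sum>i\<in>{kh<..n}. Y i \<omega>)\<bar>) ` {kh<..n}))
                   / sqrt (real (n - kh)))) = U n \<omega>"
        unfolding U_def kh_def xv_def Ta_def Tb_def Let_def by (rule refl)
    qed
    show "conv_distr_R2 M
           (\<lambda>n \<omega>. let kh = khat n (\<lambda>i. \<mu> + (if i \<le> nat \<lfloor>real n * \<theta>\<rfloor> then 0 else \<Delta> n) + Y i \<omega>)
             in ( Max (insert 0 ((\<lambda>k. \<bar>(\<Sum>i=1..k. Y i \<omega>)
                          - real k / real kh * (\<Sum>i=1..kh. Y i \<omega>)\<bar>) ` {1..kh}))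
                   / sqrt (real kh),
                  Max (insert 0 ((\<lambda>k. \<bar>(\<Sum>i\<in>{kh<..k}. Y i \<omega>)
                          - real (k - kh) / real (n - kh) * (\<Sum>i\<in>{kh<..n}. Y i \<omega>)\<bar>) ` {kh<..n}))
                   / sqrt (real (n - kh))))
           N'
           (\<lambda>\<omega>. (\<sigma> * (SUP t\<in>{0..1}. \<bar>bbridge W1 t \<omega>\<bar>),
                  \<sigma> * (SUP t\<in>{0..1}. \<bar>bbridge W2 t \<omega>\<bar>)))"
      unfolding conv_distr_R2_def Ueq
    proof (intro allI impI)
      fix f :: "real \<times> real \<Rightarrow> real"
      assume f: "continuous_on UNIV f" "bounded (range f)"
      show "(\<lambda>n. \<integral>\<omega>. f (U n \<omega>) \<partial>M) \<longlonglongrightarrow>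
          (\<integral>\<omega>. f (\<sigma> * (SUP t\<in>{0..1}. \<bar>bbridge W1 t \<omega>\<bar>), \<sigma> * (SUP t\<in>{0..1}. \<bar>bbridge W2 t \<omega>\<bar>)) \<partial>N')"
        unfolding convL[OF W1 W2 ind f, symmetric] by (rule convC[OF f])
    qed
  qed
qed

end
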